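(* Let the left-invariant coframe $(f^I)$ on $\mathbf{Sp}(2,\mathbb{R})$ and the distribution $D_s$ be as in the context. Consider 3-forms $\phi=\tfrac16\sum_{\mu,\nu,\rho=1}^7\phi_{\mu\nu\rho}f^\mu\wedge f^\nu\wedge f^\rho$ with real constant totally antisymmetric coefficients. Then $\mathcal{L}_X\phi=0$ for all vector fields $X$ in $D_s$ if and only if $$\phi=a(4f^{147}+f^{246}+2f^{345})+b(2f^{156}+f^{236}-4f^{137})+qf^{136}+h(f^{256}-4f^{157}-2f^{237})+pf^{257}$$ for some real constants $a,b,q,h,p$; in particular these form precisely a 5-parameter family.
   Context: Realize $\mathfrak{sp}(2,\mathbb{R})$ as the real $4\times 4$ matrices $$E=\begin{pmatrix} a_5&a_7&a_9&2a_{10}\\ -a_4&a_6&a_8&a_9\\ a_2&a_3&-a_6&-a_7\\ -2a_1&a_2&a_4&-a_5\end{pmatrix}$$ with basis $E_I=\partial E/\partial a_I$. Put $f_1=E_1,\ f_2=E_3,\ f_3=E_4,\ f_4=E_6-E_5,\ f_5=E_7,\ f_6=E_8,\ f_7=E_{10},\ f_8=E_2,\ f_9=E_5+E_6,\ f_{10}=E_9$, regarded as left-invariant vector fields on $\mathbf{Sp}(2,\mathbb{R})$, with dual left-invariant 1-forms $(f^I)$ satisfying ${\rm d} f^1=2f^1\wedge(f^4-f^9)+f^3\wedge f^8$, ${\rm d} f^2=-2f^2\wedge (f^4+f^9)+2f^5\wedge f^8$, ${\rm d} f^3=2f^1\wedge f^{10}+2f^3\wedge f^4+f^6\wedge f^8$,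 ${\rm d} f^4=2f^1\wedge f^7+\tfrac12f^2\wedge f^6+f^3\wedge f^5$, ${\rm d} f^5=f^2\wedge f^{10}+2f^4\wedge f^5-2f^7\wedge f^8$, ${\rm d} f^6=2f^3\wedge f^{10}-2(f^4+f^9)\wedge f^6$, ${\rm d} f^7=2(f^4-f^9)\wedge f^{7}-f^5\wedge f^{10}$, ${\rm d} f^8=2f^1\wedge f^5+f^2\wedge f^3-2f^8\wedge f^9$, ${\rm d} f^9=-2f^1\wedge f^7+\tfrac12f^2\wedge f^6+f^8\wedge f^{10}$, ${\rm d} f^{10}=2f^3\wedge f^7-f^5\wedge f^6-2f^9\wedge f^{10}$. $D_s$ is the rank-3 distribution spanned by $f_8,f_9,f_{10}$ (annihilator of $f^1,\dots,f^7$). Notation: $f^{\mu\nu\rho}=f^\mu\wedge f^\nu\wedge f^\rho$. *)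

theory Defs
  imports Complex_Main
begin

text \<open>Left-invariant calculus on Sp(2,R) in the coframe f^1..f^10, indices 1..10.
  A left-invariant k-form is represented by its (constant) values on the
  left-invariant frame f_1..f_10.\<close>

definition kd :: "nat \<Rightarrow> nat \<Rightarrow> real" where
  "kd a b = (if a = b then 1 else 0)"

text \<open>Structure equations: d f^k = sum of c * f^a wedge f^b, listed as (c,a,b).\<close>
definition dstr :: "nat \<Rightarrow> (real \<times> nat \<times> nat) list" where
  "dstr k =
    (if k = 1 then [(2,1,4),(-2,1,9),(1,3,8)]
     else if k = 2 then [(-2,2,4),(-2,2,9),(2,5,8)]
     else if k = 3 then [(2,1,10),(2,3,4),(1,6,8)]
     else if k = 4 then [(2,1,7),(1/2,2,6),(1,3,5)]
     else if k = 5 then [(1,2,10),(2,4,5),(-2,7,8)]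
     else if k = 6 then [(2,3,10),(-2,4,6),(-2,9,6)]
     else if k = 7 then [(2,4,7),(-2,9,7),(-1,5,10)]
     else if k = 8 then [(2,1,5),(1,2,3),(-2,8,9)]
     else if k = 9 then [(-2,1,7),(1/2,2,6),(1,8,10)]
     else if k = 10 then [(2,3,7),(-1,5,6),(-2,9,10)]
     else [])"

text \<open>(d f^k)(f_i,f_j), with (f^a wedge f^b)(X,Y) = f^a(X) f^b(Y) - f^a(Y) f^b(X).\<close>
definition df :: "nat \<Rightarrow> nat \<Rightarrow> nat \<Rightarrow> real" where
  "df k i j = sum_list (map (\<lambda>(c,a,b). c * (kd a i * kd b j - kd a j * kd b i)) (dstr k))"

text \<open>Bracket coefficients [f_x, f_i] = sum_l br x i l f_l, from
  d theta(X,Y) = - theta([X,Y]) for left-invariant theta, X, Y.\<close>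
definition br :: "nat \<Rightarrow> nat \<Rightarrow> nat \<Rightarrow> real" where
  "br x i l = - df l x i"

text \<open>The 3-form phi = 1/6 sum_{mu,nu,rho=1..7} phi_{mu nu rho} f^{mu nu rho},
  evaluated on frame vectors (f_i,f_j,f_k).\<close>
definition eval3 :: "(nat \<Rightarrow> nat \<Rightarrow> nat \<Rightarrow> real) \<Rightarrow> nat \<Rightarrow> nat \<Rightarrow> nat \<Rightarrow> real" where
  "eval3 \<phi> i j k = (if i \<in> {1..7} \<and> j \<in> {1..7} \<and> k \<in> {1..7} then \<phi> i j k else 0)"

text \<open>Lie derivative of a left-invariant 3-form along the left-invariant field f_x:
  (L_X w)(Y,Z,W) = X(w(Y,Z,W)) - w([X,Y],Z,W) - w(Y,[X,Z],W) - w(Y,Z,[X,W]),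
  the first term vanishing.\<close>
definition lie_li :: "nat \<Rightarrow> (nat \<Rightarrow> nat \<Rightarrow> nat \<Rightarrow> real) \<Rightarrow> nat \<Rightarrow> nat \<Rightarrow> nat \<Rightarrow> real" where
  "lie_li x w i j k =
     - (\<Sum>l\<in>{1..10}. br x i l * w l j k + br x j l * w i l k + br x k l * w i j l)"

definition interior :: "nat \<Rightarrow> (nat \<Rightarrow> nat \<Rightarrow> nat \<Rightarrow> real) \<Rightarrow> nat \<Rightarrow> nat \<Rightarrow> real" where
  "interior x w i j = w x i j"

definition wedge12 :: "(nat \<Rightarrow> real) \<Rightarrow> (nat \<Rightarrow> nat \<Rightarrow> real) \<Rightarrow> nat \<Rightarrow> nat \<Rightarrow> nat \<Rightarrow> real" where
  "wedge12 \<alpha> \<beta> i j k = \<alpha> i * \<beta> j k - \<alpha> j * \<beta> i k + \<alpha> k * \<beta> i j"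

text \<open>Value at a point of L_X w for a section X = sum_{s=8,9,10} g^s f_s of D_s
  (w left-invariant): L_X w = sum_s g^s L_{f_s} w + dg^s wedge i_{f_s} w.
  Here c s = g^s(p) and \<alpha> s i = (dg^s)_p(f_i); these range over all reals
  independently as X ranges over smooth sections of D_s.\<close>
definition lie_sec :: "(nat \<Rightarrow> real) \<Rightarrow> (nat \<Rightarrow> nat \<Rightarrow> real) \<Rightarrow> (nat \<Rightarrow> nat \<Rightarrow> nat \<Rightarrow> real)
    \<Rightarrow> nat \<Rightarrow> nat \<Rightarrow> nat \<Rightarrow> real" where
  "lie_sec c \<alpha> w i j k =
     (\<Sum>s\<in>{8,9,10}. c s * lie_li s w i j k + wedge12 (\<alpha> s) (interior s w) i j k)"

definition fw3 :: "nat \<Rightarrow> nat \<Rightarrow> nat \<Rightarrow> nat \<Rightarrow> nat \<Rightarrow> nat \<Rightarrow> real" where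
  "fw3 m n r i j k =
     kd m i * kd n j * kd r k - kd m i * kd n k * kd r j
   - kd m j * kd n i * kd r k + kd m j * kd n k * kd r i
   + kd m k * kd n i * kd r j - kd m k * kd n j * kd r i"

definition family :: "real \<Rightarrow> real \<Rightarrow> real \<Rightarrow> real \<Rightarrow> real \<Rightarrow> nat \<Rightarrow> nat \<Rightarrow> nat \<Rightarrow> real" where
  "family a b q h p i j k =
      a * (4 * fw3 1 4 7 i j k + fw3 2 4 6 i j k + 2 * fw3 3 4 5 i j k)
    + b * (2 * fw3 1 5 6 i j k + fw3 2 3 6 i j k - 4 * fw3 1 3 7 i j k)
    + q * fw3 1 3 6 i j k
    + h * (fw3 2 5 6 i j k - 4 * fw3 1 5 7 i j k - 2 * fw3 2 3 7 i j k)
    + p * fw3 2 5 7 i j k"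

end

theory Submission
  imports Defs
begin

lemma set10: "{1..10::nat} = {1,2,3,4,5,6,7,8,9,10}" by (auto; presburger)

lemma sum_1_10: "(\<Sum>l\<in>{1..10::nat}. f l) = f 1 + f 2 + f 3 + f 4 + f 5 + f 6 + f 7 + f 8 + f 9 + (f 10 :: real)"
proof -
  have "{1..10::nat} = {1,2,3,4,5,6,7,8,9,10}" by (auto; presburger)
  then show ?thesis by (simp add: algebra_simps)
qed

lemma br_t0: "br 8 1 1 = 0" by (simp add: br_def df_def dstr_def kd_def)
lemma br_t1: "br 8 1 2 = 0" by (simp add: br_def df_def dstr_def kd_def)
lemma br_t2: "br 8 1 3 = 0" by (simp add: br_def df_def dstr_def kd_def)
lemma br_t3: "br 8 1 4 = 0" by (simp add: br_def df_def dstr_def kd_def)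
lemma br_t4: "br 8 1 5 = 0" by (simp add: br_def df_def dstr_def kd_def)
lemma br_t5: "br 8 1 6 = 0" by (simp add: br_def df_def dstr_def kd_def)
lemma br_t6: "br 8 1 7 = 0" by (simp add: br_def df_def dstr_def kd_def)
lemma br_t7: "br 8 1 8 = 0" by (simp add: br_def df_def dstr_def kd_def)
lemma br_t8: "br 8 1 9 = 0" by (simp add: br_def df_def dstr_def kd_def)
lemma br_t9: "br 8 1 10 = 0" by (simp add: br_def df_def dstr_def kd_def)
lemma br_t10: "br 8 2 1 = 0" by (simp add: br_def df_def dstr_def kd_def)
lemma br_t11: "br 8 2 2 = 0" by (simp add: br_def df_def dstr_def kd_def)
lemma br_t12: "br 8 2 3 = 0" by (simp add: br_def df_def dstr_def kd_def)
lemma br_t13: "br 8 2 4 = 0" by (simp add: br_def df_def dstr_def kd_def)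
lemma br_t14: "br 8 2 5 = 0" by (simp add: br_def df_def dstr_def kd_def)
lemma br_t15: "br 8 2 6 = 0" by (simp add: br_def df_def dstr_def kd_def)
lemma br_t16: "br 8 2 7 = 0" by (simp add: br_def df_def dstr_def kd_def)
lemma br_t17: "br 8 2 8 = 0" by (simp add: br_def df_def dstr_def kd_def)
lemma br_t18: "br 8 2 9 = 0" by (simp add: br_def df_def dstr_def kd_def)
lemma br_t19: "br 8 2 10 = 0" by (simp add: br_def df_def dstr_def kd_def)
lemma br_t20: "br 8 3 1 = 1" by (simp add: br_def df_def dstr_def kd_def)
lemma br_t21: "br 8 3 2 = 0" by (simp add: br_def df_def dstr_def kd_def)
lemma br_t22: "br 8 3 3 = 0" by (simp add: br_def df_def dstr_def kd_def)
lemma br_t23: "br 8 3 4 = 0" by (simp add: br_def df_def dstr_def kd_def)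
lemma br_t24: "br 8 3 5 = 0" by (simp add: br_def df_def dstr_def kd_def)
lemma br_t25: "br 8 3 6 = 0" by (simp add: br_def df_def dstr_def kd_def)
lemma br_t26: "br 8 3 7 = 0" by (simp add: br_def df_def dstr_def kd_def)
lemma br_t27: "br 8 3 8 = 0" by (simp add: br_def df_def dstr_def kd_def)
lemma br_t28: "br 8 3 9 = 0" by (simp add: br_def df_def dstr_def kd_def)
lemma br_t29: "br 8 3 10 = 0" by (simp add: br_def df_def dstr_def kd_def)
lemma br_t30: "br 8 4 1 = 0" by (simp add: br_def df_def dstr_def kd_def)
lemma br_t31: "br 8 4 2 = 0" by (simp add: br_def df_def dstr_def kd_def)
lemma br_t32: "br 8 4 3 = 0" by (simp add: br_def df_def dstr_def kd_def)
lemma br_t33: "br 8 4 4 = 0" by (simp add: br_def df_def dstr_def kd_def)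
lemma br_t34: "br 8 4 5 = 0" by (simp add: br_def df_def dstr_def kd_def)
lemma br_t35: "br 8 4 6 = 0" by (simp add: br_def df_def dstr_def kd_def)
lemma br_t36: "br 8 4 7 = 0" by (simp add: br_def df_def dstr_def kd_def)
lemma br_t37: "br 8 4 8 = 0" by (simp add: br_def df_def dstr_def kd_def)
lemma br_t38: "br 8 4 9 = 0" by (simp add: br_def df_def dstr_def kd_def)
lemma br_t39: "br 8 4 10 = 0" by (simp add: br_def df_def dstr_def kd_def)
lemma br_t40: "br 8 5 1 = 0" by (simp add: br_def df_def dstr_def kd_def)
lemma br_t41: "br 8 5 2 = 2 * 1" by (simp add: br_def df_def dstr_def kd_def)
lemma br_t42: "br 8 5 3 = 0" by (simp add: br_def df_def dstr_def kd_def)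
lemma br_t43: "br 8 5 4 = 0" by (simp add: br_def df_def dstr_def kd_def)
lemma br_t44: "br 8 5 5 = 0" by (simp add: br_def df_def dstr_def kd_def)
lemma br_t45: "br 8 5 6 = 0" by (simp add: br_def df_def dstr_def kd_def)
lemma br_t46: "br 8 5 7 = 0" by (simp add: br_def df_def dstr_def kd_def)
lemma br_t47: "br 8 5 8 = 0" by (simp add: br_def df_def dstr_def kd_def)
lemma br_t48: "br 8 5 9 = 0" by (simp add: br_def df_def dstr_def kd_def)
lemma br_t49: "br 8 5 10 = 0" by (simp add: br_def df_def dstr_def kd_def)
lemma br_t50: "br 8 6 1 = 0" by (simp add: br_def df_def dstr_def kd_def)
lemma br_t51: "br 8 6 2 = 0" by (simp add: br_def df_def dstr_def kd_def)
lemma br_t52: "br 8 6 3 = 1" by (simp add: br_def df_def dstr_def kd_def)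
lemma br_t53: "br 8 6 4 = 0" by (simp add: br_def df_def dstr_def kd_def)
lemma br_t54: "br 8 6 5 = 0" by (simp add: br_def df_def dstr_def kd_def)
lemma br_t55: "br 8 6 6 = 0" by (simp add: br_def df_def dstr_def kd_def)
lemma br_t56: "br 8 6 7 = 0" by (simp add: br_def df_def dstr_def kd_def)
lemma br_t57: "br 8 6 8 = 0" by (simp add: br_def df_def dstr_def kd_def)
lemma br_t58: "br 8 6 9 = 0" by (simp add: br_def df_def dstr_def kd_def)
lemma br_t59: "br 8 6 10 = 0" by (simp add: br_def df_def dstr_def kd_def)
lemma br_t60: "br 8 7 1 = 0" by (simp add: br_def df_def dstr_def kd_def)
lemma br_t61: "br 8 7 2 = 0" by (simp add: br_def df_def dstr_def kd_def)
lemma br_t62: "br 8 7 3 = 0" by (simp add: br_def df_def dstr_def kd_def)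
lemma br_t63: "br 8 7 4 = 0" by (simp add: br_def df_def dstr_def kd_def)
lemma br_t64: "br 8 7 5 = - 2 * 1" by (simp add: br_def df_def dstr_def kd_def)
lemma br_t65: "br 8 7 6 = 0" by (simp add: br_def df_def dstr_def kd_def)
lemma br_t66: "br 8 7 7 = 0" by (simp add: br_def df_def dstr_def kd_def)
lemma br_t67: "br 8 7 8 = 0" by (simp add: br_def df_def dstr_def kd_def)
lemma br_t68: "br 8 7 9 = 0" by (simp add: br_def df_def dstr_def kd_def)
lemma br_t69: "br 8 7 10 = 0" by (simp add: br_def df_def dstr_def kd_def)
lemma br_t70: "br 8 8 1 = 0" by (simp add: br_def df_def dstr_def kd_def)
lemma br_t71: "br 8 8 2 = 0" by (simp add: br_def df_def dstr_def kd_def)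
lemma br_t72: "br 8 8 3 = 0" by (simp add: br_def df_def dstr_def kd_def)
lemma br_t73: "br 8 8 4 = 0" by (simp add: br_def df_def dstr_def kd_def)
lemma br_t74: "br 8 8 5 = 0" by (simp add: br_def df_def dstr_def kd_def)
lemma br_t75: "br 8 8 6 = 0" by (simp add: br_def df_def dstr_def kd_def)
lemma br_t76: "br 8 8 7 = 0" by (simp add: br_def df_def dstr_def kd_def)
lemma br_t77: "br 8 8 8 = 0" by (simp add: br_def df_def dstr_def kd_def)
lemma br_t78: "br 8 8 9 = 0" by (simp add: br_def df_def dstr_def kd_def)
lemma br_t79: "br 8 8 10 = 0" by (simp add: br_def df_def dstr_def kd_def)
lemma br_t80: "br 8 9 1 = 0" by (simp add: br_def df_def dstr_def kd_def)
lemma br_t81: "br 8 9 2 = 0" by (simp add: br_def df_def dstr_def kd_def)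
lemma br_t82: "br 8 9 3 = 0" by (simp add: br_def df_def dstr_def kd_def)
lemma br_t83: "br 8 9 4 = 0" by (simp add: br_def df_def dstr_def kd_def)
lemma br_t84: "br 8 9 5 = 0" by (simp add: br_def df_def dstr_def kd_def)
lemma br_t85: "br 8 9 6 = 0" by (simp add: br_def df_def dstr_def kd_def)
lemma br_t86: "br 8 9 7 = 0" by (simp add: br_def df_def dstr_def kd_def)
lemma br_t87: "br 8 9 8 = 2 * 1" by (simp add: br_def df_def dstr_def kd_def)
lemma br_t88: "br 8 9 9 = 0" by (simp add: br_def df_def dstr_def kd_def)
lemma br_t89: "br 8 9 10 = 0" by (simp add: br_def df_def dstr_def kd_def)
lemma br_t90: "br 8 10 1 = 0" by (simp add: br_def df_def dstr_def kd_def)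
lemma br_t91: "br 8 10 2 = 0" by (simp add: br_def df_def dstr_def kd_def)
lemma br_t92: "br 8 10 3 = 0" by (simp add: br_def df_def dstr_def kd_def)
lemma br_t93: "br 8 10 4 = 0" by (simp add: br_def df_def dstr_def kd_def)
lemma br_t94: "br 8 10 5 = 0" by (simp add: br_def df_def dstr_def kd_def)
lemma br_t95: "br 8 10 6 = 0" by (simp add: br_def df_def dstr_def kd_def)
lemma br_t96: "br 8 10 7 = 0" by (simp add: br_def df_def dstr_def kd_def)
lemma br_t97: "br 8 10 8 = 0" by (simp add: br_def df_def dstr_def kd_def)
lemma br_t98: "br 8 10 9 = - 1" by (simp add: br_def df_def dstr_def kd_def)
lemma br_t99: "br 8 10 10 = 0" by (simp add: br_def df_def dstr_def kd_def)
lemma br_t100: "br 9 1 1 = - 2 * 1" by (simp add: br_def df_def dstr_def kd_def)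
lemma br_t101: "br 9 1 2 = 0" by (simp add: br_def df_def dstr_def kd_def)
lemma br_t102: "br 9 1 3 = 0" by (simp add: br_def df_def dstr_def kd_def)
lemma br_t103: "br 9 1 4 = 0" by (simp add: br_def df_def dstr_def kd_def)
lemma br_t104: "br 9 1 5 = 0" by (simp add: br_def df_def dstr_def kd_def)
lemma br_t105: "br 9 1 6 = 0" by (simp add: br_def df_def dstr_def kd_def)
lemma br_t106: "br 9 1 7 = 0" by (simp add: br_def df_def dstr_def kd_def)
lemma br_t107: "br 9 1 8 = 0" by (simp add: br_def df_def dstr_def kd_def)
lemma br_t108: "br 9 1 9 = 0" by (simp add: br_def df_def dstr_def kd_def)
lemma br_t109: "br 9 1 10 = 0" by (simp add: br_def df_def dstr_def kd_def)
lemma br_t110: "br 9 2 1 = 0" by (simp add: br_def df_def dstr_def kd_def)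
lemma br_t111: "br 9 2 2 = - 2 * 1" by (simp add: br_def df_def dstr_def kd_def)
lemma br_t112: "br 9 2 3 = 0" by (simp add: br_def df_def dstr_def kd_def)
lemma br_t113: "br 9 2 4 = 0" by (simp add: br_def df_def dstr_def kd_def)
lemma br_t114: "br 9 2 5 = 0" by (simp add: br_def df_def dstr_def kd_def)
lemma br_t115: "br 9 2 6 = 0" by (simp add: br_def df_def dstr_def kd_def)
lemma br_t116: "br 9 2 7 = 0" by (simp add: br_def df_def dstr_def kd_def)
lemma br_t117: "br 9 2 8 = 0" by (simp add: br_def df_def dstr_def kd_def)
lemma br_t118: "br 9 2 9 = 0" by (simp add: br_def df_def dstr_def kd_def)
lemma br_t119: "br 9 2 10 = 0" by (simp add: br_def df_def dstr_def kd_def)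
lemma br_t120: "br 9 3 1 = 0" by (simp add: br_def df_def dstr_def kd_def)
lemma br_t121: "br 9 3 2 = 0" by (simp add: br_def df_def dstr_def kd_def)
lemma br_t122: "br 9 3 3 = 0" by (simp add: br_def df_def dstr_def kd_def)
lemma br_t123: "br 9 3 4 = 0" by (simp add: br_def df_def dstr_def kd_def)
lemma br_t124: "br 9 3 5 = 0" by (simp add: br_def df_def dstr_def kd_def)
lemma br_t125: "br 9 3 6 = 0" by (simp add: br_def df_def dstr_def kd_def)
lemma br_t126: "br 9 3 7 = 0" by (simp add: br_def df_def dstr_def kd_def)
lemma br_t127: "br 9 3 8 = 0" by (simp add: br_def df_def dstr_def kd_def)
lemma br_t128: "br 9 3 9 = 0" by (simp add: br_def df_def dstr_def kd_def)
lemma br_t129: "br 9 3 10 = 0" by (simp add: br_def df_def dstr_def kd_def)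
lemma br_t130: "br 9 4 1 = 0" by (simp add: br_def df_def dstr_def kd_def)
lemma br_t131: "br 9 4 2 = 0" by (simp add: br_def df_def dstr_def kd_def)
lemma br_t132: "br 9 4 3 = 0" by (simp add: br_def df_def dstr_def kd_def)
lemma br_t133: "br 9 4 4 = 0" by (simp add: br_def df_def dstr_def kd_def)
lemma br_t134: "br 9 4 5 = 0" by (simp add: br_def df_def dstr_def kd_def)
lemma br_t135: "br 9 4 6 = 0" by (simp add: br_def df_def dstr_def kd_def)
lemma br_t136: "br 9 4 7 = 0" by (simp add: br_def df_def dstr_def kd_def)
lemma br_t137: "br 9 4 8 = 0" by (simp add: br_def df_def dstr_def kd_def)
lemma br_t138: "br 9 4 9 = 0" by (simp add: br_def df_def dstr_def kd_def)
lemma br_t139: "br 9 4 10 = 0" by (simp add: br_def df_def dstr_def kd_def)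
lemma br_t140: "br 9 5 1 = 0" by (simp add: br_def df_def dstr_def kd_def)
lemma br_t141: "br 9 5 2 = 0" by (simp add: br_def df_def dstr_def kd_def)
lemma br_t142: "br 9 5 3 = 0" by (simp add: br_def df_def dstr_def kd_def)
lemma br_t143: "br 9 5 4 = 0" by (simp add: br_def df_def dstr_def kd_def)
lemma br_t144: "br 9 5 5 = 0" by (simp add: br_def df_def dstr_def kd_def)
lemma br_t145: "br 9 5 6 = 0" by (simp add: br_def df_def dstr_def kd_def)
lemma br_t146: "br 9 5 7 = 0" by (simp add: br_def df_def dstr_def kd_def)
lemma br_t147: "br 9 5 8 = 0" by (simp add: br_def df_def dstr_def kd_def)
lemma br_t148: "br 9 5 9 = 0" by (simp add: br_def df_def dstr_def kd_def)
lemma br_t149: "br 9 5 10 = 0" by (simp add: br_def df_def dstr_def kd_def)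
lemma br_t150: "br 9 6 1 = 0" by (simp add: br_def df_def dstr_def kd_def)
lemma br_t151: "br 9 6 2 = 0" by (simp add: br_def df_def dstr_def kd_def)
lemma br_t152: "br 9 6 3 = 0" by (simp add: br_def df_def dstr_def kd_def)
lemma br_t153: "br 9 6 4 = 0" by (simp add: br_def df_def dstr_def kd_def)
lemma br_t154: "br 9 6 5 = 0" by (simp add: br_def df_def dstr_def kd_def)
lemma br_t155: "br 9 6 6 = 2 * 1" by (simp add: br_def df_def dstr_def kd_def)
lemma br_t156: "br 9 6 7 = 0" by (simp add: br_def df_def dstr_def kd_def)
lemma br_t157: "br 9 6 8 = 0" by (simp add: br_def df_def dstr_def kd_def)
lemma br_t158: "br 9 6 9 = 0" by (simp add: br_def df_def dstr_def kd_def)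
lemma br_t159: "br 9 6 10 = 0" by (simp add: br_def df_def dstr_def kd_def)
lemma br_t160: "br 9 7 1 = 0" by (simp add: br_def df_def dstr_def kd_def)
lemma br_t161: "br 9 7 2 = 0" by (simp add: br_def df_def dstr_def kd_def)
lemma br_t162: "br 9 7 3 = 0" by (simp add: br_def df_def dstr_def kd_def)
lemma br_t163: "br 9 7 4 = 0" by (simp add: br_def df_def dstr_def kd_def)
lemma br_t164: "br 9 7 5 = 0" by (simp add: br_def df_def dstr_def kd_def)
lemma br_t165: "br 9 7 6 = 0" by (simp add: br_def df_def dstr_def kd_def)
lemma br_t166: "br 9 7 7 = 2 * 1" by (simp add: br_def df_def dstr_def kd_def)
lemma br_t167: "br 9 7 8 = 0" by (simp add: br_def df_def dstr_def kd_def)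
lemma br_t168: "br 9 7 9 = 0" by (simp add: br_def df_def dstr_def kd_def)
lemma br_t169: "br 9 7 10 = 0" by (simp add: br_def df_def dstr_def kd_def)
lemma br_t170: "br 9 8 1 = 0" by (simp add: br_def df_def dstr_def kd_def)
lemma br_t171: "br 9 8 2 = 0" by (simp add: br_def df_def dstr_def kd_def)
lemma br_t172: "br 9 8 3 = 0" by (simp add: br_def df_def dstr_def kd_def)
lemma br_t173: "br 9 8 4 = 0" by (simp add: br_def df_def dstr_def kd_def)
lemma br_t174: "br 9 8 5 = 0" by (simp add: br_def df_def dstr_def kd_def)
lemma br_t175: "br 9 8 6 = 0" by (simp add: br_def df_def dstr_def kd_def)
lemma br_t176: "br 9 8 7 = 0" by (simp add: br_def df_def dstr_def kd_def)
lemma br_t177: "br 9 8 8 = - 2 * 1" by (simp add: br_def df_def dstr_def kd_def)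
lemma br_t178: "br 9 8 9 = 0" by (simp add: br_def df_def dstr_def kd_def)
lemma br_t179: "br 9 8 10 = 0" by (simp add: br_def df_def dstr_def kd_def)
lemma br_t180: "br 9 9 1 = 0" by (simp add: br_def df_def dstr_def kd_def)
lemma br_t181: "br 9 9 2 = 0" by (simp add: br_def df_def dstr_def kd_def)
lemma br_t182: "br 9 9 3 = 0" by (simp add: br_def df_def dstr_def kd_def)
lemma br_t183: "br 9 9 4 = 0" by (simp add: br_def df_def dstr_def kd_def)
lemma br_t184: "br 9 9 5 = 0" by (simp add: br_def df_def dstr_def kd_def)
lemma br_t185: "br 9 9 6 = 0" by (simp add: br_def df_def dstr_def kd_def)
lemma br_t186: "br 9 9 7 = 0" by (simp add: br_def df_def dstr_def kd_def)
lemma br_t187: "br 9 9 8 = 0" by (simp add: br_def df_def dstr_def kd_def)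
lemma br_t188: "br 9 9 9 = 0" by (simp add: br_def df_def dstr_def kd_def)
lemma br_t189: "br 9 9 10 = 0" by (simp add: br_def df_def dstr_def kd_def)
lemma br_t190: "br 9 10 1 = 0" by (simp add: br_def df_def dstr_def kd_def)
lemma br_t191: "br 9 10 2 = 0" by (simp add: br_def df_def dstr_def kd_def)
lemma br_t192: "br 9 10 3 = 0" by (simp add: br_def df_def dstr_def kd_def)
lemma br_t193: "br 9 10 4 = 0" by (simp add: br_def df_def dstr_def kd_def)
lemma br_t194: "br 9 10 5 = 0" by (simp add: br_def df_def dstr_def kd_def)
lemma br_t195: "br 9 10 6 = 0" by (simp add: br_def df_def dstr_def kd_def)
lemma br_t196: "br 9 10 7 = 0" by (simp add: br_def df_def dstr_def kd_def)
lemma br_t197: "br 9 10 8 = 0" by (simp add: br_def df_def dstr_def kd_def)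
lemma br_t198: "br 9 10 9 = 0" by (simp add: br_def df_def dstr_def kd_def)
lemma br_t199: "br 9 10 10 = 2 * 1" by (simp add: br_def df_def dstr_def kd_def)
lemma br_t200: "br 10 1 1 = 0" by (simp add: br_def df_def dstr_def kd_def)
lemma br_t201: "br 10 1 2 = 0" by (simp add: br_def df_def dstr_def kd_def)
lemma br_t202: "br 10 1 3 = 2 * 1" by (simp add: br_def df_def dstr_def kd_def)
lemma br_t203: "br 10 1 4 = 0" by (simp add: br_def df_def dstr_def kd_def)
lemma br_t204: "br 10 1 5 = 0" by (simp add: br_def df_def dstr_def kd_def)
lemma br_t205: "br 10 1 6 = 0" by (simp add: br_def df_def dstr_def kd_def)
lemma br_t206: "br 10 1 7 = 0" by (simp add: br_def df_def dstr_def kd_def)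
lemma br_t207: "br 10 1 8 = 0" by (simp add: br_def df_def dstr_def kd_def)
lemma br_t208: "br 10 1 9 = 0" by (simp add: br_def df_def dstr_def kd_def)
lemma br_t209: "br 10 1 10 = 0" by (simp add: br_def df_def dstr_def kd_def)
lemma br_t210: "br 10 2 1 = 0" by (simp add: br_def df_def dstr_def kd_def)
lemma br_t211: "br 10 2 2 = 0" by (simp add: br_def df_def dstr_def kd_def)
lemma br_t212: "br 10 2 3 = 0" by (simp add: br_def df_def dstr_def kd_def)
lemma br_t213: "br 10 2 4 = 0" by (simp add: br_def df_def dstr_def kd_def)
lemma br_t214: "br 10 2 5 = 1" by (simp add: br_def df_def dstr_def kd_def)
lemma br_t215: "br 10 2 6 = 0" by (simp add: br_def df_def dstr_def kd_def)
lemma br_t216: "br 10 2 7 = 0" by (simp add: br_def df_def dstr_def kd_def)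
lemma br_t217: "br 10 2 8 = 0" by (simp add: br_def df_def dstr_def kd_def)
lemma br_t218: "br 10 2 9 = 0" by (simp add: br_def df_def dstr_def kd_def)
lemma br_t219: "br 10 2 10 = 0" by (simp add: br_def df_def dstr_def kd_def)
lemma br_t220: "br 10 3 1 = 0" by (simp add: br_def df_def dstr_def kd_def)
lemma br_t221: "br 10 3 2 = 0" by (simp add: br_def df_def dstr_def kd_def)
lemma br_t222: "br 10 3 3 = 0" by (simp add: br_def df_def dstr_def kd_def)
lemma br_t223: "br 10 3 4 = 0" by (simp add: br_def df_def dstr_def kd_def)
lemma br_t224: "br 10 3 5 = 0" by (simp add: br_def df_def dstr_def kd_def)
lemma br_t225: "br 10 3 6 = 2 * 1" by (simp add: br_def df_def dstr_def kd_def)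
lemma br_t226: "br 10 3 7 = 0" by (simp add: br_def df_def dstr_def kd_def)
lemma br_t227: "br 10 3 8 = 0" by (simp add: br_def df_def dstr_def kd_def)
lemma br_t228: "br 10 3 9 = 0" by (simp add: br_def df_def dstr_def kd_def)
lemma br_t229: "br 10 3 10 = 0" by (simp add: br_def df_def dstr_def kd_def)
lemma br_t230: "br 10 4 1 = 0" by (simp add: br_def df_def dstr_def kd_def)
lemma br_t231: "br 10 4 2 = 0" by (simp add: br_def df_def dstr_def kd_def)
lemma br_t232: "br 10 4 3 = 0" by (simp add: br_def df_def dstr_def kd_def)
lemma br_t233: "br 10 4 4 = 0" by (simp add: br_def df_def dstr_def kd_def)
lemma br_t234: "br 10 4 5 = 0" by (simp add: br_def df_def dstr_def kd_def)
lemma br_t235: "br 10 4 6 = 0" by (simp add: br_def df_def dstr_def kd_def)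
lemma br_t236: "br 10 4 7 = 0" by (simp add: br_def df_def dstr_def kd_def)
lemma br_t237: "br 10 4 8 = 0" by (simp add: br_def df_def dstr_def kd_def)
lemma br_t238: "br 10 4 9 = 0" by (simp add: br_def df_def dstr_def kd_def)
lemma br_t239: "br 10 4 10 = 0" by (simp add: br_def df_def dstr_def kd_def)
lemma br_t240: "br 10 5 1 = 0" by (simp add: br_def df_def dstr_def kd_def)
lemma br_t241: "br 10 5 2 = 0" by (simp add: br_def df_def dstr_def kd_def)
lemma br_t242: "br 10 5 3 = 0" by (simp add: br_def df_def dstr_def kd_def)
lemma br_t243: "br 10 5 4 = 0" by (simp add: br_def df_def dstr_def kd_def)
lemma br_t244: "br 10 5 5 = 0" by (simp add: br_def df_def dstr_def kd_def)
lemma br_t245: "br 10 5 6 = 0" by (simp add: br_def df_def dstr_def kd_def)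
lemma br_t246: "br 10 5 7 = - 1" by (simp add: br_def df_def dstr_def kd_def)
lemma br_t247: "br 10 5 8 = 0" by (simp add: br_def df_def dstr_def kd_def)
lemma br_t248: "br 10 5 9 = 0" by (simp add: br_def df_def dstr_def kd_def)
lemma br_t249: "br 10 5 10 = 0" by (simp add: br_def df_def dstr_def kd_def)
lemma br_t250: "br 10 6 1 = 0" by (simp add: br_def df_def dstr_def kd_def)
lemma br_t251: "br 10 6 2 = 0" by (simp add: br_def df_def dstr_def kd_def)
lemma br_t252: "br 10 6 3 = 0" by (simp add: br_def df_def dstr_def kd_def)
lemma br_t253: "br 10 6 4 = 0" by (simp add: br_def df_def dstr_def kd_def)
lemma br_t254: "br 10 6 5 = 0" by (simp add: br_def df_def dstr_def kd_def)
lemma br_t255: "br 10 6 6 = 0" by (simp add: br_def df_def dstr_def kd_def)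
lemma br_t256: "br 10 6 7 = 0" by (simp add: br_def df_def dstr_def kd_def)
lemma br_t257: "br 10 6 8 = 0" by (simp add: br_def df_def dstr_def kd_def)
lemma br_t258: "br 10 6 9 = 0" by (simp add: br_def df_def dstr_def kd_def)
lemma br_t259: "br 10 6 10 = 0" by (simp add: br_def df_def dstr_def kd_def)
lemma br_t260: "br 10 7 1 = 0" by (simp add: br_def df_def dstr_def kd_def)
lemma br_t261: "br 10 7 2 = 0" by (simp add: br_def df_def dstr_def kd_def)
lemma br_t262: "br 10 7 3 = 0" by (simp add: br_def df_def dstr_def kd_def)
lemma br_t263: "br 10 7 4 = 0" by (simp add: br_def df_def dstr_def kd_def)
lemma br_t264: "br 10 7 5 = 0" by (simp add: br_def df_def dstr_def kd_def)
lemma br_t265: "br 10 7 6 = 0" by (simp add: br_def df_def dstr_def kd_def)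
lemma br_t266: "br 10 7 7 = 0" by (simp add: br_def df_def dstr_def kd_def)
lemma br_t267: "br 10 7 8 = 0" by (simp add: br_def df_def dstr_def kd_def)
lemma br_t268: "br 10 7 9 = 0" by (simp add: br_def df_def dstr_def kd_def)
lemma br_t269: "br 10 7 10 = 0" by (simp add: br_def df_def dstr_def kd_def)
lemma br_t270: "br 10 8 1 = 0" by (simp add: br_def df_def dstr_def kd_def)
lemma br_t271: "br 10 8 2 = 0" by (simp add: br_def df_def dstr_def kd_def)
lemma br_t272: "br 10 8 3 = 0" by (simp add: br_def df_def dstr_def kd_def)
lemma br_t273: "br 10 8 4 = 0" by (simp add: br_def df_def dstr_def kd_def)
lemma br_t274: "br 10 8 5 = 0" by (simp add: br_def df_def dstr_def kd_def)
lemma br_t275: "br 10 8 6 = 0" by (simp add: br_def df_def dstr_def kd_def)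
lemma br_t276: "br 10 8 7 = 0" by (simp add: br_def df_def dstr_def kd_def)
lemma br_t277: "br 10 8 8 = 0" by (simp add: br_def df_def dstr_def kd_def)
lemma br_t278: "br 10 8 9 = 1" by (simp add: br_def df_def dstr_def kd_def)
lemma br_t279: "br 10 8 10 = 0" by (simp add: br_def df_def dstr_def kd_def)
lemma br_t280: "br 10 9 1 = 0" by (simp add: br_def df_def dstr_def kd_def)
lemma br_t281: "br 10 9 2 = 0" by (simp add: br_def df_def dstr_def kd_def)
lemma br_t282: "br 10 9 3 = 0" by (simp add: br_def df_def dstr_def kd_def)
lemma br_t283: "br 10 9 4 = 0" by (simp add: br_def df_def dstr_def kd_def)
lemma br_t284: "br 10 9 5 = 0" by (simp add: br_def df_def dstr_def kd_def)
lemma br_t285: "br 10 9 6 = 0" by (simp add: br_def df_def dstr_def kd_def)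
lemma br_t286: "br 10 9 7 = 0" by (simp add: br_def df_def dstr_def kd_def)
lemma br_t287: "br 10 9 8 = 0" by (simp add: br_def df_def dstr_def kd_def)
lemma br_t288: "br 10 9 9 = 0" by (simp add: br_def df_def dstr_def kd_def)
lemma br_t289: "br 10 9 10 = - 2 * 1" by (simp add: br_def df_def dstr_def kd_def)
lemma br_t290: "br 10 10 1 = 0" by (simp add: br_def df_def dstr_def kd_def)
lemma br_t291: "br 10 10 2 = 0" by (simp add: br_def df_def dstr_def kd_def)
lemma br_t292: "br 10 10 3 = 0" by (simp add: br_def df_def dstr_def kd_def)
lemma br_t293: "br 10 10 4 = 0" by (simp add: br_def df_def dstr_def kd_def)
lemma br_t294: "br 10 10 5 = 0" by (simp add: br_def df_def dstr_def kd_def)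
lemma br_t295: "br 10 10 6 = 0" by (simp add: br_def df_def dstr_def kd_def)
lemma br_t296: "br 10 10 7 = 0" by (simp add: br_def df_def dstr_def kd_def)
lemma br_t297: "br 10 10 8 = 0" by (simp add: br_def df_def dstr_def kd_def)
lemma br_t298: "br 10 10 9 = 0" by (simp add: br_def df_def dstr_def kd_def)
lemma br_t299: "br 10 10 10 = 0" by (simp add: br_def df_def dstr_def kd_def)
lemmas br_tab = br_t0 br_t1 br_t2 br_t3 br_t4 br_t5 br_t6 br_t7 br_t8 br_t9 br_t10 br_t11 br_t12 br_t13 br_t14 br_t15 br_t16 br_t17 br_t18 br_t19 br_t20 br_t21 br_t22 br_t23 br_t24 br_t25 br_t26 br_t27 br_t28 br_t29 br_t30 br_t31 br_t32 br_t33 br_t34 br_t35 br_t36 br_t37 br_t38 br_t39 br_t40 br_t41 br_t42 br_t43 br_t44 br_t45 br_t46 br_t47 br_t48 br_t49 br_t50 br_t51 br_t52 br_t53 br_t54 br_t55 br_t56 br_t57 br_t58 br_t59 br_t60 br_t61 br_t62 br_t63 br_t64 br_t65 br_t66 br_t67 br_t68 br_t69 br_t70 br_t71 br_t72 br_t73 br_t74 br_t75 br_t76 br_t77 br_t78 br_t79 br_t80 br_t81 br_t82 br_t83 br_t84 br_t85 br_t86 br_t87 br_t88 br_t89 br_t90 br_t91 br_t92 br_t93 br_t94 br_t95 br_t96 br_t97 br_t98 br_t99 br_t100 br_t101 br_t102 br_t103 br_t104 br_t105 br_t106 br_t107 br_t108 br_t109 br_t110 br_t111 br_t112 br_t113 br_t114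 br_t115 br_t116 br_t117 br_t118 br_t119 br_t120 br_t121 br_t122 br_t123 br_t124 br_t125 br_t126 br_t127 br_t128 br_t129 br_t130 br_t131 br_t132 br_t133 br_t134 br_t135 br_t136 br_t137 br_t138 br_t139 br_t140 br_t141 br_t142 br_t143 br_t144 br_t145 br_t146 br_t147 br_t148 br_t149 br_t150 br_t151 br_t152 br_t153 br_t154 br_t155 br_t156 br_t157 br_t158 br_t159 br_t160 br_t161 br_t162 br_t163 br_t164 br_t165 br_t166 br_t167 br_t168 br_t169 br_t170 br_t171 br_t172 br_t173 br_t174 br_t175 br_t176 br_t177 br_t178 br_t179 br_t180 br_t181 br_t182 br_t183 br_t184 br_t185 br_t186 br_t187 br_t188 br_t189 br_t190 br_t191 br_t192 br_t193 br_t194 br_t195 br_t196 br_t197 br_t198 br_t199 br_t200 br_t201 br_t202 br_t203 br_t204 br_t205 br_t206 br_t207 br_t208 br_t209 br_t210 br_t211 br_t212 br_t213 br_t214 br_t215 br_t216 br_t217 br_t218 br_t219 br_t220 br_t221 br_t222 br_t223 br_t224 br_t225 br_t226 br_t227 br_t228 br_t229 br_t230 br_t231 br_t232 br_t233 br_t234 br_t235 br_t236 br_t237 br_t238 br_t239 br_t240 br_t241 br_t242 br_t243 br_t244 br_t245 br_t246 br_t247 br_t248 br_t249 br_t250 br_t251 br_t252 br_t253 br_t254 br_t255 br_t256 br_t257 br_t258 br_t259 br_t260 br_t261 br_t262 br_t263 br_t264 br_t265 br_t266 br_t267 br_t268 br_t269 br_t270 br_t271 br_t272 br_t273 br_t274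 br_t275 br_t276 br_t277 br_t278 br_t279 br_t280 br_t281 br_t282 br_t283 br_t284 br_t285 br_t286 br_t287 br_t288 br_t289 br_t290 br_t291 br_t292 br_t293 br_t294 br_t295 br_t296 br_t297 br_t298 br_t299

lemma fw3_anti: "fw3 m n r j i k = - fw3 m n r i j k" "fw3 m n r i k j = - fw3 m n r i j k"
  unfolding fw3_def by linarith+

lemma family_anti: "family a b q h p j i k = - family a b q h p i j k"
   "family a b q h p i k j = - family a b q h p i j k"
proof -
  have e1: "\<And>m n r. fw3 m n r j i k = - fw3 m n r i j k" by (rule fw3_anti(1))
  have e2: "\<And>m n r. fw3 m n r i k j = - fw3 m n r i j k" by (rule fw3_anti(2))
  show "family a b q h p j i k = - family a b q h p i j k"
    unfolding family_def by (simp only: e1) (simp add: algebra_simps)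
  show "family a b q h p i k j = - family a b q h p i j k"
    unfolding family_def by (simp only: e2) (simp add: algebra_simps)
qed

lemma kd0: "7 < i \<Longrightarrow> m \<le> 7 \<Longrightarrow> kd m i = 0" by (simp add: kd_def)

lemma fw3_out: assumes "m \<le> 7" "n \<le> 7" "r \<le> 7" "7 < i \<or> 7 < j \<or> 7 < k" shows "fw3 m n r i j k = 0"
  using assms(4)
proof (elim disjE)
  assume "7 < i" then show ?thesis using assms(1-3) by (simp add: fw3_def kd0)
next
  assume "7 < j" then show ?thesis using assms(1-3) by (simp add: fw3_def kd0)
next
  assume "7 < k" then show ?thesis using assms(1-3) by (simp add: fw3_def kd0)
qed

lemma family_out: "7 < i \<or> 7 < j \<or> 7 < k \<Longrightarrow> family a b q h p i j k = 0"
  by (simp add: family_def fw3_out)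

lemma fam_t0: "family a b q h p 1 2 3 = 0" by (simp add: family_def fw3_def kd_def)
lemma fam_t1: "family a b q h p 1 2 4 = 0" by (simp add: family_def fw3_def kd_def)
lemma fam_t2: "family a b q h p 1 2 5 = 0" by (simp add: family_def fw3_def kd_def)
lemma fam_t3: "family a b q h p 1 2 6 = 0" by (simp add: family_def fw3_def kd_def)
lemma fam_t4: "family a b q h p 1 2 7 = 0" by (simp add: family_def fw3_def kd_def)
lemma fam_t5: "family a b q h p 1 3 4 = 0" by (simp add: family_def fw3_def kd_def)
lemma fam_t6: "family a b q h p 1 3 5 = 0" by (simp add: family_def fw3_def kd_def)
lemma fam_t7: "family a b q h p 1 3 6 = q" by (simp add: family_def fw3_def kd_def)
lemma fam_t8: "family a b q h p 1 3 7 = - 4 * b" by (simp add: family_def fw3_def kd_def)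
lemma fam_t9: "family a b q h p 1 4 5 = 0" by (simp add: family_def fw3_def kd_def)
lemma fam_t10: "family a b q h p 1 4 6 = 0" by (simp add: family_def fw3_def kd_def)
lemma fam_t11: "family a b q h p 1 4 7 = 4 * a" by (simp add: family_def fw3_def kd_def)
lemma fam_t12: "family a b q h p 1 5 6 = 2 * b" by (simp add: family_def fw3_def kd_def)
lemma fam_t13: "family a b q h p 1 5 7 = - 4 * h" by (simp add: family_def fw3_def kd_def)
lemma fam_t14: "family a b q h p 1 6 7 = 0" by (simp add: family_def fw3_def kd_def)
lemma fam_t15: "family a b q h p 2 3 4 = 0" by (simp add: family_def fw3_def kd_def)
lemma fam_t16: "family a b q h p 2 3 5 = 0" by (simp add: family_def fw3_def kd_def)
lemma fam_t17: "family a b q h p 2 3 6 = b" by (simp add: family_def fw3_def kd_def)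
lemma fam_t18: "family a b q h p 2 3 7 = - 2 * h" by (simp add: family_def fw3_def kd_def)
lemma fam_t19: "family a b q h p 2 4 5 = 0" by (simp add: family_def fw3_def kd_def)
lemma fam_t20: "family a b q h p 2 4 6 = a" by (simp add: family_def fw3_def kd_def)
lemma fam_t21: "family a b q h p 2 4 7 = 0" by (simp add: family_def fw3_def kd_def)
lemma fam_t22: "family a b q h p 2 5 6 = h" by (simp add: family_def fw3_def kd_def)
lemma fam_t23: "family a b q h p 2 5 7 = p" by (simp add: family_def fw3_def kd_def)
lemma fam_t24: "family a b q h p 2 6 7 = 0" by (simp add: family_def fw3_def kd_def)
lemma fam_t25: "family a b q h p 3 4 5 = 2 * a" by (simp add: family_def fw3_def kd_def)
lemma fam_t26: "family a b q h p 3 4 6 = 0" by (simp add: family_def fw3_def kd_def)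
lemma fam_t27: "family a b q h p 3 4 7 = 0" by (simp add: family_def fw3_def kd_def)
lemma fam_t28: "family a b q h p 3 5 6 = 0" by (simp add: family_def fw3_def kd_def)
lemma fam_t29: "family a b q h p 3 5 7 = 0" by (simp add: family_def fw3_def kd_def)
lemma fam_t30: "family a b q h p 3 6 7 = 0" by (simp add: family_def fw3_def kd_def)
lemma fam_t31: "family a b q h p 4 5 6 = 0" by (simp add: family_def fw3_def kd_def)
lemma fam_t32: "family a b q h p 4 5 7 = 0" by (simp add: family_def fw3_def kd_def)
lemma fam_t33: "family a b q h p 4 6 7 = 0" by (simp add: family_def fw3_def kd_def)
lemma fam_t34: "family a b q h p 5 6 7 = 0" by (simp add: family_def fw3_def kd_def)
lemmas family_tab = fam_t0 fam_t1 fam_t2 fam_t3 fam_t4 fam_t5 fam_t6 fam_t7 fam_t8 fam_t9 fam_t10 fam_t11 fam_t12 fam_t13 fam_t14 fam_t15 fam_t16 fam_t17 fam_t18 fam_t19 fam_t20 fam_t21 fam_t22 fam_t23 fam_t24 fam_t25 fam_t26 fam_t27 fam_t28 fam_t29 fam_t30 fam_t31 fam_t32 fam_t33 fam_t34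

lemma enum:
  assumes "P 1 2 3 \<and>
    P 1 2 4 \<and>
    P 1 2 5 \<and>
    P 1 2 6 \<and>
    P 1 2 7 \<and>
    P 1 2 8 \<and>
    P 1 2 9 \<and>
    P 1 2 10 \<and>
    P 1 3 4 \<and>
    P 1 3 5 \<and>
    P 1 3 6 \<and>
    P 1 3 7 \<and>
    P 1 3 8 \<and>
    P 1 3 9 \<and>
    P 1 3 10 \<and>
    P 1 4 5 \<and>
    P 1 4 6 \<and>
    P 1 4 7 \<and>
    P 1 4 8 \<and>
    P 1 4 9 \<and>
    P 1 4 10 \<and>
    P 1 5 6 \<and>
    P 1 5 7 \<and>
    P 1 5 8 \<and>
    P 1 5 9 \<and>
    P 1 5 10 \<and>
    P 1 6 7 \<and>
    P 1 6 8 \<and>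
    P 1 6 9 \<and>
    P 1 6 10 \<and>
    P 1 7 8 \<and>
    P 1 7 9 \<and>
    P 1 7 10 \<and>
    P 1 8 9 \<and>
    P 1 8 10 \<and>
    P 1 9 10 \<and>
    P 2 3 4 \<and>
    P 2 3 5 \<and>
    P 2 3 6 \<and>
    P 2 3 7 \<and>
    P 2 3 8 \<and>
    P 2 3 9 \<and>
    P 2 3 10 \<and>
    P 2 4 5 \<and>
    P 2 4 6 \<and>
    P 2 4 7 \<and>
    P 2 4 8 \<and>
    P 2 4 9 \<and>
    P 2 4 10 \<and>
    P 2 5 6 \<and>
    P 2 5 7 \<and>
    P 2 5 8 \<and>
    P 2 5 9 \<and>
    P 2 5 10 \<and>
    P 2 6 7 \<and>
    P 2 6 8 \<and>
    P 2 6 9 \<and>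
    P 2 6 10 \<and>
    P 2 7 8 \<and>
    P 2 7 9 \<and>
    P 2 7 10 \<and>
    P 2 8 9 \<and>
    P 2 8 10 \<and>
    P 2 9 10 \<and>
    P 3 4 5 \<and>
    P 3 4 6 \<and>
    P 3 4 7 \<and>
    P 3 4 8 \<and>
    P 3 4 9 \<and>
    P 3 4 10 \<and>
    P 3 5 6 \<and>
    P 3 5 7 \<and>
    P 3 5 8 \<and>
    P 3 5 9 \<and>
    P 3 5 10 \<and>
    P 3 6 7 \<and>
    P 3 6 8 \<and>
    P 3 6 9 \<and>
    P 3 6 10 \<and>
    P 3 7 8 \<and>
    P 3 7 9 \<and>
    P 3 7 10 \<and>
    P 3 8 9 \<and>
    P 3 8 10 \<and>
    P 3 9 10 \<and>
    P 4 5 6 \<and>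
    P 4 5 7 \<and>
    P 4 5 8 \<and>
    P 4 5 9 \<and>
    P 4 5 10 \<and>
    P 4 6 7 \<and>
    P 4 6 8 \<and>
    P 4 6 9 \<and>
    P 4 6 10 \<and>
    P 4 7 8 \<and>
    P 4 7 9 \<and>
    P 4 7 10 \<and>
    P 4 8 9 \<and>
    P 4 8 10 \<and>
    P 4 9 10 \<and>
    P 5 6 7 \<and>
    P 5 6 8 \<and>
    P 5 6 9 \<and>
    P 5 6 10 \<and>
    P 5 7 8 \<and>
    P 5 7 9 \<and>
    P 5 7 10 \<and>
    P 5 8 9 \<and>
    P 5 8 10 \<and>
    P 5 9 10 \<and>
    P 6 7 8 \<and>
    P 6 7 9 \<and>
    P 6 7 10 \<and>
    P 6 8 9 \<and>
    P 6 8 10 \<and>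
    P 6 9 10 \<and>
    P 7 8 9 \<and>
    P 7 8 10 \<and>
    P 7 9 10 \<and>
    P 8 9 10"
  shows "\<forall>i\<in>{1..10::nat}. \<forall>j\<in>{1..10::nat}. \<forall>k\<in>{1..10::nat}. i < j \<longrightarrow> j < k \<longrightarrow> P i j k"
  using assms unfolding set10 by simp

lemma red:
  fixes F :: "nat \<Rightarrow> nat \<Rightarrow> nat \<Rightarrow> real"
  assumes A1: "\<And>i j k. i\<in>{1..10} \<Longrightarrow> j\<in>{1..10} \<Longrightarrow> k\<in>{1..10} \<Longrightarrow> F j i k = - F i j k"
    and A2: "\<And>i j k. i\<in>{1..10} \<Longrightarrow> j\<in>{1..10} \<Longrightarrow> k\<in>{1..10} \<Longrightarrow> F i k j = - F i j k"
    and S: "\<forall>i\<in>{1..10::nat}. \<forall>j\<in>{1..10::nat}. \<forall>k\<in>{1..10::nat}. i < j \<longrightarrow> j < k \<longrightarrow> F i j k = 0"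
    and i: "i\<in>{1..10}" and j: "j\<in>{1..10}" and k: "k\<in>{1..10}"
  shows "F i j k = 0"
proof -
  have S': "\<And>i j k. i\<in>{1..10} \<Longrightarrow> j\<in>{1..10} \<Longrightarrow> k\<in>{1..10} \<Longrightarrow> i<j \<Longrightarrow> j<k \<Longrightarrow> F i j k = 0"
    using S by blast
  consider "i<j" "j<k" | "i<k" "k<j" | "j<i" "i<k" | "j<k" "k<i" | "k<i" "i<j" | "k<j" "j<i"
    | "i=j" | "j=k" | "i=k" by linarith
  then show ?thesis
  proof cases
    case 1 then show ?thesis using S'[OF i j k] by simp
  next
    case 2 then show ?thesis using S'[OF i k j] A2[OF i j k] by simp
  next
    case 3 then show ?thesis using S'[OF j i k] A1[OF i j k] by simp
  next
    case 4 then show ?thesis using S'[OF j k i] A1[OF i j k] A2[OF j i k] by simp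
  next
    case 5 then show ?thesis using S'[OF k i j] A2[OF i j k] A1[OF i k j] by simp
  next
    case 6 then show ?thesis using S'[OF k j i] A1[OF i j k] A2[OF j i k] A1[OF j k i] by simp
  next
    case 7 then show ?thesis using A1[OF i j k] by simp
  next
    case 8 then show ?thesis using A2[OF i j k] by simp
  next
    case 9 then show ?thesis using A2[OF i i j] A1[OF i i j] i j by simp
  qed
qed

lemma lie_anti:
  fixes w :: "nat \<Rightarrow> nat \<Rightarrow> nat \<Rightarrow> real"
  assumes A1: "\<And>i j k. i\<in>{1..10} \<Longrightarrow> j\<in>{1..10} \<Longrightarrow> k\<in>{1..10} \<Longrightarrow> w j i k = - w i j k"
    and A2: "\<And>i j k. i\<in>{1..10} \<Longrightarrow> j\<in>{1..10} \<Longrightarrow> k\<in>{1..10} \<Longrightarrow> w i k j = - w i j k"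
    and i: "i\<in>{1..10}" and j: "j\<in>{1..10}" and k: "k\<in>{1..10}"
  shows "lie_li s w j i k = - lie_li s w i j k" "lie_li s w i k j = - lie_li s w i j k"
proof -
  have "(\<Sum>l\<in>{1..10}. br s j l * w l i k + br s i l * w j l k + br s k l * w j i l)
     = - (\<Sum>l\<in>{1..10}. br s i l * w l j k + br s j l * w i l k + br s k l * w i j l)"
    unfolding sum_negf[symmetric]
  proof (rule sum.cong)
    fix l assume l: "l \<in> {1..10::nat}"
    show "br s j l * w l i k + br s i l * w j l k + br s k l * w j i l
       = -(br s i l * w l j k + br s j l * w i l k + br s k l * w i j l)"
      using A1[OF i l k] A1[OF l j k] A1[OF i j l] by (simp add: algebra_simps)
  qed simp
  then show "lie_li s w j i k = - lie_li s w i j k"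
    unfolding lie_li_def by simp
  have "(\<Sum>l\<in>{1..10}. br s i l * w l k j + br s k l * w i l j + br s j l * w i k l)
     = - (\<Sum>l\<in>{1..10}. br s i l * w l j k + br s j l * w i l k + br s k l * w i j l)"
    unfolding sum_negf[symmetric]
  proof (rule sum.cong)
    fix l assume l: "l \<in> {1..10::nat}"
    show "br s i l * w l k j + br s k l * w i l j + br s j l * w i k l
       = -(br s i l * w l j k + br s j l * w i l k + br s k l * w i j l)"
      using A2[OF l j k] A2[OF i j l] A2[OF i l k] by (simp add: algebra_simps)
  qed simp
  then show "lie_li s w i k j = - lie_li s w i j k"
    unfolding lie_li_def by simp
qed


context
  fixes \<phi> :: "nat \<Rightarrow> nat \<Rightarrow> nat \<Rightarrow> real"
  assumes antisym: "\<forall>i\<in>{1..7}. \<forall>j\<in>{1..7}. \<forall>k\<in>{1..7}.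
                      \<phi> j i k = - \<phi> i j k \<and> \<phi> i k j = - \<phi> i j k"
begin

lemma sw12: "i\<in>{1..7} \<Longrightarrow> j\<in>{1..7} \<Longrightarrow> k\<in>{1..7} \<Longrightarrow> \<phi> j i k = - \<phi> i j k"
  using antisym by blast
lemma sw23: "i\<in>{1..7} \<Longrightarrow> j\<in>{1..7} \<Longrightarrow> k\<in>{1..7} \<Longrightarrow> \<phi> i k j = - \<phi> i j k"
  using antisym by blast

lemma ev_anti1: "i\<in>{1..10} \<Longrightarrow> j\<in>{1..10} \<Longrightarrow> k\<in>{1..10} \<Longrightarrow> eval3 \<phi> j i k = - eval3 \<phi> i j k"
  unfolding eval3_def using sw12[of i j k] by auto
lemma ev_anti2: "i\<in>{1..10} \<Longrightarrow> j\<in>{1..10} \<Longrightarrow> k\<in>{1..10} \<Longrightarrow> eval3 \<phi> i k j = - eval3 \<phi> i j k"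
  unfolding eval3_def using sw23[of i j k] by auto

lemma nm_111: "\<phi> 1 1 1 = 0" using sw12[of 1 1 1] by simp
lemma nm_112: "\<phi> 1 1 2 = 0" using sw12[of 1 1 2] by simp
lemma nm_113: "\<phi> 1 1 3 = 0" using sw12[of 1 1 3] by simp
lemma nm_114: "\<phi> 1 1 4 = 0" using sw12[of 1 1 4] by simp
lemma nm_115: "\<phi> 1 1 5 = 0" using sw12[of 1 1 5] by simp
lemma nm_116: "\<phi> 1 1 6 = 0" using sw12[of 1 1 6] by simp
lemma nm_117: "\<phi> 1 1 7 = 0" using sw12[of 1 1 7] by simp
lemma nm_121: "\<phi> 1 2 1 = 0" using sw12[of 1 1 2] sw23[of 1 1 2] by simp
lemma nm_122: "\<phi> 1 2 2 = 0" using sw23[of 1 2 2] by simp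
lemma nm_131: "\<phi> 1 3 1 = 0" using sw12[of 1 1 3] sw23[of 1 1 3] by simp
lemma nm_132: "\<phi> 1 3 2 = - \<phi> 1 2 3" using sw23[of 1 2 3] by simp
lemma nm_133: "\<phi> 1 3 3 = 0" using sw23[of 1 3 3] by simp
lemma nm_141: "\<phi> 1 4 1 = 0" using sw12[of 1 1 4] sw23[of 1 1 4] by simp
lemma nm_142: "\<phi> 1 4 2 = - \<phi> 1 2 4" using sw23[of 1 2 4] by simp
lemma nm_143: "\<phi> 1 4 3 = - \<phi> 1 3 4" using sw23[of 1 3 4] by simp
lemma nm_144: "\<phi> 1 4 4 = 0" using sw23[of 1 4 4] by simp
lemma nm_151: "\<phi> 1 5 1 = 0" using sw12[of 1 1 5] sw23[of 1 1 5] by simp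
lemma nm_152: "\<phi> 1 5 2 = - \<phi> 1 2 5" using sw23[of 1 2 5] by simp
lemma nm_153: "\<phi> 1 5 3 = - \<phi> 1 3 5" using sw23[of 1 3 5] by simp
lemma nm_154: "\<phi> 1 5 4 = - \<phi> 1 4 5" using sw23[of 1 4 5] by simp
lemma nm_155: "\<phi> 1 5 5 = 0" using sw23[of 1 5 5] by simp
lemma nm_161: "\<phi> 1 6 1 = 0" using sw12[of 1 1 6] sw23[of 1 1 6] by simp
lemma nm_162: "\<phi> 1 6 2 = - \<phi> 1 2 6" using sw23[of 1 2 6] by simp
lemma nm_163: "\<phi> 1 6 3 = - \<phi> 1 3 6" using sw23[of 1 3 6] by simp
lemma nm_164: "\<phi> 1 6 4 = - \<phi> 1 4 6" using sw23[of 1 4 6] by simp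
lemma nm_165: "\<phi> 1 6 5 = - \<phi> 1 5 6" using sw23[of 1 5 6] by simp
lemma nm_166: "\<phi> 1 6 6 = 0" using sw23[of 1 6 6] by simp
lemma nm_171: "\<phi> 1 7 1 = 0" using sw12[of 1 1 7] sw23[of 1 1 7] by simp
lemma nm_172: "\<phi> 1 7 2 = - \<phi> 1 2 7" using sw23[of 1 2 7] by simp
lemma nm_173: "\<phi> 1 7 3 = - \<phi> 1 3 7" using sw23[of 1 3 7] by simp
lemma nm_174: "\<phi> 1 7 4 = - \<phi> 1 4 7" using sw23[of 1 4 7] by simp
lemma nm_175: "\<phi> 1 7 5 = - \<phi> 1 5 7" using sw23[of 1 5 7] by simp
lemma nm_176: "\<phi> 1 7 6 = - \<phi> 1 6 7" using sw23[of 1 6 7] by simp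
lemma nm_177: "\<phi> 1 7 7 = 0" using sw23[of 1 7 7] by simp
lemma nm_211: "\<phi> 2 1 1 = 0" using sw23[of 2 1 1] by simp
lemma nm_212: "\<phi> 2 1 2 = 0" using sw12[of 2 2 1] sw23[of 2 2 1] by simp
lemma nm_213: "\<phi> 2 1 3 = - \<phi> 1 2 3" using sw12[of 1 2 3] by simp
lemma nm_214: "\<phi> 2 1 4 = - \<phi> 1 2 4" using sw12[of 1 2 4] by simp
lemma nm_215: "\<phi> 2 1 5 = - \<phi> 1 2 5" using sw12[of 1 2 5] by simp
lemma nm_216: "\<phi> 2 1 6 = - \<phi> 1 2 6" using sw12[of 1 2 6] by simp
lemma nm_217: "\<phi> 2 1 7 = - \<phi> 1 2 7" using sw12[of 1 2 7] by simp
lemma nm_221: "\<phi> 2 2 1 = 0" using sw12[of 2 2 1] by simp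
lemma nm_222: "\<phi> 2 2 2 = 0" using sw12[of 2 2 2] by simp
lemma nm_223: "\<phi> 2 2 3 = 0" using sw12[of 2 2 3] by simp
lemma nm_224: "\<phi> 2 2 4 = 0" using sw12[of 2 2 4] by simp
lemma nm_225: "\<phi> 2 2 5 = 0" using sw12[of 2 2 5] by simp
lemma nm_226: "\<phi> 2 2 6 = 0" using sw12[of 2 2 6] by simp
lemma nm_227: "\<phi> 2 2 7 = 0" using sw12[of 2 2 7] by simp
lemma nm_231: "\<phi> 2 3 1 = \<phi> 1 2 3" using sw23[of 2 1 3] sw12[of 1 2 3] by simp
lemma nm_232: "\<phi> 2 3 2 = 0" using sw12[of 2 2 3] sw23[of 2 2 3] by simp
lemma nm_233: "\<phi> 2 3 3 = 0" using sw23[of 2 3 3] by simp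
lemma nm_241: "\<phi> 2 4 1 = \<phi> 1 2 4" using sw23[of 2 1 4] sw12[of 1 2 4] by simp
lemma nm_242: "\<phi> 2 4 2 = 0" using sw12[of 2 2 4] sw23[of 2 2 4] by simp
lemma nm_243: "\<phi> 2 4 3 = - \<phi> 2 3 4" using sw23[of 2 3 4] by simp
lemma nm_244: "\<phi> 2 4 4 = 0" using sw23[of 2 4 4] by simp
lemma nm_251: "\<phi> 2 5 1 = \<phi> 1 2 5" using sw23[of 2 1 5] sw12[of 1 2 5] by simp
lemma nm_252: "\<phi> 2 5 2 = 0" using sw12[of 2 2 5] sw23[of 2 2 5] by simp
lemma nm_253: "\<phi> 2 5 3 = - \<phi> 2 3 5" using sw23[of 2 3 5] by simp
lemma nm_254: "\<phi> 2 5 4 = - \<phi> 2 4 5" using sw23[of 2 4 5] by simp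
lemma nm_255: "\<phi> 2 5 5 = 0" using sw23[of 2 5 5] by simp
lemma nm_261: "\<phi> 2 6 1 = \<phi> 1 2 6" using sw23[of 2 1 6] sw12[of 1 2 6] by simp
lemma nm_262: "\<phi> 2 6 2 = 0" using sw12[of 2 2 6] sw23[of 2 2 6] by simp
lemma nm_263: "\<phi> 2 6 3 = - \<phi> 2 3 6" using sw23[of 2 3 6] by simp
lemma nm_264: "\<phi> 2 6 4 = - \<phi> 2 4 6" using sw23[of 2 4 6] by simp
lemma nm_265: "\<phi> 2 6 5 = - \<phi> 2 5 6" using sw23[of 2 5 6] by simp
lemma nm_266: "\<phi> 2 6 6 = 0" using sw23[of 2 6 6] by simp
lemma nm_271: "\<phi> 2 7 1 = \<phi> 1 2 7" using sw23[of 2 1 7] sw12[of 1 2 7] by simp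
lemma nm_272: "\<phi> 2 7 2 = 0" using sw12[of 2 2 7] sw23[of 2 2 7] by simp
lemma nm_273: "\<phi> 2 7 3 = - \<phi> 2 3 7" using sw23[of 2 3 7] by simp
lemma nm_274: "\<phi> 2 7 4 = - \<phi> 2 4 7" using sw23[of 2 4 7] by simp
lemma nm_275: "\<phi> 2 7 5 = - \<phi> 2 5 7" using sw23[of 2 5 7] by simp
lemma nm_276: "\<phi> 2 7 6 = - \<phi> 2 6 7" using sw23[of 2 6 7] by simp
lemma nm_277: "\<phi> 2 7 7 = 0" using sw23[of 2 7 7] by simp
lemma nm_311: "\<phi> 3 1 1 = 0" using sw23[of 3 1 1] by simp
lemma nm_312: "\<phi> 3 1 2 = \<phi> 1 2 3" using sw12[of 1 3 2] sw23[of 1 2 3] by simp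
lemma nm_313: "\<phi> 3 1 3 = 0" using sw12[of 3 3 1] sw23[of 3 3 1] by simp
lemma nm_314: "\<phi> 3 1 4 = - \<phi> 1 3 4" using sw12[of 1 3 4] by simp
lemma nm_315: "\<phi> 3 1 5 = - \<phi> 1 3 5" using sw12[of 1 3 5] by simp
lemma nm_316: "\<phi> 3 1 6 = - \<phi> 1 3 6" using sw12[of 1 3 6] by simp
lemma nm_317: "\<phi> 3 1 7 = - \<phi> 1 3 7" using sw12[of 1 3 7] by simp
lemma nm_321: "\<phi> 3 2 1 = - \<phi> 1 2 3" using sw12[of 2 3 1] sw23[of 2 1 3] sw12[of 1 2 3] by simp
lemma nm_322: "\<phi> 3 2 2 = 0" using sw23[of 3 2 2] by simp
lemma nm_323: "\<phi> 3 2 3 = 0" using sw12[of 3 3 2] sw23[of 3 3 2] by simp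
lemma nm_324: "\<phi> 3 2 4 = - \<phi> 2 3 4" using sw12[of 2 3 4] by simp
lemma nm_325: "\<phi> 3 2 5 = - \<phi> 2 3 5" using sw12[of 2 3 5] by simp
lemma nm_326: "\<phi> 3 2 6 = - \<phi> 2 3 6" using sw12[of 2 3 6] by simp
lemma nm_327: "\<phi> 3 2 7 = - \<phi> 2 3 7" using sw12[of 2 3 7] by simp
lemma nm_331: "\<phi> 3 3 1 = 0" using sw12[of 3 3 1] by simp
lemma nm_332: "\<phi> 3 3 2 = 0" using sw12[of 3 3 2] by simp
lemma nm_333: "\<phi> 3 3 3 = 0" using sw12[of 3 3 3] by simp
lemma nm_334: "\<phi> 3 3 4 = 0" using sw12[of 3 3 4] by simp
lemma nm_335: "\<phi> 3 3 5 = 0" using sw12[of 3 3 5] by simp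
lemma nm_336: "\<phi> 3 3 6 = 0" using sw12[of 3 3 6] by simp
lemma nm_337: "\<phi> 3 3 7 = 0" using sw12[of 3 3 7] by simp
lemma nm_341: "\<phi> 3 4 1 = \<phi> 1 3 4" using sw23[of 3 1 4] sw12[of 1 3 4] by simp
lemma nm_342: "\<phi> 3 4 2 = \<phi> 2 3 4" using sw23[of 3 2 4] sw12[of 2 3 4] by simp
lemma nm_343: "\<phi> 3 4 3 = 0" using sw12[of 3 3 4] sw23[of 3 3 4] by simp
lemma nm_344: "\<phi> 3 4 4 = 0" using sw23[of 3 4 4] by simp
lemma nm_351: "\<phi> 3 5 1 = \<phi> 1 3 5" using sw23[of 3 1 5] sw12[of 1 3 5] by simp
lemma nm_352: "\<phi> 3 5 2 = \<phi> 2 3 5" using sw23[of 3 2 5] sw12[of 2 3 5] by simp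
lemma nm_353: "\<phi> 3 5 3 = 0" using sw12[of 3 3 5] sw23[of 3 3 5] by simp
lemma nm_354: "\<phi> 3 5 4 = - \<phi> 3 4 5" using sw23[of 3 4 5] by simp
lemma nm_355: "\<phi> 3 5 5 = 0" using sw23[of 3 5 5] by simp
lemma nm_361: "\<phi> 3 6 1 = \<phi> 1 3 6" using sw23[of 3 1 6] sw12[of 1 3 6] by simp
lemma nm_362: "\<phi> 3 6 2 = \<phi> 2 3 6" using sw23[of 3 2 6] sw12[of 2 3 6] by simp
lemma nm_363: "\<phi> 3 6 3 = 0" using sw12[of 3 3 6] sw23[of 3 3 6] by simp
lemma nm_364: "\<phi> 3 6 4 = - \<phi> 3 4 6" using sw23[of 3 4 6] by simp
lemma nm_365: "\<phi> 3 6 5 = - \<phi> 3 5 6" using sw23[of 3 5 6] by simp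
lemma nm_366: "\<phi> 3 6 6 = 0" using sw23[of 3 6 6] by simp
lemma nm_371: "\<phi> 3 7 1 = \<phi> 1 3 7" using sw23[of 3 1 7] sw12[of 1 3 7] by simp
lemma nm_372: "\<phi> 3 7 2 = \<phi> 2 3 7" using sw23[of 3 2 7] sw12[of 2 3 7] by simp
lemma nm_373: "\<phi> 3 7 3 = 0" using sw12[of 3 3 7] sw23[of 3 3 7] by simp
lemma nm_374: "\<phi> 3 7 4 = - \<phi> 3 4 7" using sw23[of 3 4 7] by simp
lemma nm_375: "\<phi> 3 7 5 = - \<phi> 3 5 7" using sw23[of 3 5 7] by simp
lemma nm_376: "\<phi> 3 7 6 = - \<phi> 3 6 7" using sw23[of 3 6 7] by simp
lemma nm_377: "\<phi> 3 7 7 = 0" using sw23[of 3 7 7] by simp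
lemma nm_411: "\<phi> 4 1 1 = 0" using sw23[of 4 1 1] by simp
lemma nm_412: "\<phi> 4 1 2 = \<phi> 1 2 4" using sw12[of 1 4 2] sw23[of 1 2 4] by simp
lemma nm_413: "\<phi> 4 1 3 = \<phi> 1 3 4" using sw12[of 1 4 3] sw23[of 1 3 4] by simp
lemma nm_414: "\<phi> 4 1 4 = 0" using sw12[of 4 4 1] sw23[of 4 4 1] by simp
lemma nm_415: "\<phi> 4 1 5 = - \<phi> 1 4 5" using sw12[of 1 4 5] by simp
lemma nm_416: "\<phi> 4 1 6 = - \<phi> 1 4 6" using sw12[of 1 4 6] by simp
lemma nm_417: "\<phi> 4 1 7 = - \<phi> 1 4 7" using sw12[of 1 4 7] by simp
lemma nm_421: "\<phi> 4 2 1 = - \<phi> 1 2 4" using sw12[of 2 4 1] sw23[of 2 1 4] sw12[of 1 2 4] by simp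
lemma nm_422: "\<phi> 4 2 2 = 0" using sw23[of 4 2 2] by simp
lemma nm_423: "\<phi> 4 2 3 = \<phi> 2 3 4" using sw12[of 2 4 3] sw23[of 2 3 4] by simp
lemma nm_424: "\<phi> 4 2 4 = 0" using sw12[of 4 4 2] sw23[of 4 4 2] by simp
lemma nm_425: "\<phi> 4 2 5 = - \<phi> 2 4 5" using sw12[of 2 4 5] by simp
lemma nm_426: "\<phi> 4 2 6 = - \<phi> 2 4 6" using sw12[of 2 4 6] by simp
lemma nm_427: "\<phi> 4 2 7 = - \<phi> 2 4 7" using sw12[of 2 4 7] by simp
lemma nm_431: "\<phi> 4 3 1 = - \<phi> 1 3 4" using sw12[of 3 4 1] sw23[of 3 1 4] sw12[of 1 3 4] by simp
lemma nm_432: "\<phi> 4 3 2 = - \<phi> 2 3 4" using sw12[of 3 4 2] sw23[of 3 2 4] sw12[of 2 3 4] by simp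
lemma nm_433: "\<phi> 4 3 3 = 0" using sw23[of 4 3 3] by simp
lemma nm_434: "\<phi> 4 3 4 = 0" using sw12[of 4 4 3] sw23[of 4 4 3] by simp
lemma nm_435: "\<phi> 4 3 5 = - \<phi> 3 4 5" using sw12[of 3 4 5] by simp
lemma nm_436: "\<phi> 4 3 6 = - \<phi> 3 4 6" using sw12[of 3 4 6] by simp
lemma nm_437: "\<phi> 4 3 7 = - \<phi> 3 4 7" using sw12[of 3 4 7] by simp
lemma nm_441: "\<phi> 4 4 1 = 0" using sw12[of 4 4 1] by simp
lemma nm_442: "\<phi> 4 4 2 = 0" using sw12[of 4 4 2] by simp
lemma nm_443: "\<phi> 4 4 3 = 0" using sw12[of 4 4 3] by simp
lemma nm_444: "\<phi> 4 4 4 = 0" using sw12[of 4 4 4] by simp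
lemma nm_445: "\<phi> 4 4 5 = 0" using sw12[of 4 4 5] by simp
lemma nm_446: "\<phi> 4 4 6 = 0" using sw12[of 4 4 6] by simp
lemma nm_447: "\<phi> 4 4 7 = 0" using sw12[of 4 4 7] by simp
lemma nm_451: "\<phi> 4 5 1 = \<phi> 1 4 5" using sw23[of 4 1 5] sw12[of 1 4 5] by simp
lemma nm_452: "\<phi> 4 5 2 = \<phi> 2 4 5" using sw23[of 4 2 5] sw12[of 2 4 5] by simp
lemma nm_453: "\<phi> 4 5 3 = \<phi> 3 4 5" using sw23[of 4 3 5] sw12[of 3 4 5] by simp
lemma nm_454: "\<phi> 4 5 4 = 0" using sw12[of 4 4 5] sw23[of 4 4 5] by simp
lemma nm_455: "\<phi> 4 5 5 = 0" using sw23[of 4 5 5] by simp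
lemma nm_461: "\<phi> 4 6 1 = \<phi> 1 4 6" using sw23[of 4 1 6] sw12[of 1 4 6] by simp
lemma nm_462: "\<phi> 4 6 2 = \<phi> 2 4 6" using sw23[of 4 2 6] sw12[of 2 4 6] by simp
lemma nm_463: "\<phi> 4 6 3 = \<phi> 3 4 6" using sw23[of 4 3 6] sw12[of 3 4 6] by simp
lemma nm_464: "\<phi> 4 6 4 = 0" using sw12[of 4 4 6] sw23[of 4 4 6] by simp
lemma nm_465: "\<phi> 4 6 5 = - \<phi> 4 5 6" using sw23[of 4 5 6] by simp
lemma nm_466: "\<phi> 4 6 6 = 0" using sw23[of 4 6 6] by simp
lemma nm_471: "\<phi> 4 7 1 = \<phi> 1 4 7" using sw23[of 4 1 7] sw12[of 1 4 7] by simp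
lemma nm_472: "\<phi> 4 7 2 = \<phi> 2 4 7" using sw23[of 4 2 7] sw12[of 2 4 7] by simp
lemma nm_473: "\<phi> 4 7 3 = \<phi> 3 4 7" using sw23[of 4 3 7] sw12[of 3 4 7] by simp
lemma nm_474: "\<phi> 4 7 4 = 0" using sw12[of 4 4 7] sw23[of 4 4 7] by simp
lemma nm_475: "\<phi> 4 7 5 = - \<phi> 4 5 7" using sw23[of 4 5 7] by simp
lemma nm_476: "\<phi> 4 7 6 = - \<phi> 4 6 7" using sw23[of 4 6 7] by simp
lemma nm_477: "\<phi> 4 7 7 = 0" using sw23[of 4 7 7] by simp
lemma nm_511: "\<phi> 5 1 1 = 0" using sw23[of 5 1 1] by simp
lemma nm_512: "\<phi> 5 1 2 = \<phi> 1 2 5" using sw12[of 1 5 2] sw23[of 1 2 5] by simp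
lemma nm_513: "\<phi> 5 1 3 = \<phi> 1 3 5" using sw12[of 1 5 3] sw23[of 1 3 5] by simp
lemma nm_514: "\<phi> 5 1 4 = \<phi> 1 4 5" using sw12[of 1 5 4] sw23[of 1 4 5] by simp
lemma nm_515: "\<phi> 5 1 5 = 0" using sw12[of 5 5 1] sw23[of 5 5 1] by simp
lemma nm_516: "\<phi> 5 1 6 = - \<phi> 1 5 6" using sw12[of 1 5 6] by simp
lemma nm_517: "\<phi> 5 1 7 = - \<phi> 1 5 7" using sw12[of 1 5 7] by simp
lemma nm_521: "\<phi> 5 2 1 = - \<phi> 1 2 5" using sw12[of 2 5 1] sw23[of 2 1 5] sw12[of 1 2 5] by simp
lemma nm_522: "\<phi> 5 2 2 = 0" using sw23[of 5 2 2] by simp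
lemma nm_523: "\<phi> 5 2 3 = \<phi> 2 3 5" using sw12[of 2 5 3] sw23[of 2 3 5] by simp
lemma nm_524: "\<phi> 5 2 4 = \<phi> 2 4 5" using sw12[of 2 5 4] sw23[of 2 4 5] by simp
lemma nm_525: "\<phi> 5 2 5 = 0" using sw12[of 5 5 2] sw23[of 5 5 2] by simp
lemma nm_526: "\<phi> 5 2 6 = - \<phi> 2 5 6" using sw12[of 2 5 6] by simp
lemma nm_527: "\<phi> 5 2 7 = - \<phi> 2 5 7" using sw12[of 2 5 7] by simp
lemma nm_531: "\<phi> 5 3 1 = - \<phi> 1 3 5" using sw12[of 3 5 1] sw23[of 3 1 5] sw12[of 1 3 5] by simp
lemma nm_532: "\<phi> 5 3 2 = - \<phi> 2 3 5" using sw12[of 3 5 2] sw23[of 3 2 5] sw12[of 2 3 5] by simp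
lemma nm_533: "\<phi> 5 3 3 = 0" using sw23[of 5 3 3] by simp
lemma nm_534: "\<phi> 5 3 4 = \<phi> 3 4 5" using sw12[of 3 5 4] sw23[of 3 4 5] by simp
lemma nm_535: "\<phi> 5 3 5 = 0" using sw12[of 5 5 3] sw23[of 5 5 3] by simp
lemma nm_536: "\<phi> 5 3 6 = - \<phi> 3 5 6" using sw12[of 3 5 6] by simp
lemma nm_537: "\<phi> 5 3 7 = - \<phi> 3 5 7" using sw12[of 3 5 7] by simp
lemma nm_541: "\<phi> 5 4 1 = - \<phi> 1 4 5" using sw12[of 4 5 1] sw23[of 4 1 5] sw12[of 1 4 5] by simp
lemma nm_542: "\<phi> 5 4 2 = - \<phi> 2 4 5" using sw12[of 4 5 2] sw23[of 4 2 5] sw12[of 2 4 5] by simp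
lemma nm_543: "\<phi> 5 4 3 = - \<phi> 3 4 5" using sw12[of 4 5 3] sw23[of 4 3 5] sw12[of 3 4 5] by simp
lemma nm_544: "\<phi> 5 4 4 = 0" using sw23[of 5 4 4] by simp
lemma nm_545: "\<phi> 5 4 5 = 0" using sw12[of 5 5 4] sw23[of 5 5 4] by simp
lemma nm_546: "\<phi> 5 4 6 = - \<phi> 4 5 6" using sw12[of 4 5 6] by simp
lemma nm_547: "\<phi> 5 4 7 = - \<phi> 4 5 7" using sw12[of 4 5 7] by simp
lemma nm_551: "\<phi> 5 5 1 = 0" using sw12[of 5 5 1] by simp
lemma nm_552: "\<phi> 5 5 2 = 0" using sw12[of 5 5 2] by simp
lemma nm_553: "\<phi> 5 5 3 = 0" using sw12[of 5 5 3] by simp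
lemma nm_554: "\<phi> 5 5 4 = 0" using sw12[of 5 5 4] by simp
lemma nm_555: "\<phi> 5 5 5 = 0" using sw12[of 5 5 5] by simp
lemma nm_556: "\<phi> 5 5 6 = 0" using sw12[of 5 5 6] by simp
lemma nm_557: "\<phi> 5 5 7 = 0" using sw12[of 5 5 7] by simp
lemma nm_561: "\<phi> 5 6 1 = \<phi> 1 5 6" using sw23[of 5 1 6] sw12[of 1 5 6] by simp
lemma nm_562: "\<phi> 5 6 2 = \<phi> 2 5 6" using sw23[of 5 2 6] sw12[of 2 5 6] by simp
lemma nm_563: "\<phi> 5 6 3 = \<phi> 3 5 6" using sw23[of 5 3 6] sw12[of 3 5 6] by simp
lemma nm_564: "\<phi> 5 6 4 = \<phi> 4 5 6" using sw23[of 5 4 6] sw12[of 4 5 6] by simp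
lemma nm_565: "\<phi> 5 6 5 = 0" using sw12[of 5 5 6] sw23[of 5 5 6] by simp
lemma nm_566: "\<phi> 5 6 6 = 0" using sw23[of 5 6 6] by simp
lemma nm_571: "\<phi> 5 7 1 = \<phi> 1 5 7" using sw23[of 5 1 7] sw12[of 1 5 7] by simp
lemma nm_572: "\<phi> 5 7 2 = \<phi> 2 5 7" using sw23[of 5 2 7] sw12[of 2 5 7] by simp
lemma nm_573: "\<phi> 5 7 3 = \<phi> 3 5 7" using sw23[of 5 3 7] sw12[of 3 5 7] by simp
lemma nm_574: "\<phi> 5 7 4 = \<phi> 4 5 7" using sw23[of 5 4 7] sw12[of 4 5 7] by simp
lemma nm_575: "\<phi> 5 7 5 = 0" using sw12[of 5 5 7] sw23[of 5 5 7] by simp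
lemma nm_576: "\<phi> 5 7 6 = - \<phi> 5 6 7" using sw23[of 5 6 7] by simp
lemma nm_577: "\<phi> 5 7 7 = 0" using sw23[of 5 7 7] by simp
lemma nm_611: "\<phi> 6 1 1 = 0" using sw23[of 6 1 1] by simp
lemma nm_612: "\<phi> 6 1 2 = \<phi> 1 2 6" using sw12[of 1 6 2] sw23[of 1 2 6] by simp
lemma nm_613: "\<phi> 6 1 3 = \<phi> 1 3 6" using sw12[of 1 6 3] sw23[of 1 3 6] by simp
lemma nm_614: "\<phi> 6 1 4 = \<phi> 1 4 6" using sw12[of 1 6 4] sw23[of 1 4 6] by simp
lemma nm_615: "\<phi> 6 1 5 = \<phi> 1 5 6" using sw12[of 1 6 5] sw23[of 1 5 6] by simp
lemma nm_616: "\<phi> 6 1 6 = 0" using sw12[of 6 6 1] sw23[of 6 6 1] by simp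
lemma nm_617: "\<phi> 6 1 7 = - \<phi> 1 6 7" using sw12[of 1 6 7] by simp
lemma nm_621: "\<phi> 6 2 1 = - \<phi> 1 2 6" using sw12[of 2 6 1] sw23[of 2 1 6] sw12[of 1 2 6] by simp
lemma nm_622: "\<phi> 6 2 2 = 0" using sw23[of 6 2 2] by simp
lemma nm_623: "\<phi> 6 2 3 = \<phi> 2 3 6" using sw12[of 2 6 3] sw23[of 2 3 6] by simp
lemma nm_624: "\<phi> 6 2 4 = \<phi> 2 4 6" using sw12[of 2 6 4] sw23[of 2 4 6] by simp
lemma nm_625: "\<phi> 6 2 5 = \<phi> 2 5 6" using sw12[of 2 6 5] sw23[of 2 5 6] by simp
lemma nm_626: "\<phi> 6 2 6 = 0" using sw12[of 6 6 2] sw23[of 6 6 2] by simp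
lemma nm_627: "\<phi> 6 2 7 = - \<phi> 2 6 7" using sw12[of 2 6 7] by simp
lemma nm_631: "\<phi> 6 3 1 = - \<phi> 1 3 6" using sw12[of 3 6 1] sw23[of 3 1 6] sw12[of 1 3 6] by simp
lemma nm_632: "\<phi> 6 3 2 = - \<phi> 2 3 6" using sw12[of 3 6 2] sw23[of 3 2 6] sw12[of 2 3 6] by simp
lemma nm_633: "\<phi> 6 3 3 = 0" using sw23[of 6 3 3] by simp
lemma nm_634: "\<phi> 6 3 4 = \<phi> 3 4 6" using sw12[of 3 6 4] sw23[of 3 4 6] by simp
lemma nm_635: "\<phi> 6 3 5 = \<phi> 3 5 6" using sw12[of 3 6 5] sw23[of 3 5 6] by simp
lemma nm_636: "\<phi> 6 3 6 = 0" using sw12[of 6 6 3] sw23[of 6 6 3] by simp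
lemma nm_637: "\<phi> 6 3 7 = - \<phi> 3 6 7" using sw12[of 3 6 7] by simp
lemma nm_641: "\<phi> 6 4 1 = - \<phi> 1 4 6" using sw12[of 4 6 1] sw23[of 4 1 6] sw12[of 1 4 6] by simp
lemma nm_642: "\<phi> 6 4 2 = - \<phi> 2 4 6" using sw12[of 4 6 2] sw23[of 4 2 6] sw12[of 2 4 6] by simp
lemma nm_643: "\<phi> 6 4 3 = - \<phi> 3 4 6" using sw12[of 4 6 3] sw23[of 4 3 6] sw12[of 3 4 6] by simp
lemma nm_644: "\<phi> 6 4 4 = 0" using sw23[of 6 4 4] by simp
lemma nm_645: "\<phi> 6 4 5 = \<phi> 4 5 6" using sw12[of 4 6 5] sw23[of 4 5 6] by simp
lemma nm_646: "\<phi> 6 4 6 = 0" using sw12[of 6 6 4] sw23[of 6 6 4] by simp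
lemma nm_647: "\<phi> 6 4 7 = - \<phi> 4 6 7" using sw12[of 4 6 7] by simp
lemma nm_651: "\<phi> 6 5 1 = - \<phi> 1 5 6" using sw12[of 5 6 1] sw23[of 5 1 6] sw12[of 1 5 6] by simp
lemma nm_652: "\<phi> 6 5 2 = - \<phi> 2 5 6" using sw12[of 5 6 2] sw23[of 5 2 6] sw12[of 2 5 6] by simp
lemma nm_653: "\<phi> 6 5 3 = - \<phi> 3 5 6" using sw12[of 5 6 3] sw23[of 5 3 6] sw12[of 3 5 6] by simp
lemma nm_654: "\<phi> 6 5 4 = - \<phi> 4 5 6" using sw12[of 5 6 4] sw23[of 5 4 6] sw12[of 4 5 6] by simp
lemma nm_655: "\<phi> 6 5 5 = 0" using sw23[of 6 5 5] by simp
lemma nm_656: "\<phi> 6 5 6 = 0" using sw12[of 6 6 5] sw23[of 6 6 5] by simp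
lemma nm_657: "\<phi> 6 5 7 = - \<phi> 5 6 7" using sw12[of 5 6 7] by simp
lemma nm_661: "\<phi> 6 6 1 = 0" using sw12[of 6 6 1] by simp
lemma nm_662: "\<phi> 6 6 2 = 0" using sw12[of 6 6 2] by simp
lemma nm_663: "\<phi> 6 6 3 = 0" using sw12[of 6 6 3] by simp
lemma nm_664: "\<phi> 6 6 4 = 0" using sw12[of 6 6 4] by simp
lemma nm_665: "\<phi> 6 6 5 = 0" using sw12[of 6 6 5] by simp
lemma nm_666: "\<phi> 6 6 6 = 0" using sw12[of 6 6 6] by simp
lemma nm_667: "\<phi> 6 6 7 = 0" using sw12[of 6 6 7] by simp
lemma nm_671: "\<phi> 6 7 1 = \<phi> 1 6 7" using sw23[of 6 1 7] sw12[of 1 6 7] by simp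
lemma nm_672: "\<phi> 6 7 2 = \<phi> 2 6 7" using sw23[of 6 2 7] sw12[of 2 6 7] by simp
lemma nm_673: "\<phi> 6 7 3 = \<phi> 3 6 7" using sw23[of 6 3 7] sw12[of 3 6 7] by simp
lemma nm_674: "\<phi> 6 7 4 = \<phi> 4 6 7" using sw23[of 6 4 7] sw12[of 4 6 7] by simp
lemma nm_675: "\<phi> 6 7 5 = \<phi> 5 6 7" using sw23[of 6 5 7] sw12[of 5 6 7] by simp
lemma nm_676: "\<phi> 6 7 6 = 0" using sw12[of 6 6 7] sw23[of 6 6 7] by simp
lemma nm_677: "\<phi> 6 7 7 = 0" using sw23[of 6 7 7] by simp
lemma nm_711: "\<phi> 7 1 1 = 0" using sw23[of 7 1 1] by simp
lemma nm_712: "\<phi> 7 1 2 = \<phi> 1 2 7" using sw12[of 1 7 2] sw23[of 1 2 7] by simp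
lemma nm_713: "\<phi> 7 1 3 = \<phi> 1 3 7" using sw12[of 1 7 3] sw23[of 1 3 7] by simp
lemma nm_714: "\<phi> 7 1 4 = \<phi> 1 4 7" using sw12[of 1 7 4] sw23[of 1 4 7] by simp
lemma nm_715: "\<phi> 7 1 5 = \<phi> 1 5 7" using sw12[of 1 7 5] sw23[of 1 5 7] by simp
lemma nm_716: "\<phi> 7 1 6 = \<phi> 1 6 7" using sw12[of 1 7 6] sw23[of 1 6 7] by simp
lemma nm_717: "\<phi> 7 1 7 = 0" using sw12[of 7 7 1] sw23[of 7 7 1] by simp
lemma nm_721: "\<phi> 7 2 1 = - \<phi> 1 2 7" using sw12[of 2 7 1] sw23[of 2 1 7] sw12[of 1 2 7] by simp
lemma nm_722: "\<phi> 7 2 2 = 0" using sw23[of 7 2 2] by simp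
lemma nm_723: "\<phi> 7 2 3 = \<phi> 2 3 7" using sw12[of 2 7 3] sw23[of 2 3 7] by simp
lemma nm_724: "\<phi> 7 2 4 = \<phi> 2 4 7" using sw12[of 2 7 4] sw23[of 2 4 7] by simp
lemma nm_725: "\<phi> 7 2 5 = \<phi> 2 5 7" using sw12[of 2 7 5] sw23[of 2 5 7] by simp
lemma nm_726: "\<phi> 7 2 6 = \<phi> 2 6 7" using sw12[of 2 7 6] sw23[of 2 6 7] by simp
lemma nm_727: "\<phi> 7 2 7 = 0" using sw12[of 7 7 2] sw23[of 7 7 2] by simp
lemma nm_731: "\<phi> 7 3 1 = - \<phi> 1 3 7" using sw12[of 3 7 1] sw23[of 3 1 7] sw12[of 1 3 7] by simp
lemma nm_732: "\<phi> 7 3 2 = - \<phi> 2 3 7" using sw12[of 3 7 2] sw23[of 3 2 7] sw12[of 2 3 7] by simp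
lemma nm_733: "\<phi> 7 3 3 = 0" using sw23[of 7 3 3] by simp
lemma nm_734: "\<phi> 7 3 4 = \<phi> 3 4 7" using sw12[of 3 7 4] sw23[of 3 4 7] by simp
lemma nm_735: "\<phi> 7 3 5 = \<phi> 3 5 7" using sw12[of 3 7 5] sw23[of 3 5 7] by simp
lemma nm_736: "\<phi> 7 3 6 = \<phi> 3 6 7" using sw12[of 3 7 6] sw23[of 3 6 7] by simp
lemma nm_737: "\<phi> 7 3 7 = 0" using sw12[of 7 7 3] sw23[of 7 7 3] by simp
lemma nm_741: "\<phi> 7 4 1 = - \<phi> 1 4 7" using sw12[of 4 7 1] sw23[of 4 1 7] sw12[of 1 4 7] by simp
lemma nm_742: "\<phi> 7 4 2 = - \<phi> 2 4 7" using sw12[of 4 7 2] sw23[of 4 2 7] sw12[of 2 4 7] by simp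
lemma nm_743: "\<phi> 7 4 3 = - \<phi> 3 4 7" using sw12[of 4 7 3] sw23[of 4 3 7] sw12[of 3 4 7] by simp
lemma nm_744: "\<phi> 7 4 4 = 0" using sw23[of 7 4 4] by simp
lemma nm_745: "\<phi> 7 4 5 = \<phi> 4 5 7" using sw12[of 4 7 5] sw23[of 4 5 7] by simp
lemma nm_746: "\<phi> 7 4 6 = \<phi> 4 6 7" using sw12[of 4 7 6] sw23[of 4 6 7] by simp
lemma nm_747: "\<phi> 7 4 7 = 0" using sw12[of 7 7 4] sw23[of 7 7 4] by simp
lemma nm_751: "\<phi> 7 5 1 = - \<phi> 1 5 7" using sw12[of 5 7 1] sw23[of 5 1 7] sw12[of 1 5 7] by simp
lemma nm_752: "\<phi> 7 5 2 = - \<phi> 2 5 7" using sw12[of 5 7 2] sw23[of 5 2 7] sw12[of 2 5 7] by simp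
lemma nm_753: "\<phi> 7 5 3 = - \<phi> 3 5 7" using sw12[of 5 7 3] sw23[of 5 3 7] sw12[of 3 5 7] by simp
lemma nm_754: "\<phi> 7 5 4 = - \<phi> 4 5 7" using sw12[of 5 7 4] sw23[of 5 4 7] sw12[of 4 5 7] by simp
lemma nm_755: "\<phi> 7 5 5 = 0" using sw23[of 7 5 5] by simp
lemma nm_756: "\<phi> 7 5 6 = \<phi> 5 6 7" using sw12[of 5 7 6] sw23[of 5 6 7] by simp
lemma nm_757: "\<phi> 7 5 7 = 0" using sw12[of 7 7 5] sw23[of 7 7 5] by simp
lemma nm_761: "\<phi> 7 6 1 = - \<phi> 1 6 7" using sw12[of 6 7 1] sw23[of 6 1 7] sw12[of 1 6 7] by simp
lemma nm_762: "\<phi> 7 6 2 = - \<phi> 2 6 7" using sw12[of 6 7 2] sw23[of 6 2 7] sw12[of 2 6 7] by simp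
lemma nm_763: "\<phi> 7 6 3 = - \<phi> 3 6 7" using sw12[of 6 7 3] sw23[of 6 3 7] sw12[of 3 6 7] by simp
lemma nm_764: "\<phi> 7 6 4 = - \<phi> 4 6 7" using sw12[of 6 7 4] sw23[of 6 4 7] sw12[of 4 6 7] by simp
lemma nm_765: "\<phi> 7 6 5 = - \<phi> 5 6 7" using sw12[of 6 7 5] sw23[of 6 5 7] sw12[of 5 6 7] by simp
lemma nm_766: "\<phi> 7 6 6 = 0" using sw23[of 7 6 6] by simp
lemma nm_767: "\<phi> 7 6 7 = 0" using sw12[of 7 7 6] sw23[of 7 7 6] by simp
lemma nm_771: "\<phi> 7 7 1 = 0" using sw12[of 7 7 1] by simp
lemma nm_772: "\<phi> 7 7 2 = 0" using sw12[of 7 7 2] by simp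
lemma nm_773: "\<phi> 7 7 3 = 0" using sw12[of 7 7 3] by simp
lemma nm_774: "\<phi> 7 7 4 = 0" using sw12[of 7 7 4] by simp
lemma nm_775: "\<phi> 7 7 5 = 0" using sw12[of 7 7 5] by simp
lemma nm_776: "\<phi> 7 7 6 = 0" using sw12[of 7 7 6] by simp
lemma nm_777: "\<phi> 7 7 7 = 0" using sw12[of 7 7 7] by simp
lemmas norm = nm_111 nm_112 nm_113 nm_114 nm_115 nm_116 nm_117 nm_121 nm_122 nm_131 nm_132 nm_133 nm_141 nm_142 nm_143 nm_144 nm_151 nm_152 nm_153 nm_154 nm_155 nm_161 nm_162 nm_163 nm_164 nm_165 nm_166 nm_171 nm_172 nm_173 nm_174 nm_175 nm_176 nm_177 nm_211 nm_212 nm_213 nm_214 nm_215 nm_216 nm_217 nm_221 nm_222 nm_223 nm_224 nm_225 nm_226 nm_227 nm_231 nm_232 nm_233 nm_241 nm_242 nm_243 nm_244 nm_251 nm_252 nm_253 nm_254 nm_255 nm_261 nm_262 nm_263 nm_264 nm_265 nm_266 nm_271 nm_272 nm_273 nm_274 nm_275 nm_276 nm_277 nm_311 nm_312 nm_313 nm_314 nm_315 nm_316 nm_317 nm_321 nm_322 nm_323 nm_324 nm_325 nm_326 nm_327 nm_331 nm_332 nm_333 nm_334 nm_335 nm_336 nm_337 nm_341 nm_342 nm_343 nm_344 nm_351 nm_352 nm_353 nm_354 nm_355 nm_361 nm_362 nm_363 nm_364 nm_365 nm_366 nm_371 nm_372 nm_373 nm_374 nm_375 nm_376 nm_377 nm_411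 nm_412 nm_413 nm_414 nm_415 nm_416 nm_417 nm_421 nm_422 nm_423 nm_424 nm_425 nm_426 nm_427 nm_431 nm_432 nm_433 nm_434 nm_435 nm_436 nm_437 nm_441 nm_442 nm_443 nm_444 nm_445 nm_446 nm_447 nm_451 nm_452 nm_453 nm_454 nm_455 nm_461 nm_462 nm_463 nm_464 nm_465 nm_466 nm_471 nm_472 nm_473 nm_474 nm_475 nm_476 nm_477 nm_511 nm_512 nm_513 nm_514 nm_515 nm_516 nm_517 nm_521 nm_522 nm_523 nm_524 nm_525 nm_526 nm_527 nm_531 nm_532 nm_533 nm_534 nm_535 nm_536 nm_537 nm_541 nm_542 nm_543 nm_544 nm_545 nm_546 nm_547 nm_551 nm_552 nm_553 nm_554 nm_555 nm_556 nm_557 nm_561 nm_562 nm_563 nm_564 nm_565 nm_566 nm_571 nm_572 nm_573 nm_574 nm_575 nm_576 nm_577 nm_611 nm_612 nm_613 nm_614 nm_615 nm_616 nm_617 nm_621 nm_622 nm_623 nm_624 nm_625 nm_626 nm_627 nm_631 nm_632 nm_633 nm_634 nm_635 nm_636 nm_637 nm_641 nm_642 nm_643 nm_644 nm_645 nm_646 nm_647 nm_651 nm_652 nm_653 nm_654 nm_655 nm_656 nm_657 nm_661 nm_662 nm_663 nm_664 nm_665 nm_666 nm_667 nm_671 nm_672 nm_673 nm_674 nm_675 nm_676 nm_677 nm_711 nm_712 nm_713 nm_714 nm_715 nm_716 nm_717 nm_721 nm_722 nm_723 nm_724 nm_725 nm_726 nm_727 nm_731 nm_732 nm_733 nm_734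 nm_735 nm_736 nm_737 nm_741 nm_742 nm_743 nm_744 nm_745 nm_746 nm_747 nm_751 nm_752 nm_753 nm_754 nm_755 nm_756 nm_757 nm_761 nm_762 nm_763 nm_764 nm_765 nm_766 nm_767 nm_771 nm_772 nm_773 nm_774 nm_775 nm_776 nm_777

lemma E_8_1_2_3: "lie_li 8 (eval3 \<phi>) 1 2 3 = 0"
  unfolding lie_li_def sum_1_10 br_tab eval3_def norm by simp
lemma E_8_1_2_4: "lie_li 8 (eval3 \<phi>) 1 2 4 = 0"
  unfolding lie_li_def sum_1_10 br_tab eval3_def norm by simp
lemma E_8_1_2_5: "lie_li 8 (eval3 \<phi>) 1 2 5 = 0"
  unfolding lie_li_def sum_1_10 br_tab eval3_def norm by simp
lemma E_8_1_2_6: "lie_li 8 (eval3 \<phi>) 1 2 6 = - \<phi> 1 2 3"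
  unfolding lie_li_def sum_1_10 br_tab eval3_def norm by simp
lemma E_8_1_2_7: "lie_li 8 (eval3 \<phi>) 1 2 7 = 2 * \<phi> 1 2 5"
  unfolding lie_li_def sum_1_10 br_tab eval3_def norm by simp
lemma E_8_1_2_8: "lie_li 8 (eval3 \<phi>) 1 2 8 = 0"
  unfolding lie_li_def sum_1_10 br_tab eval3_def norm by simp
lemma E_8_1_2_9: "lie_li 8 (eval3 \<phi>) 1 2 9 = 0"
  unfolding lie_li_def sum_1_10 br_tab eval3_def norm by simp
lemma E_8_1_2_10: "lie_li 8 (eval3 \<phi>) 1 2 10 = 0"
  unfolding lie_li_def sum_1_10 br_tab eval3_def norm by simp
lemma E_8_1_3_4: "lie_li 8 (eval3 \<phi>) 1 3 4 = 0"
  unfolding lie_li_def sum_1_10 br_tab eval3_def norm by simp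
lemma E_8_1_3_5: "lie_li 8 (eval3 \<phi>) 1 3 5 = 2 * \<phi> 1 2 3"
  unfolding lie_li_def sum_1_10 br_tab eval3_def norm by simp
lemma E_8_1_3_6: "lie_li 8 (eval3 \<phi>) 1 3 6 = 0"
  unfolding lie_li_def sum_1_10 br_tab eval3_def norm by simp
lemma E_8_1_3_7: "lie_li 8 (eval3 \<phi>) 1 3 7 = 2 * \<phi> 1 3 5"
  unfolding lie_li_def sum_1_10 br_tab eval3_def norm by simp
lemma E_8_1_3_8: "lie_li 8 (eval3 \<phi>) 1 3 8 = 0"
  unfolding lie_li_def sum_1_10 br_tab eval3_def norm by simp
lemma E_8_1_3_9: "lie_li 8 (eval3 \<phi>) 1 3 9 = 0"
  unfolding lie_li_def sum_1_10 br_tab eval3_def norm by simp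
lemma E_8_1_3_10: "lie_li 8 (eval3 \<phi>) 1 3 10 = 0"
  unfolding lie_li_def sum_1_10 br_tab eval3_def norm by simp
lemma E_8_1_4_5: "lie_li 8 (eval3 \<phi>) 1 4 5 = 2 * \<phi> 1 2 4"
  unfolding lie_li_def sum_1_10 br_tab eval3_def norm by simp
lemma E_8_1_4_6: "lie_li 8 (eval3 \<phi>) 1 4 6 = \<phi> 1 3 4"
  unfolding lie_li_def sum_1_10 br_tab eval3_def norm by simp
lemma E_8_1_4_7: "lie_li 8 (eval3 \<phi>) 1 4 7 = 2 * \<phi> 1 4 5"
  unfolding lie_li_def sum_1_10 br_tab eval3_def norm by simp
lemma E_8_1_4_8: "lie_li 8 (eval3 \<phi>) 1 4 8 = 0"
  unfolding lie_li_def sum_1_10 br_tab eval3_def norm by simp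
lemma E_8_1_4_9: "lie_li 8 (eval3 \<phi>) 1 4 9 = 0"
  unfolding lie_li_def sum_1_10 br_tab eval3_def norm by simp
lemma E_8_1_4_10: "lie_li 8 (eval3 \<phi>) 1 4 10 = 0"
  unfolding lie_li_def sum_1_10 br_tab eval3_def norm by simp
lemma E_8_1_5_6: "lie_li 8 (eval3 \<phi>) 1 5 6 = - 2 * \<phi> 1 2 6 + \<phi> 1 3 5"
  unfolding lie_li_def sum_1_10 br_tab eval3_def norm by simp
lemma E_8_1_5_7: "lie_li 8 (eval3 \<phi>) 1 5 7 = - 2 * \<phi> 1 2 7"
  unfolding lie_li_def sum_1_10 br_tab eval3_def norm by simp
lemma E_8_1_5_8: "lie_li 8 (eval3 \<phi>) 1 5 8 = 0"
  unfolding lie_li_def sum_1_10 br_tab eval3_def norm by simp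
lemma E_8_1_5_9: "lie_li 8 (eval3 \<phi>) 1 5 9 = 0"
  unfolding lie_li_def sum_1_10 br_tab eval3_def norm by simp
lemma E_8_1_5_10: "lie_li 8 (eval3 \<phi>) 1 5 10 = 0"
  unfolding lie_li_def sum_1_10 br_tab eval3_def norm by simp
lemma E_8_1_6_7: "lie_li 8 (eval3 \<phi>) 1 6 7 = - \<phi> 1 3 7 - 2 * \<phi> 1 5 6"
  unfolding lie_li_def sum_1_10 br_tab eval3_def norm by simp
lemma E_8_1_6_8: "lie_li 8 (eval3 \<phi>) 1 6 8 = 0"
  unfolding lie_li_def sum_1_10 br_tab eval3_def norm by simp
lemma E_8_1_6_9: "lie_li 8 (eval3 \<phi>) 1 6 9 = 0"
  unfolding lie_li_def sum_1_10 br_tab eval3_def norm by simp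
lemma E_8_1_6_10: "lie_li 8 (eval3 \<phi>) 1 6 10 = 0"
  unfolding lie_li_def sum_1_10 br_tab eval3_def norm by simp
lemma E_8_1_7_8: "lie_li 8 (eval3 \<phi>) 1 7 8 = 0"
  unfolding lie_li_def sum_1_10 br_tab eval3_def norm by simp
lemma E_8_1_7_9: "lie_li 8 (eval3 \<phi>) 1 7 9 = 0"
  unfolding lie_li_def sum_1_10 br_tab eval3_def norm by simp
lemma E_8_1_7_10: "lie_li 8 (eval3 \<phi>) 1 7 10 = 0"
  unfolding lie_li_def sum_1_10 br_tab eval3_def norm by simp
lemma E_8_1_8_9: "lie_li 8 (eval3 \<phi>) 1 8 9 = 0"
  unfolding lie_li_def sum_1_10 br_tab eval3_def norm by simp
lemma E_8_1_8_10: "lie_li 8 (eval3 \<phi>) 1 8 10 = 0"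
  unfolding lie_li_def sum_1_10 br_tab eval3_def norm by simp
lemma E_8_1_9_10: "lie_li 8 (eval3 \<phi>) 1 9 10 = 0"
  unfolding lie_li_def sum_1_10 br_tab eval3_def norm by simp
lemma E_8_2_3_4: "lie_li 8 (eval3 \<phi>) 2 3 4 = \<phi> 1 2 4"
  unfolding lie_li_def sum_1_10 br_tab eval3_def norm by simp
lemma E_8_2_3_5: "lie_li 8 (eval3 \<phi>) 2 3 5 = \<phi> 1 2 5"
  unfolding lie_li_def sum_1_10 br_tab eval3_def norm by simp
lemma E_8_2_3_6: "lie_li 8 (eval3 \<phi>) 2 3 6 = \<phi> 1 2 6"
  unfolding lie_li_def sum_1_10 br_tab eval3_def norm by simp
lemma E_8_2_3_7: "lie_li 8 (eval3 \<phi>) 2 3 7 = \<phi> 1 2 7 + 2 * \<phi> 2 3 5"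
  unfolding lie_li_def sum_1_10 br_tab eval3_def norm by simp
lemma E_8_2_3_8: "lie_li 8 (eval3 \<phi>) 2 3 8 = 0"
  unfolding lie_li_def sum_1_10 br_tab eval3_def norm by simp
lemma E_8_2_3_9: "lie_li 8 (eval3 \<phi>) 2 3 9 = 0"
  unfolding lie_li_def sum_1_10 br_tab eval3_def norm by simp
lemma E_8_2_3_10: "lie_li 8 (eval3 \<phi>) 2 3 10 = 0"
  unfolding lie_li_def sum_1_10 br_tab eval3_def norm by simp
lemma E_8_2_4_5: "lie_li 8 (eval3 \<phi>) 2 4 5 = 0"
  unfolding lie_li_def sum_1_10 br_tab eval3_def norm by simp
lemma E_8_2_4_6: "lie_li 8 (eval3 \<phi>) 2 4 6 = \<phi> 2 3 4"
  unfolding lie_li_def sum_1_10 br_tab eval3_def norm by simp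
lemma E_8_2_4_7: "lie_li 8 (eval3 \<phi>) 2 4 7 = 2 * \<phi> 2 4 5"
  unfolding lie_li_def sum_1_10 br_tab eval3_def norm by simp
lemma E_8_2_4_8: "lie_li 8 (eval3 \<phi>) 2 4 8 = 0"
  unfolding lie_li_def sum_1_10 br_tab eval3_def norm by simp
lemma E_8_2_4_9: "lie_li 8 (eval3 \<phi>) 2 4 9 = 0"
  unfolding lie_li_def sum_1_10 br_tab eval3_def norm by simp
lemma E_8_2_4_10: "lie_li 8 (eval3 \<phi>) 2 4 10 = 0"
  unfolding lie_li_def sum_1_10 br_tab eval3_def norm by simp
lemma E_8_2_5_6: "lie_li 8 (eval3 \<phi>) 2 5 6 = \<phi> 2 3 5"
  unfolding lie_li_def sum_1_10 br_tab eval3_def norm by simp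
lemma E_8_2_5_7: "lie_li 8 (eval3 \<phi>) 2 5 7 = 0"
  unfolding lie_li_def sum_1_10 br_tab eval3_def norm by simp
lemma E_8_2_5_8: "lie_li 8 (eval3 \<phi>) 2 5 8 = 0"
  unfolding lie_li_def sum_1_10 br_tab eval3_def norm by simp
lemma E_8_2_5_9: "lie_li 8 (eval3 \<phi>) 2 5 9 = 0"
  unfolding lie_li_def sum_1_10 br_tab eval3_def norm by simp
lemma E_8_2_5_10: "lie_li 8 (eval3 \<phi>) 2 5 10 = 0"
  unfolding lie_li_def sum_1_10 br_tab eval3_def norm by simp
lemma E_8_2_6_7: "lie_li 8 (eval3 \<phi>) 2 6 7 = - \<phi> 2 3 7 - 2 * \<phi> 2 5 6"
  unfolding lie_li_def sum_1_10 br_tab eval3_def norm by simp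
lemma E_8_2_6_8: "lie_li 8 (eval3 \<phi>) 2 6 8 = 0"
  unfolding lie_li_def sum_1_10 br_tab eval3_def norm by simp
lemma E_8_2_6_9: "lie_li 8 (eval3 \<phi>) 2 6 9 = 0"
  unfolding lie_li_def sum_1_10 br_tab eval3_def norm by simp
lemma E_8_2_6_10: "lie_li 8 (eval3 \<phi>) 2 6 10 = 0"
  unfolding lie_li_def sum_1_10 br_tab eval3_def norm by simp
lemma E_8_2_7_8: "lie_li 8 (eval3 \<phi>) 2 7 8 = 0"
  unfolding lie_li_def sum_1_10 br_tab eval3_def norm by simp
lemma E_8_2_7_9: "lie_li 8 (eval3 \<phi>) 2 7 9 = 0"
  unfolding lie_li_def sum_1_10 br_tab eval3_def norm by simp
lemma E_8_2_7_10: "lie_li 8 (eval3 \<phi>) 2 7 10 = 0"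
  unfolding lie_li_def sum_1_10 br_tab eval3_def norm by simp
lemma E_8_2_8_9: "lie_li 8 (eval3 \<phi>) 2 8 9 = 0"
  unfolding lie_li_def sum_1_10 br_tab eval3_def norm by simp
lemma E_8_2_8_10: "lie_li 8 (eval3 \<phi>) 2 8 10 = 0"
  unfolding lie_li_def sum_1_10 br_tab eval3_def norm by simp
lemma E_8_2_9_10: "lie_li 8 (eval3 \<phi>) 2 9 10 = 0"
  unfolding lie_li_def sum_1_10 br_tab eval3_def norm by simp
lemma E_8_3_4_5: "lie_li 8 (eval3 \<phi>) 3 4 5 = - \<phi> 1 4 5 - 2 * \<phi> 2 3 4"
  unfolding lie_li_def sum_1_10 br_tab eval3_def norm by simp
lemma E_8_3_4_6: "lie_li 8 (eval3 \<phi>) 3 4 6 = - \<phi> 1 4 6"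
  unfolding lie_li_def sum_1_10 br_tab eval3_def norm by simp
lemma E_8_3_4_7: "lie_li 8 (eval3 \<phi>) 3 4 7 = - \<phi> 1 4 7 + 2 * \<phi> 3 4 5"
  unfolding lie_li_def sum_1_10 br_tab eval3_def norm by simp
lemma E_8_3_4_8: "lie_li 8 (eval3 \<phi>) 3 4 8 = 0"
  unfolding lie_li_def sum_1_10 br_tab eval3_def norm by simp
lemma E_8_3_4_9: "lie_li 8 (eval3 \<phi>) 3 4 9 = 0"
  unfolding lie_li_def sum_1_10 br_tab eval3_def norm by simp
lemma E_8_3_4_10: "lie_li 8 (eval3 \<phi>) 3 4 10 = 0"
  unfolding lie_li_def sum_1_10 br_tab eval3_def norm by simp
lemma E_8_3_5_6: "lie_li 8 (eval3 \<phi>) 3 5 6 = - \<phi> 1 5 6 + 2 * \<phi> 2 3 6"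
  unfolding lie_li_def sum_1_10 br_tab eval3_def norm by simp
lemma E_8_3_5_7: "lie_li 8 (eval3 \<phi>) 3 5 7 = - \<phi> 1 5 7 + 2 * \<phi> 2 3 7"
  unfolding lie_li_def sum_1_10 br_tab eval3_def norm by simp
lemma E_8_3_5_8: "lie_li 8 (eval3 \<phi>) 3 5 8 = 0"
  unfolding lie_li_def sum_1_10 br_tab eval3_def norm by simp
lemma E_8_3_5_9: "lie_li 8 (eval3 \<phi>) 3 5 9 = 0"
  unfolding lie_li_def sum_1_10 br_tab eval3_def norm by simp
lemma E_8_3_5_10: "lie_li 8 (eval3 \<phi>) 3 5 10 = 0"
  unfolding lie_li_def sum_1_10 br_tab eval3_def norm by simp
lemma E_8_3_6_7: "lie_li 8 (eval3 \<phi>) 3 6 7 = - \<phi> 1 6 7 - 2 * \<phi> 3 5 6"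
  unfolding lie_li_def sum_1_10 br_tab eval3_def norm by simp
lemma E_8_3_6_8: "lie_li 8 (eval3 \<phi>) 3 6 8 = 0"
  unfolding lie_li_def sum_1_10 br_tab eval3_def norm by simp
lemma E_8_3_6_9: "lie_li 8 (eval3 \<phi>) 3 6 9 = 0"
  unfolding lie_li_def sum_1_10 br_tab eval3_def norm by simp
lemma E_8_3_6_10: "lie_li 8 (eval3 \<phi>) 3 6 10 = 0"
  unfolding lie_li_def sum_1_10 br_tab eval3_def norm by simp
lemma E_8_3_7_8: "lie_li 8 (eval3 \<phi>) 3 7 8 = 0"
  unfolding lie_li_def sum_1_10 br_tab eval3_def norm by simp
lemma E_8_3_7_9: "lie_li 8 (eval3 \<phi>) 3 7 9 = 0"
  unfolding lie_li_def sum_1_10 br_tab eval3_def norm by simp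
lemma E_8_3_7_10: "lie_li 8 (eval3 \<phi>) 3 7 10 = 0"
  unfolding lie_li_def sum_1_10 br_tab eval3_def norm by simp
lemma E_8_3_8_9: "lie_li 8 (eval3 \<phi>) 3 8 9 = 0"
  unfolding lie_li_def sum_1_10 br_tab eval3_def norm by simp
lemma E_8_3_8_10: "lie_li 8 (eval3 \<phi>) 3 8 10 = 0"
  unfolding lie_li_def sum_1_10 br_tab eval3_def norm by simp
lemma E_8_3_9_10: "lie_li 8 (eval3 \<phi>) 3 9 10 = 0"
  unfolding lie_li_def sum_1_10 br_tab eval3_def norm by simp
lemma E_8_4_5_6: "lie_li 8 (eval3 \<phi>) 4 5 6 = 2 * \<phi> 2 4 6 - \<phi> 3 4 5"
  unfolding lie_li_def sum_1_10 br_tab eval3_def norm by simp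
lemma E_8_4_5_7: "lie_li 8 (eval3 \<phi>) 4 5 7 = 2 * \<phi> 2 4 7"
  unfolding lie_li_def sum_1_10 br_tab eval3_def norm by simp
lemma E_8_4_5_8: "lie_li 8 (eval3 \<phi>) 4 5 8 = 0"
  unfolding lie_li_def sum_1_10 br_tab eval3_def norm by simp
lemma E_8_4_5_9: "lie_li 8 (eval3 \<phi>) 4 5 9 = 0"
  unfolding lie_li_def sum_1_10 br_tab eval3_def norm by simp
lemma E_8_4_5_10: "lie_li 8 (eval3 \<phi>) 4 5 10 = 0"
  unfolding lie_li_def sum_1_10 br_tab eval3_def norm by simp
lemma E_8_4_6_7: "lie_li 8 (eval3 \<phi>) 4 6 7 = \<phi> 3 4 7 - 2 * \<phi> 4 5 6"
  unfolding lie_li_def sum_1_10 br_tab eval3_def norm by simp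
lemma E_8_4_6_8: "lie_li 8 (eval3 \<phi>) 4 6 8 = 0"
  unfolding lie_li_def sum_1_10 br_tab eval3_def norm by simp
lemma E_8_4_6_9: "lie_li 8 (eval3 \<phi>) 4 6 9 = 0"
  unfolding lie_li_def sum_1_10 br_tab eval3_def norm by simp
lemma E_8_4_6_10: "lie_li 8 (eval3 \<phi>) 4 6 10 = 0"
  unfolding lie_li_def sum_1_10 br_tab eval3_def norm by simp
lemma E_8_4_7_8: "lie_li 8 (eval3 \<phi>) 4 7 8 = 0"
  unfolding lie_li_def sum_1_10 br_tab eval3_def norm by simp
lemma E_8_4_7_9: "lie_li 8 (eval3 \<phi>) 4 7 9 = 0"
  unfolding lie_li_def sum_1_10 br_tab eval3_def norm by simp
lemma E_8_4_7_10: "lie_li 8 (eval3 \<phi>) 4 7 10 = 0"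
  unfolding lie_li_def sum_1_10 br_tab eval3_def norm by simp
lemma E_8_4_8_9: "lie_li 8 (eval3 \<phi>) 4 8 9 = 0"
  unfolding lie_li_def sum_1_10 br_tab eval3_def norm by simp
lemma E_8_4_8_10: "lie_li 8 (eval3 \<phi>) 4 8 10 = 0"
  unfolding lie_li_def sum_1_10 br_tab eval3_def norm by simp
lemma E_8_4_9_10: "lie_li 8 (eval3 \<phi>) 4 9 10 = 0"
  unfolding lie_li_def sum_1_10 br_tab eval3_def norm by simp
lemma E_8_5_6_7: "lie_li 8 (eval3 \<phi>) 5 6 7 = - 2 * \<phi> 2 6 7 + \<phi> 3 5 7"
  unfolding lie_li_def sum_1_10 br_tab eval3_def norm by simp
lemma E_8_5_6_8: "lie_li 8 (eval3 \<phi>) 5 6 8 = 0"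
  unfolding lie_li_def sum_1_10 br_tab eval3_def norm by simp
lemma E_8_5_6_9: "lie_li 8 (eval3 \<phi>) 5 6 9 = 0"
  unfolding lie_li_def sum_1_10 br_tab eval3_def norm by simp
lemma E_8_5_6_10: "lie_li 8 (eval3 \<phi>) 5 6 10 = 0"
  unfolding lie_li_def sum_1_10 br_tab eval3_def norm by simp
lemma E_8_5_7_8: "lie_li 8 (eval3 \<phi>) 5 7 8 = 0"
  unfolding lie_li_def sum_1_10 br_tab eval3_def norm by simp
lemma E_8_5_7_9: "lie_li 8 (eval3 \<phi>) 5 7 9 = 0"
  unfolding lie_li_def sum_1_10 br_tab eval3_def norm by simp
lemma E_8_5_7_10: "lie_li 8 (eval3 \<phi>) 5 7 10 = 0"
  unfolding lie_li_def sum_1_10 br_tab eval3_def norm by simp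
lemma E_8_5_8_9: "lie_li 8 (eval3 \<phi>) 5 8 9 = 0"
  unfolding lie_li_def sum_1_10 br_tab eval3_def norm by simp
lemma E_8_5_8_10: "lie_li 8 (eval3 \<phi>) 5 8 10 = 0"
  unfolding lie_li_def sum_1_10 br_tab eval3_def norm by simp
lemma E_8_5_9_10: "lie_li 8 (eval3 \<phi>) 5 9 10 = 0"
  unfolding lie_li_def sum_1_10 br_tab eval3_def norm by simp
lemma E_8_6_7_8: "lie_li 8 (eval3 \<phi>) 6 7 8 = 0"
  unfolding lie_li_def sum_1_10 br_tab eval3_def norm by simp
lemma E_8_6_7_9: "lie_li 8 (eval3 \<phi>) 6 7 9 = 0"
  unfolding lie_li_def sum_1_10 br_tab eval3_def norm by simp
lemma E_8_6_7_10: "lie_li 8 (eval3 \<phi>) 6 7 10 = 0"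
  unfolding lie_li_def sum_1_10 br_tab eval3_def norm by simp
lemma E_8_6_8_9: "lie_li 8 (eval3 \<phi>) 6 8 9 = 0"
  unfolding lie_li_def sum_1_10 br_tab eval3_def norm by simp
lemma E_8_6_8_10: "lie_li 8 (eval3 \<phi>) 6 8 10 = 0"
  unfolding lie_li_def sum_1_10 br_tab eval3_def norm by simp
lemma E_8_6_9_10: "lie_li 8 (eval3 \<phi>) 6 9 10 = 0"
  unfolding lie_li_def sum_1_10 br_tab eval3_def norm by simp
lemma E_8_7_8_9: "lie_li 8 (eval3 \<phi>) 7 8 9 = 0"
  unfolding lie_li_def sum_1_10 br_tab eval3_def norm by simp
lemma E_8_7_8_10: "lie_li 8 (eval3 \<phi>) 7 8 10 = 0"
  unfolding lie_li_def sum_1_10 br_tab eval3_def norm by simp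
lemma E_8_7_9_10: "lie_li 8 (eval3 \<phi>) 7 9 10 = 0"
  unfolding lie_li_def sum_1_10 br_tab eval3_def norm by simp
lemma E_8_8_9_10: "lie_li 8 (eval3 \<phi>) 8 9 10 = 0"
  unfolding lie_li_def sum_1_10 br_tab eval3_def norm by simp
lemma E_9_1_2_3: "lie_li 9 (eval3 \<phi>) 1 2 3 = 4 * \<phi> 1 2 3"
  unfolding lie_li_def sum_1_10 br_tab eval3_def norm by simp
lemma E_9_1_2_4: "lie_li 9 (eval3 \<phi>) 1 2 4 = 4 * \<phi> 1 2 4"
  unfolding lie_li_def sum_1_10 br_tab eval3_def norm by simp
lemma E_9_1_2_5: "lie_li 9 (eval3 \<phi>) 1 2 5 = 4 * \<phi> 1 2 5"
  unfolding lie_li_def sum_1_10 br_tab eval3_def norm by simp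
lemma E_9_1_2_6: "lie_li 9 (eval3 \<phi>) 1 2 6 = 2 * \<phi> 1 2 6"
  unfolding lie_li_def sum_1_10 br_tab eval3_def norm by simp
lemma E_9_1_2_7: "lie_li 9 (eval3 \<phi>) 1 2 7 = 2 * \<phi> 1 2 7"
  unfolding lie_li_def sum_1_10 br_tab eval3_def norm by simp
lemma E_9_1_2_8: "lie_li 9 (eval3 \<phi>) 1 2 8 = 0"
  unfolding lie_li_def sum_1_10 br_tab eval3_def norm by simp
lemma E_9_1_2_9: "lie_li 9 (eval3 \<phi>) 1 2 9 = 0"
  unfolding lie_li_def sum_1_10 br_tab eval3_def norm by simp
lemma E_9_1_2_10: "lie_li 9 (eval3 \<phi>) 1 2 10 = 0"
  unfolding lie_li_def sum_1_10 br_tab eval3_def norm by simp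
lemma E_9_1_3_4: "lie_li 9 (eval3 \<phi>) 1 3 4 = 2 * \<phi> 1 3 4"
  unfolding lie_li_def sum_1_10 br_tab eval3_def norm by simp
lemma E_9_1_3_5: "lie_li 9 (eval3 \<phi>) 1 3 5 = 2 * \<phi> 1 3 5"
  unfolding lie_li_def sum_1_10 br_tab eval3_def norm by simp
lemma E_9_1_3_6: "lie_li 9 (eval3 \<phi>) 1 3 6 = 0"
  unfolding lie_li_def sum_1_10 br_tab eval3_def norm by simp
lemma E_9_1_3_7: "lie_li 9 (eval3 \<phi>) 1 3 7 = 0"
  unfolding lie_li_def sum_1_10 br_tab eval3_def norm by simp
lemma E_9_1_3_8: "lie_li 9 (eval3 \<phi>) 1 3 8 = 0"
  unfolding lie_li_def sum_1_10 br_tab eval3_def norm by simp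
lemma E_9_1_3_9: "lie_li 9 (eval3 \<phi>) 1 3 9 = 0"
  unfolding lie_li_def sum_1_10 br_tab eval3_def norm by simp
lemma E_9_1_3_10: "lie_li 9 (eval3 \<phi>) 1 3 10 = 0"
  unfolding lie_li_def sum_1_10 br_tab eval3_def norm by simp
lemma E_9_1_4_5: "lie_li 9 (eval3 \<phi>) 1 4 5 = 2 * \<phi> 1 4 5"
  unfolding lie_li_def sum_1_10 br_tab eval3_def norm by simp
lemma E_9_1_4_6: "lie_li 9 (eval3 \<phi>) 1 4 6 = 0"
  unfolding lie_li_def sum_1_10 br_tab eval3_def norm by simp
lemma E_9_1_4_7: "lie_li 9 (eval3 \<phi>) 1 4 7 = 0"
  unfolding lie_li_def sum_1_10 br_tab eval3_def norm by simp
lemma E_9_1_4_8: "lie_li 9 (eval3 \<phi>) 1 4 8 = 0"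
  unfolding lie_li_def sum_1_10 br_tab eval3_def norm by simp
lemma E_9_1_4_9: "lie_li 9 (eval3 \<phi>) 1 4 9 = 0"
  unfolding lie_li_def sum_1_10 br_tab eval3_def norm by simp
lemma E_9_1_4_10: "lie_li 9 (eval3 \<phi>) 1 4 10 = 0"
  unfolding lie_li_def sum_1_10 br_tab eval3_def norm by simp
lemma E_9_1_5_6: "lie_li 9 (eval3 \<phi>) 1 5 6 = 0"
  unfolding lie_li_def sum_1_10 br_tab eval3_def norm by simp
lemma E_9_1_5_7: "lie_li 9 (eval3 \<phi>) 1 5 7 = 0"
  unfolding lie_li_def sum_1_10 br_tab eval3_def norm by simp
lemma E_9_1_5_8: "lie_li 9 (eval3 \<phi>) 1 5 8 = 0"
  unfolding lie_li_def sum_1_10 br_tab eval3_def norm by simp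
lemma E_9_1_5_9: "lie_li 9 (eval3 \<phi>) 1 5 9 = 0"
  unfolding lie_li_def sum_1_10 br_tab eval3_def norm by simp
lemma E_9_1_5_10: "lie_li 9 (eval3 \<phi>) 1 5 10 = 0"
  unfolding lie_li_def sum_1_10 br_tab eval3_def norm by simp
lemma E_9_1_6_7: "lie_li 9 (eval3 \<phi>) 1 6 7 = - 2 * \<phi> 1 6 7"
  unfolding lie_li_def sum_1_10 br_tab eval3_def norm by simp
lemma E_9_1_6_8: "lie_li 9 (eval3 \<phi>) 1 6 8 = 0"
  unfolding lie_li_def sum_1_10 br_tab eval3_def norm by simp
lemma E_9_1_6_9: "lie_li 9 (eval3 \<phi>) 1 6 9 = 0"
  unfolding lie_li_def sum_1_10 br_tab eval3_def norm by simp
lemma E_9_1_6_10: "lie_li 9 (eval3 \<phi>) 1 6 10 = 0"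
  unfolding lie_li_def sum_1_10 br_tab eval3_def norm by simp
lemma E_9_1_7_8: "lie_li 9 (eval3 \<phi>) 1 7 8 = 0"
  unfolding lie_li_def sum_1_10 br_tab eval3_def norm by simp
lemma E_9_1_7_9: "lie_li 9 (eval3 \<phi>) 1 7 9 = 0"
  unfolding lie_li_def sum_1_10 br_tab eval3_def norm by simp
lemma E_9_1_7_10: "lie_li 9 (eval3 \<phi>) 1 7 10 = 0"
  unfolding lie_li_def sum_1_10 br_tab eval3_def norm by simp
lemma E_9_1_8_9: "lie_li 9 (eval3 \<phi>) 1 8 9 = 0"
  unfolding lie_li_def sum_1_10 br_tab eval3_def norm by simp
lemma E_9_1_8_10: "lie_li 9 (eval3 \<phi>) 1 8 10 = 0"
  unfolding lie_li_def sum_1_10 br_tab eval3_def norm by simp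
lemma E_9_1_9_10: "lie_li 9 (eval3 \<phi>) 1 9 10 = 0"
  unfolding lie_li_def sum_1_10 br_tab eval3_def norm by simp
lemma E_9_2_3_4: "lie_li 9 (eval3 \<phi>) 2 3 4 = 2 * \<phi> 2 3 4"
  unfolding lie_li_def sum_1_10 br_tab eval3_def norm by simp
lemma E_9_2_3_5: "lie_li 9 (eval3 \<phi>) 2 3 5 = 2 * \<phi> 2 3 5"
  unfolding lie_li_def sum_1_10 br_tab eval3_def norm by simp
lemma E_9_2_3_6: "lie_li 9 (eval3 \<phi>) 2 3 6 = 0"
  unfolding lie_li_def sum_1_10 br_tab eval3_def norm by simp
lemma E_9_2_3_7: "lie_li 9 (eval3 \<phi>) 2 3 7 = 0"
  unfolding lie_li_def sum_1_10 br_tab eval3_def norm by simp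
lemma E_9_2_3_8: "lie_li 9 (eval3 \<phi>) 2 3 8 = 0"
  unfolding lie_li_def sum_1_10 br_tab eval3_def norm by simp
lemma E_9_2_3_9: "lie_li 9 (eval3 \<phi>) 2 3 9 = 0"
  unfolding lie_li_def sum_1_10 br_tab eval3_def norm by simp
lemma E_9_2_3_10: "lie_li 9 (eval3 \<phi>) 2 3 10 = 0"
  unfolding lie_li_def sum_1_10 br_tab eval3_def norm by simp
lemma E_9_2_4_5: "lie_li 9 (eval3 \<phi>) 2 4 5 = 2 * \<phi> 2 4 5"
  unfolding lie_li_def sum_1_10 br_tab eval3_def norm by simp
lemma E_9_2_4_6: "lie_li 9 (eval3 \<phi>) 2 4 6 = 0"
  unfolding lie_li_def sum_1_10 br_tab eval3_def norm by simp
lemma E_9_2_4_7: "lie_li 9 (eval3 \<phi>) 2 4 7 = 0"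
  unfolding lie_li_def sum_1_10 br_tab eval3_def norm by simp
lemma E_9_2_4_8: "lie_li 9 (eval3 \<phi>) 2 4 8 = 0"
  unfolding lie_li_def sum_1_10 br_tab eval3_def norm by simp
lemma E_9_2_4_9: "lie_li 9 (eval3 \<phi>) 2 4 9 = 0"
  unfolding lie_li_def sum_1_10 br_tab eval3_def norm by simp
lemma E_9_2_4_10: "lie_li 9 (eval3 \<phi>) 2 4 10 = 0"
  unfolding lie_li_def sum_1_10 br_tab eval3_def norm by simp
lemma E_9_2_5_6: "lie_li 9 (eval3 \<phi>) 2 5 6 = 0"
  unfolding lie_li_def sum_1_10 br_tab eval3_def norm by simp
lemma E_9_2_5_7: "lie_li 9 (eval3 \<phi>) 2 5 7 = 0"
  unfolding lie_li_def sum_1_10 br_tab eval3_def norm by simp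
lemma E_9_2_5_8: "lie_li 9 (eval3 \<phi>) 2 5 8 = 0"
  unfolding lie_li_def sum_1_10 br_tab eval3_def norm by simp
lemma E_9_2_5_9: "lie_li 9 (eval3 \<phi>) 2 5 9 = 0"
  unfolding lie_li_def sum_1_10 br_tab eval3_def norm by simp
lemma E_9_2_5_10: "lie_li 9 (eval3 \<phi>) 2 5 10 = 0"
  unfolding lie_li_def sum_1_10 br_tab eval3_def norm by simp
lemma E_9_2_6_7: "lie_li 9 (eval3 \<phi>) 2 6 7 = - 2 * \<phi> 2 6 7"
  unfolding lie_li_def sum_1_10 br_tab eval3_def norm by simp
lemma E_9_2_6_8: "lie_li 9 (eval3 \<phi>) 2 6 8 = 0"
  unfolding lie_li_def sum_1_10 br_tab eval3_def norm by simp
lemma E_9_2_6_9: "lie_li 9 (eval3 \<phi>) 2 6 9 = 0"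
  unfolding lie_li_def sum_1_10 br_tab eval3_def norm by simp
lemma E_9_2_6_10: "lie_li 9 (eval3 \<phi>) 2 6 10 = 0"
  unfolding lie_li_def sum_1_10 br_tab eval3_def norm by simp
lemma E_9_2_7_8: "lie_li 9 (eval3 \<phi>) 2 7 8 = 0"
  unfolding lie_li_def sum_1_10 br_tab eval3_def norm by simp
lemma E_9_2_7_9: "lie_li 9 (eval3 \<phi>) 2 7 9 = 0"
  unfolding lie_li_def sum_1_10 br_tab eval3_def norm by simp
lemma E_9_2_7_10: "lie_li 9 (eval3 \<phi>) 2 7 10 = 0"
  unfolding lie_li_def sum_1_10 br_tab eval3_def norm by simp
lemma E_9_2_8_9: "lie_li 9 (eval3 \<phi>) 2 8 9 = 0"
  unfolding lie_li_def sum_1_10 br_tab eval3_def norm by simp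
lemma E_9_2_8_10: "lie_li 9 (eval3 \<phi>) 2 8 10 = 0"
  unfolding lie_li_def sum_1_10 br_tab eval3_def norm by simp
lemma E_9_2_9_10: "lie_li 9 (eval3 \<phi>) 2 9 10 = 0"
  unfolding lie_li_def sum_1_10 br_tab eval3_def norm by simp
lemma E_9_3_4_5: "lie_li 9 (eval3 \<phi>) 3 4 5 = 0"
  unfolding lie_li_def sum_1_10 br_tab eval3_def norm by simp
lemma E_9_3_4_6: "lie_li 9 (eval3 \<phi>) 3 4 6 = - 2 * \<phi> 3 4 6"
  unfolding lie_li_def sum_1_10 br_tab eval3_def norm by simp
lemma E_9_3_4_7: "lie_li 9 (eval3 \<phi>) 3 4 7 = - 2 * \<phi> 3 4 7"
  unfolding lie_li_def sum_1_10 br_tab eval3_def norm by simp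
lemma E_9_3_4_8: "lie_li 9 (eval3 \<phi>) 3 4 8 = 0"
  unfolding lie_li_def sum_1_10 br_tab eval3_def norm by simp
lemma E_9_3_4_9: "lie_li 9 (eval3 \<phi>) 3 4 9 = 0"
  unfolding lie_li_def sum_1_10 br_tab eval3_def norm by simp
lemma E_9_3_4_10: "lie_li 9 (eval3 \<phi>) 3 4 10 = 0"
  unfolding lie_li_def sum_1_10 br_tab eval3_def norm by simp
lemma E_9_3_5_6: "lie_li 9 (eval3 \<phi>) 3 5 6 = - 2 * \<phi> 3 5 6"
  unfolding lie_li_def sum_1_10 br_tab eval3_def norm by simp
lemma E_9_3_5_7: "lie_li 9 (eval3 \<phi>) 3 5 7 = - 2 * \<phi> 3 5 7"
  unfolding lie_li_def sum_1_10 br_tab eval3_def norm by simp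
lemma E_9_3_5_8: "lie_li 9 (eval3 \<phi>) 3 5 8 = 0"
  unfolding lie_li_def sum_1_10 br_tab eval3_def norm by simp
lemma E_9_3_5_9: "lie_li 9 (eval3 \<phi>) 3 5 9 = 0"
  unfolding lie_li_def sum_1_10 br_tab eval3_def norm by simp
lemma E_9_3_5_10: "lie_li 9 (eval3 \<phi>) 3 5 10 = 0"
  unfolding lie_li_def sum_1_10 br_tab eval3_def norm by simp
lemma E_9_3_6_7: "lie_li 9 (eval3 \<phi>) 3 6 7 = - 4 * \<phi> 3 6 7"
  unfolding lie_li_def sum_1_10 br_tab eval3_def norm by simp
lemma E_9_3_6_8: "lie_li 9 (eval3 \<phi>) 3 6 8 = 0"
  unfolding lie_li_def sum_1_10 br_tab eval3_def norm by simp
lemma E_9_3_6_9: "lie_li 9 (eval3 \<phi>) 3 6 9 = 0"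
  unfolding lie_li_def sum_1_10 br_tab eval3_def norm by simp
lemma E_9_3_6_10: "lie_li 9 (eval3 \<phi>) 3 6 10 = 0"
  unfolding lie_li_def sum_1_10 br_tab eval3_def norm by simp
lemma E_9_3_7_8: "lie_li 9 (eval3 \<phi>) 3 7 8 = 0"
  unfolding lie_li_def sum_1_10 br_tab eval3_def norm by simp
lemma E_9_3_7_9: "lie_li 9 (eval3 \<phi>) 3 7 9 = 0"
  unfolding lie_li_def sum_1_10 br_tab eval3_def norm by simp
lemma E_9_3_7_10: "lie_li 9 (eval3 \<phi>) 3 7 10 = 0"
  unfolding lie_li_def sum_1_10 br_tab eval3_def norm by simp
lemma E_9_3_8_9: "lie_li 9 (eval3 \<phi>) 3 8 9 = 0"
  unfolding lie_li_def sum_1_10 br_tab eval3_def norm by simp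
lemma E_9_3_8_10: "lie_li 9 (eval3 \<phi>) 3 8 10 = 0"
  unfolding lie_li_def sum_1_10 br_tab eval3_def norm by simp
lemma E_9_3_9_10: "lie_li 9 (eval3 \<phi>) 3 9 10 = 0"
  unfolding lie_li_def sum_1_10 br_tab eval3_def norm by simp
lemma E_9_4_5_6: "lie_li 9 (eval3 \<phi>) 4 5 6 = - 2 * \<phi> 4 5 6"
  unfolding lie_li_def sum_1_10 br_tab eval3_def norm by simp
lemma E_9_4_5_7: "lie_li 9 (eval3 \<phi>) 4 5 7 = - 2 * \<phi> 4 5 7"
  unfolding lie_li_def sum_1_10 br_tab eval3_def norm by simp
lemma E_9_4_5_8: "lie_li 9 (eval3 \<phi>) 4 5 8 = 0"
  unfolding lie_li_def sum_1_10 br_tab eval3_def norm by simp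
lemma E_9_4_5_9: "lie_li 9 (eval3 \<phi>) 4 5 9 = 0"
  unfolding lie_li_def sum_1_10 br_tab eval3_def norm by simp
lemma E_9_4_5_10: "lie_li 9 (eval3 \<phi>) 4 5 10 = 0"
  unfolding lie_li_def sum_1_10 br_tab eval3_def norm by simp
lemma E_9_4_6_7: "lie_li 9 (eval3 \<phi>) 4 6 7 = - 4 * \<phi> 4 6 7"
  unfolding lie_li_def sum_1_10 br_tab eval3_def norm by simp
lemma E_9_4_6_8: "lie_li 9 (eval3 \<phi>) 4 6 8 = 0"
  unfolding lie_li_def sum_1_10 br_tab eval3_def norm by simp
lemma E_9_4_6_9: "lie_li 9 (eval3 \<phi>) 4 6 9 = 0"
  unfolding lie_li_def sum_1_10 br_tab eval3_def norm by simp
lemma E_9_4_6_10: "lie_li 9 (eval3 \<phi>) 4 6 10 = 0"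
  unfolding lie_li_def sum_1_10 br_tab eval3_def norm by simp
lemma E_9_4_7_8: "lie_li 9 (eval3 \<phi>) 4 7 8 = 0"
  unfolding lie_li_def sum_1_10 br_tab eval3_def norm by simp
lemma E_9_4_7_9: "lie_li 9 (eval3 \<phi>) 4 7 9 = 0"
  unfolding lie_li_def sum_1_10 br_tab eval3_def norm by simp
lemma E_9_4_7_10: "lie_li 9 (eval3 \<phi>) 4 7 10 = 0"
  unfolding lie_li_def sum_1_10 br_tab eval3_def norm by simp
lemma E_9_4_8_9: "lie_li 9 (eval3 \<phi>) 4 8 9 = 0"
  unfolding lie_li_def sum_1_10 br_tab eval3_def norm by simp
lemma E_9_4_8_10: "lie_li 9 (eval3 \<phi>) 4 8 10 = 0"
  unfolding lie_li_def sum_1_10 br_tab eval3_def norm by simp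
lemma E_9_4_9_10: "lie_li 9 (eval3 \<phi>) 4 9 10 = 0"
  unfolding lie_li_def sum_1_10 br_tab eval3_def norm by simp
lemma E_9_5_6_7: "lie_li 9 (eval3 \<phi>) 5 6 7 = - 4 * \<phi> 5 6 7"
  unfolding lie_li_def sum_1_10 br_tab eval3_def norm by simp
lemma E_9_5_6_8: "lie_li 9 (eval3 \<phi>) 5 6 8 = 0"
  unfolding lie_li_def sum_1_10 br_tab eval3_def norm by simp
lemma E_9_5_6_9: "lie_li 9 (eval3 \<phi>) 5 6 9 = 0"
  unfolding lie_li_def sum_1_10 br_tab eval3_def norm by simp
lemma E_9_5_6_10: "lie_li 9 (eval3 \<phi>) 5 6 10 = 0"
  unfolding lie_li_def sum_1_10 br_tab eval3_def norm by simp
lemma E_9_5_7_8: "lie_li 9 (eval3 \<phi>) 5 7 8 = 0"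
  unfolding lie_li_def sum_1_10 br_tab eval3_def norm by simp
lemma E_9_5_7_9: "lie_li 9 (eval3 \<phi>) 5 7 9 = 0"
  unfolding lie_li_def sum_1_10 br_tab eval3_def norm by simp
lemma E_9_5_7_10: "lie_li 9 (eval3 \<phi>) 5 7 10 = 0"
  unfolding lie_li_def sum_1_10 br_tab eval3_def norm by simp
lemma E_9_5_8_9: "lie_li 9 (eval3 \<phi>) 5 8 9 = 0"
  unfolding lie_li_def sum_1_10 br_tab eval3_def norm by simp
lemma E_9_5_8_10: "lie_li 9 (eval3 \<phi>) 5 8 10 = 0"
  unfolding lie_li_def sum_1_10 br_tab eval3_def norm by simp
lemma E_9_5_9_10: "lie_li 9 (eval3 \<phi>) 5 9 10 = 0"
  unfolding lie_li_def sum_1_10 br_tab eval3_def norm by simp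
lemma E_9_6_7_8: "lie_li 9 (eval3 \<phi>) 6 7 8 = 0"
  unfolding lie_li_def sum_1_10 br_tab eval3_def norm by simp
lemma E_9_6_7_9: "lie_li 9 (eval3 \<phi>) 6 7 9 = 0"
  unfolding lie_li_def sum_1_10 br_tab eval3_def norm by simp
lemma E_9_6_7_10: "lie_li 9 (eval3 \<phi>) 6 7 10 = 0"
  unfolding lie_li_def sum_1_10 br_tab eval3_def norm by simp
lemma E_9_6_8_9: "lie_li 9 (eval3 \<phi>) 6 8 9 = 0"
  unfolding lie_li_def sum_1_10 br_tab eval3_def norm by simp
lemma E_9_6_8_10: "lie_li 9 (eval3 \<phi>) 6 8 10 = 0"
  unfolding lie_li_def sum_1_10 br_tab eval3_def norm by simp
lemma E_9_6_9_10: "lie_li 9 (eval3 \<phi>) 6 9 10 = 0"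
  unfolding lie_li_def sum_1_10 br_tab eval3_def norm by simp
lemma E_9_7_8_9: "lie_li 9 (eval3 \<phi>) 7 8 9 = 0"
  unfolding lie_li_def sum_1_10 br_tab eval3_def norm by simp
lemma E_9_7_8_10: "lie_li 9 (eval3 \<phi>) 7 8 10 = 0"
  unfolding lie_li_def sum_1_10 br_tab eval3_def norm by simp
lemma E_9_7_9_10: "lie_li 9 (eval3 \<phi>) 7 9 10 = 0"
  unfolding lie_li_def sum_1_10 br_tab eval3_def norm by simp
lemma E_9_8_9_10: "lie_li 9 (eval3 \<phi>) 8 9 10 = 0"
  unfolding lie_li_def sum_1_10 br_tab eval3_def norm by simp
lemma E_10_1_2_3: "lie_li 10 (eval3 \<phi>) 1 2 3 = - 2 * \<phi> 1 2 6 + \<phi> 1 3 5"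
  unfolding lie_li_def sum_1_10 br_tab eval3_def norm by simp
lemma E_10_1_2_4: "lie_li 10 (eval3 \<phi>) 1 2 4 = \<phi> 1 4 5 + 2 * \<phi> 2 3 4"
  unfolding lie_li_def sum_1_10 br_tab eval3_def norm by simp
lemma E_10_1_2_5: "lie_li 10 (eval3 \<phi>) 1 2 5 = \<phi> 1 2 7 + 2 * \<phi> 2 3 5"
  unfolding lie_li_def sum_1_10 br_tab eval3_def norm by simp
lemma E_10_1_2_6: "lie_li 10 (eval3 \<phi>) 1 2 6 = - \<phi> 1 5 6 + 2 * \<phi> 2 3 6"
  unfolding lie_li_def sum_1_10 br_tab eval3_def norm by simp
lemma E_10_1_2_7: "lie_li 10 (eval3 \<phi>) 1 2 7 = - \<phi> 1 5 7 + 2 * \<phi> 2 3 7"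
  unfolding lie_li_def sum_1_10 br_tab eval3_def norm by simp
lemma E_10_1_2_8: "lie_li 10 (eval3 \<phi>) 1 2 8 = 0"
  unfolding lie_li_def sum_1_10 br_tab eval3_def norm by simp
lemma E_10_1_2_9: "lie_li 10 (eval3 \<phi>) 1 2 9 = 0"
  unfolding lie_li_def sum_1_10 br_tab eval3_def norm by simp
lemma E_10_1_2_10: "lie_li 10 (eval3 \<phi>) 1 2 10 = 0"
  unfolding lie_li_def sum_1_10 br_tab eval3_def norm by simp
lemma E_10_1_3_4: "lie_li 10 (eval3 \<phi>) 1 3 4 = 2 * \<phi> 1 4 6"
  unfolding lie_li_def sum_1_10 br_tab eval3_def norm by simp
lemma E_10_1_3_5: "lie_li 10 (eval3 \<phi>) 1 3 5 = \<phi> 1 3 7 + 2 * \<phi> 1 5 6"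
  unfolding lie_li_def sum_1_10 br_tab eval3_def norm by simp
lemma E_10_1_3_6: "lie_li 10 (eval3 \<phi>) 1 3 6 = 0"
  unfolding lie_li_def sum_1_10 br_tab eval3_def norm by simp
lemma E_10_1_3_7: "lie_li 10 (eval3 \<phi>) 1 3 7 = - 2 * \<phi> 1 6 7"
  unfolding lie_li_def sum_1_10 br_tab eval3_def norm by simp
lemma E_10_1_3_8: "lie_li 10 (eval3 \<phi>) 1 3 8 = 0"
  unfolding lie_li_def sum_1_10 br_tab eval3_def norm by simp
lemma E_10_1_3_9: "lie_li 10 (eval3 \<phi>) 1 3 9 = 0"
  unfolding lie_li_def sum_1_10 br_tab eval3_def norm by simp
lemma E_10_1_3_10: "lie_li 10 (eval3 \<phi>) 1 3 10 = 0"
  unfolding lie_li_def sum_1_10 br_tab eval3_def norm by simp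
lemma E_10_1_4_5: "lie_li 10 (eval3 \<phi>) 1 4 5 = \<phi> 1 4 7 - 2 * \<phi> 3 4 5"
  unfolding lie_li_def sum_1_10 br_tab eval3_def norm by simp
lemma E_10_1_4_6: "lie_li 10 (eval3 \<phi>) 1 4 6 = - 2 * \<phi> 3 4 6"
  unfolding lie_li_def sum_1_10 br_tab eval3_def norm by simp
lemma E_10_1_4_7: "lie_li 10 (eval3 \<phi>) 1 4 7 = - 2 * \<phi> 3 4 7"
  unfolding lie_li_def sum_1_10 br_tab eval3_def norm by simp
lemma E_10_1_4_8: "lie_li 10 (eval3 \<phi>) 1 4 8 = 0"
  unfolding lie_li_def sum_1_10 br_tab eval3_def norm by simp
lemma E_10_1_4_9: "lie_li 10 (eval3 \<phi>) 1 4 9 = 0"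
  unfolding lie_li_def sum_1_10 br_tab eval3_def norm by simp
lemma E_10_1_4_10: "lie_li 10 (eval3 \<phi>) 1 4 10 = 0"
  unfolding lie_li_def sum_1_10 br_tab eval3_def norm by simp
lemma E_10_1_5_6: "lie_li 10 (eval3 \<phi>) 1 5 6 = - \<phi> 1 6 7 - 2 * \<phi> 3 5 6"
  unfolding lie_li_def sum_1_10 br_tab eval3_def norm by simp
lemma E_10_1_5_7: "lie_li 10 (eval3 \<phi>) 1 5 7 = - 2 * \<phi> 3 5 7"
  unfolding lie_li_def sum_1_10 br_tab eval3_def norm by simp
lemma E_10_1_5_8: "lie_li 10 (eval3 \<phi>) 1 5 8 = 0"
  unfolding lie_li_def sum_1_10 br_tab eval3_def norm by simp
lemma E_10_1_5_9: "lie_li 10 (eval3 \<phi>) 1 5 9 = 0"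
  unfolding lie_li_def sum_1_10 br_tab eval3_def norm by simp
lemma E_10_1_5_10: "lie_li 10 (eval3 \<phi>) 1 5 10 = 0"
  unfolding lie_li_def sum_1_10 br_tab eval3_def norm by simp
lemma E_10_1_6_7: "lie_li 10 (eval3 \<phi>) 1 6 7 = - 2 * \<phi> 3 6 7"
  unfolding lie_li_def sum_1_10 br_tab eval3_def norm by simp
lemma E_10_1_6_8: "lie_li 10 (eval3 \<phi>) 1 6 8 = 0"
  unfolding lie_li_def sum_1_10 br_tab eval3_def norm by simp
lemma E_10_1_6_9: "lie_li 10 (eval3 \<phi>) 1 6 9 = 0"
  unfolding lie_li_def sum_1_10 br_tab eval3_def norm by simp
lemma E_10_1_6_10: "lie_li 10 (eval3 \<phi>) 1 6 10 = 0"
  unfolding lie_li_def sum_1_10 br_tab eval3_def norm by simp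
lemma E_10_1_7_8: "lie_li 10 (eval3 \<phi>) 1 7 8 = 0"
  unfolding lie_li_def sum_1_10 br_tab eval3_def norm by simp
lemma E_10_1_7_9: "lie_li 10 (eval3 \<phi>) 1 7 9 = 0"
  unfolding lie_li_def sum_1_10 br_tab eval3_def norm by simp
lemma E_10_1_7_10: "lie_li 10 (eval3 \<phi>) 1 7 10 = 0"
  unfolding lie_li_def sum_1_10 br_tab eval3_def norm by simp
lemma E_10_1_8_9: "lie_li 10 (eval3 \<phi>) 1 8 9 = 0"
  unfolding lie_li_def sum_1_10 br_tab eval3_def norm by simp
lemma E_10_1_8_10: "lie_li 10 (eval3 \<phi>) 1 8 10 = 0"
  unfolding lie_li_def sum_1_10 br_tab eval3_def norm by simp
lemma E_10_1_9_10: "lie_li 10 (eval3 \<phi>) 1 9 10 = 0"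
  unfolding lie_li_def sum_1_10 br_tab eval3_def norm by simp
lemma E_10_2_3_4: "lie_li 10 (eval3 \<phi>) 2 3 4 = 2 * \<phi> 2 4 6 - \<phi> 3 4 5"
  unfolding lie_li_def sum_1_10 br_tab eval3_def norm by simp
lemma E_10_2_3_5: "lie_li 10 (eval3 \<phi>) 2 3 5 = \<phi> 2 3 7 + 2 * \<phi> 2 5 6"
  unfolding lie_li_def sum_1_10 br_tab eval3_def norm by simp
lemma E_10_2_3_6: "lie_li 10 (eval3 \<phi>) 2 3 6 = \<phi> 3 5 6"
  unfolding lie_li_def sum_1_10 br_tab eval3_def norm by simp
lemma E_10_2_3_7: "lie_li 10 (eval3 \<phi>) 2 3 7 = - 2 * \<phi> 2 6 7 + \<phi> 3 5 7"
  unfolding lie_li_def sum_1_10 br_tab eval3_def norm by simp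
lemma E_10_2_3_8: "lie_li 10 (eval3 \<phi>) 2 3 8 = 0"
  unfolding lie_li_def sum_1_10 br_tab eval3_def norm by simp
lemma E_10_2_3_9: "lie_li 10 (eval3 \<phi>) 2 3 9 = 0"
  unfolding lie_li_def sum_1_10 br_tab eval3_def norm by simp
lemma E_10_2_3_10: "lie_li 10 (eval3 \<phi>) 2 3 10 = 0"
  unfolding lie_li_def sum_1_10 br_tab eval3_def norm by simp
lemma E_10_2_4_5: "lie_li 10 (eval3 \<phi>) 2 4 5 = \<phi> 2 4 7"
  unfolding lie_li_def sum_1_10 br_tab eval3_def norm by simp
lemma E_10_2_4_6: "lie_li 10 (eval3 \<phi>) 2 4 6 = \<phi> 4 5 6"
  unfolding lie_li_def sum_1_10 br_tab eval3_def norm by simp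
lemma E_10_2_4_7: "lie_li 10 (eval3 \<phi>) 2 4 7 = \<phi> 4 5 7"
  unfolding lie_li_def sum_1_10 br_tab eval3_def norm by simp
lemma E_10_2_4_8: "lie_li 10 (eval3 \<phi>) 2 4 8 = 0"
  unfolding lie_li_def sum_1_10 br_tab eval3_def norm by simp
lemma E_10_2_4_9: "lie_li 10 (eval3 \<phi>) 2 4 9 = 0"
  unfolding lie_li_def sum_1_10 br_tab eval3_def norm by simp
lemma E_10_2_4_10: "lie_li 10 (eval3 \<phi>) 2 4 10 = 0"
  unfolding lie_li_def sum_1_10 br_tab eval3_def norm by simp
lemma E_10_2_5_6: "lie_li 10 (eval3 \<phi>) 2 5 6 = - \<phi> 2 6 7"
  unfolding lie_li_def sum_1_10 br_tab eval3_def norm by simp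
lemma E_10_2_5_7: "lie_li 10 (eval3 \<phi>) 2 5 7 = 0"
  unfolding lie_li_def sum_1_10 br_tab eval3_def norm by simp
lemma E_10_2_5_8: "lie_li 10 (eval3 \<phi>) 2 5 8 = 0"
  unfolding lie_li_def sum_1_10 br_tab eval3_def norm by simp
lemma E_10_2_5_9: "lie_li 10 (eval3 \<phi>) 2 5 9 = 0"
  unfolding lie_li_def sum_1_10 br_tab eval3_def norm by simp
lemma E_10_2_5_10: "lie_li 10 (eval3 \<phi>) 2 5 10 = 0"
  unfolding lie_li_def sum_1_10 br_tab eval3_def norm by simp
lemma E_10_2_6_7: "lie_li 10 (eval3 \<phi>) 2 6 7 = - \<phi> 5 6 7"
  unfolding lie_li_def sum_1_10 br_tab eval3_def norm by simp
lemma E_10_2_6_8: "lie_li 10 (eval3 \<phi>) 2 6 8 = 0"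
  unfolding lie_li_def sum_1_10 br_tab eval3_def norm by simp
lemma E_10_2_6_9: "lie_li 10 (eval3 \<phi>) 2 6 9 = 0"
  unfolding lie_li_def sum_1_10 br_tab eval3_def norm by simp
lemma E_10_2_6_10: "lie_li 10 (eval3 \<phi>) 2 6 10 = 0"
  unfolding lie_li_def sum_1_10 br_tab eval3_def norm by simp
lemma E_10_2_7_8: "lie_li 10 (eval3 \<phi>) 2 7 8 = 0"
  unfolding lie_li_def sum_1_10 br_tab eval3_def norm by simp
lemma E_10_2_7_9: "lie_li 10 (eval3 \<phi>) 2 7 9 = 0"
  unfolding lie_li_def sum_1_10 br_tab eval3_def norm by simp
lemma E_10_2_7_10: "lie_li 10 (eval3 \<phi>) 2 7 10 = 0"
  unfolding lie_li_def sum_1_10 br_tab eval3_def norm by simp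
lemma E_10_2_8_9: "lie_li 10 (eval3 \<phi>) 2 8 9 = 0"
  unfolding lie_li_def sum_1_10 br_tab eval3_def norm by simp
lemma E_10_2_8_10: "lie_li 10 (eval3 \<phi>) 2 8 10 = 0"
  unfolding lie_li_def sum_1_10 br_tab eval3_def norm by simp
lemma E_10_2_9_10: "lie_li 10 (eval3 \<phi>) 2 9 10 = 0"
  unfolding lie_li_def sum_1_10 br_tab eval3_def norm by simp
lemma E_10_3_4_5: "lie_li 10 (eval3 \<phi>) 3 4 5 = \<phi> 3 4 7 - 2 * \<phi> 4 5 6"
  unfolding lie_li_def sum_1_10 br_tab eval3_def norm by simp
lemma E_10_3_4_6: "lie_li 10 (eval3 \<phi>) 3 4 6 = 0"
  unfolding lie_li_def sum_1_10 br_tab eval3_def norm by simp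
lemma E_10_3_4_7: "lie_li 10 (eval3 \<phi>) 3 4 7 = 2 * \<phi> 4 6 7"
  unfolding lie_li_def sum_1_10 br_tab eval3_def norm by simp
lemma E_10_3_4_8: "lie_li 10 (eval3 \<phi>) 3 4 8 = 0"
  unfolding lie_li_def sum_1_10 br_tab eval3_def norm by simp
lemma E_10_3_4_9: "lie_li 10 (eval3 \<phi>) 3 4 9 = 0"
  unfolding lie_li_def sum_1_10 br_tab eval3_def norm by simp
lemma E_10_3_4_10: "lie_li 10 (eval3 \<phi>) 3 4 10 = 0"
  unfolding lie_li_def sum_1_10 br_tab eval3_def norm by simp
lemma E_10_3_5_6: "lie_li 10 (eval3 \<phi>) 3 5 6 = - \<phi> 3 6 7"
  unfolding lie_li_def sum_1_10 br_tab eval3_def norm by simp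
lemma E_10_3_5_7: "lie_li 10 (eval3 \<phi>) 3 5 7 = 2 * \<phi> 5 6 7"
  unfolding lie_li_def sum_1_10 br_tab eval3_def norm by simp
lemma E_10_3_5_8: "lie_li 10 (eval3 \<phi>) 3 5 8 = 0"
  unfolding lie_li_def sum_1_10 br_tab eval3_def norm by simp
lemma E_10_3_5_9: "lie_li 10 (eval3 \<phi>) 3 5 9 = 0"
  unfolding lie_li_def sum_1_10 br_tab eval3_def norm by simp
lemma E_10_3_5_10: "lie_li 10 (eval3 \<phi>) 3 5 10 = 0"
  unfolding lie_li_def sum_1_10 br_tab eval3_def norm by simp
lemma E_10_3_6_7: "lie_li 10 (eval3 \<phi>) 3 6 7 = 0"
  unfolding lie_li_def sum_1_10 br_tab eval3_def norm by simp
lemma E_10_3_6_8: "lie_li 10 (eval3 \<phi>) 3 6 8 = 0"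
  unfolding lie_li_def sum_1_10 br_tab eval3_def norm by simp
lemma E_10_3_6_9: "lie_li 10 (eval3 \<phi>) 3 6 9 = 0"
  unfolding lie_li_def sum_1_10 br_tab eval3_def norm by simp
lemma E_10_3_6_10: "lie_li 10 (eval3 \<phi>) 3 6 10 = 0"
  unfolding lie_li_def sum_1_10 br_tab eval3_def norm by simp
lemma E_10_3_7_8: "lie_li 10 (eval3 \<phi>) 3 7 8 = 0"
  unfolding lie_li_def sum_1_10 br_tab eval3_def norm by simp
lemma E_10_3_7_9: "lie_li 10 (eval3 \<phi>) 3 7 9 = 0"
  unfolding lie_li_def sum_1_10 br_tab eval3_def norm by simp
lemma E_10_3_7_10: "lie_li 10 (eval3 \<phi>) 3 7 10 = 0"
  unfolding lie_li_def sum_1_10 br_tab eval3_def norm by simp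
lemma E_10_3_8_9: "lie_li 10 (eval3 \<phi>) 3 8 9 = 0"
  unfolding lie_li_def sum_1_10 br_tab eval3_def norm by simp
lemma E_10_3_8_10: "lie_li 10 (eval3 \<phi>) 3 8 10 = 0"
  unfolding lie_li_def sum_1_10 br_tab eval3_def norm by simp
lemma E_10_3_9_10: "lie_li 10 (eval3 \<phi>) 3 9 10 = 0"
  unfolding lie_li_def sum_1_10 br_tab eval3_def norm by simp
lemma E_10_4_5_6: "lie_li 10 (eval3 \<phi>) 4 5 6 = - \<phi> 4 6 7"
  unfolding lie_li_def sum_1_10 br_tab eval3_def norm by simp
lemma E_10_4_5_7: "lie_li 10 (eval3 \<phi>) 4 5 7 = 0"
  unfolding lie_li_def sum_1_10 br_tab eval3_def norm by simp
lemma E_10_4_5_8: "lie_li 10 (eval3 \<phi>) 4 5 8 = 0"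
  unfolding lie_li_def sum_1_10 br_tab eval3_def norm by simp
lemma E_10_4_5_9: "lie_li 10 (eval3 \<phi>) 4 5 9 = 0"
  unfolding lie_li_def sum_1_10 br_tab eval3_def norm by simp
lemma E_10_4_5_10: "lie_li 10 (eval3 \<phi>) 4 5 10 = 0"
  unfolding lie_li_def sum_1_10 br_tab eval3_def norm by simp
lemma E_10_4_6_7: "lie_li 10 (eval3 \<phi>) 4 6 7 = 0"
  unfolding lie_li_def sum_1_10 br_tab eval3_def norm by simp
lemma E_10_4_6_8: "lie_li 10 (eval3 \<phi>) 4 6 8 = 0"
  unfolding lie_li_def sum_1_10 br_tab eval3_def norm by simp
lemma E_10_4_6_9: "lie_li 10 (eval3 \<phi>) 4 6 9 = 0"
  unfolding lie_li_def sum_1_10 br_tab eval3_def norm by simp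
lemma E_10_4_6_10: "lie_li 10 (eval3 \<phi>) 4 6 10 = 0"
  unfolding lie_li_def sum_1_10 br_tab eval3_def norm by simp
lemma E_10_4_7_8: "lie_li 10 (eval3 \<phi>) 4 7 8 = 0"
  unfolding lie_li_def sum_1_10 br_tab eval3_def norm by simp
lemma E_10_4_7_9: "lie_li 10 (eval3 \<phi>) 4 7 9 = 0"
  unfolding lie_li_def sum_1_10 br_tab eval3_def norm by simp
lemma E_10_4_7_10: "lie_li 10 (eval3 \<phi>) 4 7 10 = 0"
  unfolding lie_li_def sum_1_10 br_tab eval3_def norm by simp
lemma E_10_4_8_9: "lie_li 10 (eval3 \<phi>) 4 8 9 = 0"
  unfolding lie_li_def sum_1_10 br_tab eval3_def norm by simp
lemma E_10_4_8_10: "lie_li 10 (eval3 \<phi>) 4 8 10 = 0"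
  unfolding lie_li_def sum_1_10 br_tab eval3_def norm by simp
lemma E_10_4_9_10: "lie_li 10 (eval3 \<phi>) 4 9 10 = 0"
  unfolding lie_li_def sum_1_10 br_tab eval3_def norm by simp
lemma E_10_5_6_7: "lie_li 10 (eval3 \<phi>) 5 6 7 = 0"
  unfolding lie_li_def sum_1_10 br_tab eval3_def norm by simp
lemma E_10_5_6_8: "lie_li 10 (eval3 \<phi>) 5 6 8 = 0"
  unfolding lie_li_def sum_1_10 br_tab eval3_def norm by simp
lemma E_10_5_6_9: "lie_li 10 (eval3 \<phi>) 5 6 9 = 0"
  unfolding lie_li_def sum_1_10 br_tab eval3_def norm by simp
lemma E_10_5_6_10: "lie_li 10 (eval3 \<phi>) 5 6 10 = 0"
  unfolding lie_li_def sum_1_10 br_tab eval3_def norm by simp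
lemma E_10_5_7_8: "lie_li 10 (eval3 \<phi>) 5 7 8 = 0"
  unfolding lie_li_def sum_1_10 br_tab eval3_def norm by simp
lemma E_10_5_7_9: "lie_li 10 (eval3 \<phi>) 5 7 9 = 0"
  unfolding lie_li_def sum_1_10 br_tab eval3_def norm by simp
lemma E_10_5_7_10: "lie_li 10 (eval3 \<phi>) 5 7 10 = 0"
  unfolding lie_li_def sum_1_10 br_tab eval3_def norm by simp
lemma E_10_5_8_9: "lie_li 10 (eval3 \<phi>) 5 8 9 = 0"
  unfolding lie_li_def sum_1_10 br_tab eval3_def norm by simp
lemma E_10_5_8_10: "lie_li 10 (eval3 \<phi>) 5 8 10 = 0"
  unfolding lie_li_def sum_1_10 br_tab eval3_def norm by simp
lemma E_10_5_9_10: "lie_li 10 (eval3 \<phi>) 5 9 10 = 0"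
  unfolding lie_li_def sum_1_10 br_tab eval3_def norm by simp
lemma E_10_6_7_8: "lie_li 10 (eval3 \<phi>) 6 7 8 = 0"
  unfolding lie_li_def sum_1_10 br_tab eval3_def norm by simp
lemma E_10_6_7_9: "lie_li 10 (eval3 \<phi>) 6 7 9 = 0"
  unfolding lie_li_def sum_1_10 br_tab eval3_def norm by simp
lemma E_10_6_7_10: "lie_li 10 (eval3 \<phi>) 6 7 10 = 0"
  unfolding lie_li_def sum_1_10 br_tab eval3_def norm by simp
lemma E_10_6_8_9: "lie_li 10 (eval3 \<phi>) 6 8 9 = 0"
  unfolding lie_li_def sum_1_10 br_tab eval3_def norm by simp
lemma E_10_6_8_10: "lie_li 10 (eval3 \<phi>) 6 8 10 = 0"
  unfolding lie_li_def sum_1_10 br_tab eval3_def norm by simp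
lemma E_10_6_9_10: "lie_li 10 (eval3 \<phi>) 6 9 10 = 0"
  unfolding lie_li_def sum_1_10 br_tab eval3_def norm by simp
lemma E_10_7_8_9: "lie_li 10 (eval3 \<phi>) 7 8 9 = 0"
  unfolding lie_li_def sum_1_10 br_tab eval3_def norm by simp
lemma E_10_7_8_10: "lie_li 10 (eval3 \<phi>) 7 8 10 = 0"
  unfolding lie_li_def sum_1_10 br_tab eval3_def norm by simp
lemma E_10_7_9_10: "lie_li 10 (eval3 \<phi>) 7 9 10 = 0"
  unfolding lie_li_def sum_1_10 br_tab eval3_def norm by simp
lemma E_10_8_9_10: "lie_li 10 (eval3 \<phi>) 8 9 10 = 0"
  unfolding lie_li_def sum_1_10 br_tab eval3_def norm by simp
lemmas E8 = E_8_1_2_3 E_8_1_2_4 E_8_1_2_5 E_8_1_2_6 E_8_1_2_7 E_8_1_2_8 E_8_1_2_9 E_8_1_2_10 E_8_1_3_4 E_8_1_3_5 E_8_1_3_6 E_8_1_3_7 E_8_1_3_8 E_8_1_3_9 E_8_1_3_10 E_8_1_4_5 E_8_1_4_6 E_8_1_4_7 E_8_1_4_8 E_8_1_4_9 E_8_1_4_10 E_8_1_5_6 E_8_1_5_7 E_8_1_5_8 E_8_1_5_9 E_8_1_5_10 E_8_1_6_7 E_8_1_6_8 E_8_1_6_9 E_8_1_6_10 E_8_1_7_8 E_8_1_7_9 E_8_1_7_10 E_8_1_8_9 E_8_1_8_10 E_8_1_9_10 E_8_2_3_4 E_8_2_3_5 E_8_2_3_6 E_8_2_3_7 E_8_2_3_8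 E_8_2_3_9 E_8_2_3_10 E_8_2_4_5 E_8_2_4_6 E_8_2_4_7 E_8_2_4_8 E_8_2_4_9 E_8_2_4_10 E_8_2_5_6 E_8_2_5_7 E_8_2_5_8 E_8_2_5_9 E_8_2_5_10 E_8_2_6_7 E_8_2_6_8 E_8_2_6_9 E_8_2_6_10 E_8_2_7_8 E_8_2_7_9 E_8_2_7_10 E_8_2_8_9 E_8_2_8_10 E_8_2_9_10 E_8_3_4_5 E_8_3_4_6 E_8_3_4_7 E_8_3_4_8 E_8_3_4_9 E_8_3_4_10 E_8_3_5_6 E_8_3_5_7 E_8_3_5_8 E_8_3_5_9 E_8_3_5_10 E_8_3_6_7 E_8_3_6_8 E_8_3_6_9 E_8_3_6_10 E_8_3_7_8 E_8_3_7_9 E_8_3_7_10 E_8_3_8_9 E_8_3_8_10 E_8_3_9_10 E_8_4_5_6 E_8_4_5_7 E_8_4_5_8 E_8_4_5_9 E_8_4_5_10 E_8_4_6_7 E_8_4_6_8 E_8_4_6_9 E_8_4_6_10 E_8_4_7_8 E_8_4_7_9 E_8_4_7_10 E_8_4_8_9 E_8_4_8_10 E_8_4_9_10 E_8_5_6_7 E_8_5_6_8 E_8_5_6_9 E_8_5_6_10 E_8_5_7_8 E_8_5_7_9 E_8_5_7_10 E_8_5_8_9 E_8_5_8_10 E_8_5_9_10 E_8_6_7_8 E_8_6_7_9 E_8_6_7_10 E_8_6_8_9 E_8_6_8_10 E_8_6_9_10 E_8_7_8_9 E_8_7_8_10 E_8_7_9_10 E_8_8_9_10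

lemmas E9 = E_9_1_2_3 E_9_1_2_4 E_9_1_2_5 E_9_1_2_6 E_9_1_2_7 E_9_1_2_8 E_9_1_2_9 E_9_1_2_10 E_9_1_3_4 E_9_1_3_5 E_9_1_3_6 E_9_1_3_7 E_9_1_3_8 E_9_1_3_9 E_9_1_3_10 E_9_1_4_5 E_9_1_4_6 E_9_1_4_7 E_9_1_4_8 E_9_1_4_9 E_9_1_4_10 E_9_1_5_6 E_9_1_5_7 E_9_1_5_8 E_9_1_5_9 E_9_1_5_10 E_9_1_6_7 E_9_1_6_8 E_9_1_6_9 E_9_1_6_10 E_9_1_7_8 E_9_1_7_9 E_9_1_7_10 E_9_1_8_9 E_9_1_8_10 E_9_1_9_10 E_9_2_3_4 E_9_2_3_5 E_9_2_3_6 E_9_2_3_7 E_9_2_3_8 E_9_2_3_9 E_9_2_3_10 E_9_2_4_5 E_9_2_4_6 E_9_2_4_7 E_9_2_4_8 E_9_2_4_9 E_9_2_4_10 E_9_2_5_6 E_9_2_5_7 E_9_2_5_8 E_9_2_5_9 E_9_2_5_10 E_9_2_6_7 E_9_2_6_8 E_9_2_6_9 E_9_2_6_10 E_9_2_7_8 E_9_2_7_9 E_9_2_7_10 E_9_2_8_9 E_9_2_8_10 E_9_2_9_10 E_9_3_4_5 E_9_3_4_6 E_9_3_4_7 E_9_3_4_8 E_9_3_4_9 E_9_3_4_10 E_9_3_5_6 E_9_3_5_7 E_9_3_5_8 E_9_3_5_9 E_9_3_5_10 E_9_3_6_7 E_9_3_6_8 E_9_3_6_9 E_9_3_6_10 E_9_3_7_8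 E_9_3_7_9 E_9_3_7_10 E_9_3_8_9 E_9_3_8_10 E_9_3_9_10 E_9_4_5_6 E_9_4_5_7 E_9_4_5_8 E_9_4_5_9 E_9_4_5_10 E_9_4_6_7 E_9_4_6_8 E_9_4_6_9 E_9_4_6_10 E_9_4_7_8 E_9_4_7_9 E_9_4_7_10 E_9_4_8_9 E_9_4_8_10 E_9_4_9_10 E_9_5_6_7 E_9_5_6_8 E_9_5_6_9 E_9_5_6_10 E_9_5_7_8 E_9_5_7_9 E_9_5_7_10 E_9_5_8_9 E_9_5_8_10 E_9_5_9_10 E_9_6_7_8 E_9_6_7_9 E_9_6_7_10 E_9_6_8_9 E_9_6_8_10 E_9_6_9_10 E_9_7_8_9 E_9_7_8_10 E_9_7_9_10 E_9_8_9_10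

lemmas E10 = E_10_1_2_3 E_10_1_2_4 E_10_1_2_5 E_10_1_2_6 E_10_1_2_7 E_10_1_2_8 E_10_1_2_9 E_10_1_2_10 E_10_1_3_4 E_10_1_3_5 E_10_1_3_6 E_10_1_3_7 E_10_1_3_8 E_10_1_3_9 E_10_1_3_10 E_10_1_4_5 E_10_1_4_6 E_10_1_4_7 E_10_1_4_8 E_10_1_4_9 E_10_1_4_10 E_10_1_5_6 E_10_1_5_7 E_10_1_5_8 E_10_1_5_9 E_10_1_5_10 E_10_1_6_7 E_10_1_6_8 E_10_1_6_9 E_10_1_6_10 E_10_1_7_8 E_10_1_7_9 E_10_1_7_10 E_10_1_8_9 E_10_1_8_10 E_10_1_9_10 E_10_2_3_4 E_10_2_3_5 E_10_2_3_6 E_10_2_3_7 E_10_2_3_8 E_10_2_3_9 E_10_2_3_10 E_10_2_4_5 E_10_2_4_6 E_10_2_4_7 E_10_2_4_8 E_10_2_4_9 E_10_2_4_10 E_10_2_5_6 E_10_2_5_7 E_10_2_5_8 E_10_2_5_9 E_10_2_5_10 E_10_2_6_7 E_10_2_6_8 E_10_2_6_9 E_10_2_6_10 E_10_2_7_8 E_10_2_7_9 E_10_2_7_10 E_10_2_8_9 E_10_2_8_10 E_10_2_9_10 E_10_3_4_5 E_10_3_4_6 E_10_3_4_7 E_10_3_4_8 E_10_3_4_9 E_10_3_4_10 E_10_3_5_6 E_10_3_5_7 E_10_3_5_8 E_10_3_5_9 E_10_3_5_10 E_10_3_6_7 E_10_3_6_8 E_10_3_6_9 E_10_3_6_10 E_10_3_7_8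 E_10_3_7_9 E_10_3_7_10 E_10_3_8_9 E_10_3_8_10 E_10_3_9_10 E_10_4_5_6 E_10_4_5_7 E_10_4_5_8 E_10_4_5_9 E_10_4_5_10 E_10_4_6_7 E_10_4_6_8 E_10_4_6_9 E_10_4_6_10 E_10_4_7_8 E_10_4_7_9 E_10_4_7_10 E_10_4_8_9 E_10_4_8_10 E_10_4_9_10 E_10_5_6_7 E_10_5_6_8 E_10_5_6_9 E_10_5_6_10 E_10_5_7_8 E_10_5_7_9 E_10_5_7_10 E_10_5_8_9 E_10_5_8_10 E_10_5_9_10 E_10_6_7_8 E_10_6_7_9 E_10_6_7_10 E_10_6_8_9 E_10_6_8_10 E_10_6_9_10 E_10_7_8_9 E_10_7_8_10 E_10_7_9_10 E_10_8_9_10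

end

theorem proposition4p2:
  fixes \<phi> :: "nat \<Rightarrow> nat \<Rightarrow> nat \<Rightarrow> real"
  assumes antisym: "\<forall>i\<in>{1..7}. \<forall>j\<in>{1..7}. \<forall>k\<in>{1..7}.
                      \<phi> j i k = - \<phi> i j k \<and> \<phi> i k j = - \<phi> i j k"
  shows "((\<forall>c \<alpha>. \<forall>i\<in>{1..10}. \<forall>j\<in>{1..10}. \<forall>k\<in>{1..10}. lie_sec c \<alpha> (eval3 \<phi>) i j k = 0)
            \<longleftrightarrow> (\<exists>a b q h p. \<forall>i\<in>{1..10}. \<forall>j\<in>{1..10}. \<forall>k\<in>{1..10}.
                     eval3 \<phi> i j k = family a b q h p i j k))
       \<and> (\<forall>a b q h p a' b' q' h' p'.
            (\<forall>i\<in>{1..10}. \<forall>j\<in>{1..10}. \<forall>k\<in>{1..10}.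
               family a b q h p i j k = family a' b' q' h' p' i j k)
            \<longrightarrow> a = a' \<and> b = b' \<and> q = q' \<and> h = h' \<and> p = p')"
proof -
  have lse: "\<And>c \<alpha> i j k. lie_sec c \<alpha> (eval3 \<phi>) i j k = c 8 * lie_li 8 (eval3 \<phi>) i j k + c 9 * lie_li 9 (eval3 \<phi>) i j k + c 10 * lie_li 10 (eval3 \<phi>) i j k"
    by (simp add: lie_sec_def wedge12_def interior_def eval3_def)
  have R1: "(\<forall>c \<alpha>. \<forall>i\<in>{1..10}. \<forall>j\<in>{1..10}. \<forall>k\<in>{1..10}. lie_sec c \<alpha> (eval3 \<phi>) i j k = 0) \<longleftrightarrow> (\<forall>s\<in>{8,9,10::nat}. \<forall>i\<in>{1..10::nat}. \<forall>j\<in>{1..10::nat}. \<forall>k\<in>{1..10::nat}. lie_li s (eval3 \<phi>) i j k = 0)"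
  proof
    assume H: "\<forall>c \<alpha>. \<forall>i\<in>{1..10}. \<forall>j\<in>{1..10}. \<forall>k\<in>{1..10}. lie_sec c \<alpha> (eval3 \<phi>) i j k = 0"
    show "\<forall>s\<in>{8,9,10::nat}. \<forall>i\<in>{1..10::nat}. \<forall>j\<in>{1..10::nat}. \<forall>k\<in>{1..10::nat}. lie_li s (eval3 \<phi>) i j k = 0"
    proof (intro ballI)
      fix s i j k :: nat
      assume s: "s \<in> {8,9,10}" and i: "i\<in>{1..10}" and j: "j\<in>{1..10}" and k: "k\<in>{1..10}"
      have "lie_sec (\<lambda>t. if t = s then 1 else 0) (\<lambda>_ _. 0) (eval3 \<phi>) i j k = 0" using H i j k by blast
      then show "lie_li s (eval3 \<phi>) i j k = 0" using s by (auto simp: lse)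
    qed
  next
    assume H: "\<forall>s\<in>{8,9,10::nat}. \<forall>i\<in>{1..10::nat}. \<forall>j\<in>{1..10::nat}. \<forall>k\<in>{1..10::nat}. lie_li s (eval3 \<phi>) i j k = 0"
    then show "\<forall>c \<alpha>. \<forall>i\<in>{1..10}. \<forall>j\<in>{1..10}. \<forall>k\<in>{1..10}. lie_sec c \<alpha> (eval3 \<phi>) i j k = 0" by (simp add: lse)
  qed
  have ev1: "\<And>i j k. i\<in>{1..10::nat} \<Longrightarrow> j\<in>{1..10::nat} \<Longrightarrow> k\<in>{1..10::nat} \<Longrightarrow> eval3 \<phi> j i k = - eval3 \<phi> i j k"
    using ev_anti1[OF antisym] .
  have ev2: "\<And>i j k. i\<in>{1..10::nat} \<Longrightarrow> j\<in>{1..10::nat} \<Longrightarrow> k\<in>{1..10::nat} \<Longrightarrow> eval3 \<phi> i k j = - eval3 \<phi> i j k"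
    using ev_anti2[OF antisym] .
  have EQ: "(\<exists>a b q h p. \<forall>i\<in>{1..10}. \<forall>j\<in>{1..10}. \<forall>k\<in>{1..10}.
                     eval3 \<phi> i j k = family a b q h p i j k) \<longleftrightarrow> (\<forall>s\<in>{8,9,10::nat}. \<forall>i\<in>{1..10::nat}. \<forall>j\<in>{1..10::nat}. \<forall>k\<in>{1..10::nat}. lie_li s (eval3 \<phi>) i j k = 0)"
  proof
    assume "\<exists>a b q h p. \<forall>i\<in>{1..10}. \<forall>j\<in>{1..10}. \<forall>k\<in>{1..10}.
                     eval3 \<phi> i j k = family a b q h p i j k"
    then obtain a b q h p where H: "\<forall>i\<in>{1..10::nat}. \<forall>j\<in>{1..10::nat}. \<forall>k\<in>{1..10::nat}.
                     eval3 \<phi> i j k = family a b q h p i j k" by blast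
    have V0: "\<phi> 1 2 3 = 0" using H[rule_format, of 1 2 3, unfolded family_tab eval3_def] by simp
    have V1: "\<phi> 1 2 4 = 0" using H[rule_format, of 1 2 4, unfolded family_tab eval3_def] by simp
    have V2: "\<phi> 1 2 5 = 0" using H[rule_format, of 1 2 5, unfolded family_tab eval3_def] by simp
    have V3: "\<phi> 1 2 6 = 0" using H[rule_format, of 1 2 6, unfolded family_tab eval3_def] by simp
    have V4: "\<phi> 1 2 7 = 0" using H[rule_format, of 1 2 7, unfolded family_tab eval3_def] by simp
    have V5: "\<phi> 1 3 4 = 0" using H[rule_format, of 1 3 4, unfolded family_tab eval3_def] by simp
    have V6: "\<phi> 1 3 5 = 0" using H[rule_format, of 1 3 5, unfolded family_tab eval3_def] by simp
    have V7: "\<phi> 1 3 6 = q" using H[rule_format, of 1 3 6, unfolded family_tab eval3_def] by simp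
    have V8: "\<phi> 1 3 7 = - 4 * b" using H[rule_format, of 1 3 7, unfolded family_tab eval3_def] by simp
    have V9: "\<phi> 1 4 5 = 0" using H[rule_format, of 1 4 5, unfolded family_tab eval3_def] by simp
    have V10: "\<phi> 1 4 6 = 0" using H[rule_format, of 1 4 6, unfolded family_tab eval3_def] by simp
    have V11: "\<phi> 1 4 7 = 4 * a" using H[rule_format, of 1 4 7, unfolded family_tab eval3_def] by simp
    have V12: "\<phi> 1 5 6 = 2 * b" using H[rule_format, of 1 5 6, unfolded family_tab eval3_def] by simp
    have V13: "\<phi> 1 5 7 = - 4 * h" using H[rule_format, of 1 5 7, unfolded family_tab eval3_def] by simp
    have V14: "\<phi> 1 6 7 = 0" using H[rule_format, of 1 6 7, unfolded family_tab eval3_def] by simp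
    have V15: "\<phi> 2 3 4 = 0" using H[rule_format, of 2 3 4, unfolded family_tab eval3_def] by simp
    have V16: "\<phi> 2 3 5 = 0" using H[rule_format, of 2 3 5, unfolded family_tab eval3_def] by simp
    have V17: "\<phi> 2 3 6 = b" using H[rule_format, of 2 3 6, unfolded family_tab eval3_def] by simp
    have V18: "\<phi> 2 3 7 = - 2 * h" using H[rule_format, of 2 3 7, unfolded family_tab eval3_def] by simp
    have V19: "\<phi> 2 4 5 = 0" using H[rule_format, of 2 4 5, unfolded family_tab eval3_def] by simp
    have V20: "\<phi> 2 4 6 = a" using H[rule_format, of 2 4 6, unfolded family_tab eval3_def] by simp
    have V21: "\<phi> 2 4 7 = 0" using H[rule_format, of 2 4 7, unfolded family_tab eval3_def] by simp
    have V22: "\<phi> 2 5 6 = h" using H[rule_format, of 2 5 6, unfolded family_tab eval3_def] by simp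
    have V23: "\<phi> 2 5 7 = p" using H[rule_format, of 2 5 7, unfolded family_tab eval3_def] by simp
    have V24: "\<phi> 2 6 7 = 0" using H[rule_format, of 2 6 7, unfolded family_tab eval3_def] by simp
    have V25: "\<phi> 3 4 5 = 2 * a" using H[rule_format, of 3 4 5, unfolded family_tab eval3_def] by simp
    have V26: "\<phi> 3 4 6 = 0" using H[rule_format, of 3 4 6, unfolded family_tab eval3_def] by simp
    have V27: "\<phi> 3 4 7 = 0" using H[rule_format, of 3 4 7, unfolded family_tab eval3_def] by simp
    have V28: "\<phi> 3 5 6 = 0" using H[rule_format, of 3 5 6, unfolded family_tab eval3_def] by simp
    have V29: "\<phi> 3 5 7 = 0" using H[rule_format, of 3 5 7, unfolded family_tab eval3_def] by simp
    have V30: "\<phi> 3 6 7 = 0" using H[rule_format, of 3 6 7, unfolded family_tab eval3_def] by simp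
    have V31: "\<phi> 4 5 6 = 0" using H[rule_format, of 4 5 6, unfolded family_tab eval3_def] by simp
    have V32: "\<phi> 4 5 7 = 0" using H[rule_format, of 4 5 7, unfolded family_tab eval3_def] by simp
    have V33: "\<phi> 4 6 7 = 0" using H[rule_format, of 4 6 7, unfolded family_tab eval3_def] by simp
    have V34: "\<phi> 5 6 7 = 0" using H[rule_format, of 5 6 7, unfolded family_tab eval3_def] by simp
    have Z8: "\<forall>i\<in>{1..10::nat}. \<forall>j\<in>{1..10::nat}. \<forall>k\<in>{1..10::nat}. i < j \<longrightarrow> j < k \<longrightarrow> lie_li 8 (eval3 \<phi>) i j k = 0"
      by (rule enum) (unfold E8[OF antisym] V0 V1 V2 V3 V4 V5 V6 V7 V8 V9 V10 V11 V12 V13 V14 V15 V16 V17 V18 V19 V20 V21 V22 V23 V24 V25 V26 V27 V28 V29 V30 V31 V32 V33 V34, simp add: algebra_simps)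
    have Z9: "\<forall>i\<in>{1..10::nat}. \<forall>j\<in>{1..10::nat}. \<forall>k\<in>{1..10::nat}. i < j \<longrightarrow> j < k \<longrightarrow> lie_li 9 (eval3 \<phi>) i j k = 0"
      by (rule enum) (unfold E9[OF antisym] V0 V1 V2 V3 V4 V5 V6 V7 V8 V9 V10 V11 V12 V13 V14 V15 V16 V17 V18 V19 V20 V21 V22 V23 V24 V25 V26 V27 V28 V29 V30 V31 V32 V33 V34, simp add: algebra_simps)
    have Z10: "\<forall>i\<in>{1..10::nat}. \<forall>j\<in>{1..10::nat}. \<forall>k\<in>{1..10::nat}. i < j \<longrightarrow> j < k \<longrightarrow> lie_li 10 (eval3 \<phi>) i j k = 0"
      by (rule enum) (unfold E10[OF antisym] V0 V1 V2 V3 V4 V5 V6 V7 V8 V9 V10 V11 V12 V13 V14 V15 V16 V17 V18 V19 V20 V21 V22 V23 V24 V25 V26 V27 V28 V29 V30 V31 V32 V33 V34, simp add: algebra_simps)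
    show "\<forall>s\<in>{8,9,10::nat}. \<forall>i\<in>{1..10::nat}. \<forall>j\<in>{1..10::nat}. \<forall>k\<in>{1..10::nat}. lie_li s (eval3 \<phi>) i j k = 0"
    proof (intro ballI)
      fix s i j k :: nat
      assume s: "s \<in> {8,9,10}" and i: "i\<in>{1..10}" and j: "j\<in>{1..10}" and k: "k\<in>{1..10}"
      have Z: "\<forall>i\<in>{1..10::nat}. \<forall>j\<in>{1..10::nat}. \<forall>k\<in>{1..10::nat}. i < j \<longrightarrow> j < k \<longrightarrow> lie_li s (eval3 \<phi>) i j k = 0"
        using s Z8 Z9 Z10 by auto
      show "lie_li s (eval3 \<phi>) i j k = 0"
        by (rule red[where F="lie_li s (eval3 \<phi>)", OF lie_anti(1)[OF ev1 ev2] lie_anti(2)[OF ev1 ev2] Z i j k])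
    qed
  next
    assume L: "\<forall>s\<in>{8,9,10::nat}. \<forall>i\<in>{1..10::nat}. \<forall>j\<in>{1..10::nat}. \<forall>k\<in>{1..10::nat}. lie_li s (eval3 \<phi>) i j k = 0"
    have L': "\<And>s i j k. s\<in>{8,9,10::nat} \<Longrightarrow> i\<in>{1..10::nat} \<Longrightarrow> j\<in>{1..10::nat} \<Longrightarrow> k\<in>{1..10::nat} \<Longrightarrow> lie_li s (eval3 \<phi>) i j k = 0"
      using L by blast
    have q0: "- \<phi> 1 2 3 = 0" using L'[of 8 1 2 6, unfolded E_8_1_2_6[OF antisym]] by simp
    have q1: "2 * \<phi> 1 2 5 = 0" using L'[of 8 1 2 7, unfolded E_8_1_2_7[OF antisym]] by simp
    have q2: "2 * \<phi> 1 3 5 = 0" using L'[of 8 1 3 7, unfolded E_8_1_3_7[OF antisym]] by simp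
    have q3: "2 * \<phi> 1 2 4 = 0" using L'[of 8 1 4 5, unfolded E_8_1_4_5[OF antisym]] by simp
    have q4: "\<phi> 1 3 4 = 0" using L'[of 8 1 4 6, unfolded E_8_1_4_6[OF antisym]] by simp
    have q5: "2 * \<phi> 1 4 5 = 0" using L'[of 8 1 4 7, unfolded E_8_1_4_7[OF antisym]] by simp
    have q6: "- 2 * \<phi> 1 2 6 + \<phi> 1 3 5 = 0" using L'[of 8 1 5 6, unfolded E_8_1_5_6[OF antisym]] by simp
    have q7: "- 2 * \<phi> 1 2 7 = 0" using L'[of 8 1 5 7, unfolded E_8_1_5_7[OF antisym]] by simp
    have q8: "- \<phi> 1 3 7 - 2 * \<phi> 1 5 6 = 0" using L'[of 8 1 6 7, unfolded E_8_1_6_7[OF antisym]] by simp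
    have q9: "\<phi> 1 2 7 + 2 * \<phi> 2 3 5 = 0" using L'[of 8 2 3 7, unfolded E_8_2_3_7[OF antisym]] by simp
    have q10: "\<phi> 2 3 4 = 0" using L'[of 8 2 4 6, unfolded E_8_2_4_6[OF antisym]] by simp
    have q11: "2 * \<phi> 2 4 5 = 0" using L'[of 8 2 4 7, unfolded E_8_2_4_7[OF antisym]] by simp
    have q12: "- \<phi> 2 3 7 - 2 * \<phi> 2 5 6 = 0" using L'[of 8 2 6 7, unfolded E_8_2_6_7[OF antisym]] by simp
    have q13: "- \<phi> 1 4 6 = 0" using L'[of 8 3 4 6, unfolded E_8_3_4_6[OF antisym]] by simp
    have q14: "- \<phi> 1 4 7 + 2 * \<phi> 3 4 5 = 0" using L'[of 8 3 4 7, unfolded E_8_3_4_7[OF antisym]] by simp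
    have q15: "- \<phi> 1 5 6 + 2 * \<phi> 2 3 6 = 0" using L'[of 8 3 5 6, unfolded E_8_3_5_6[OF antisym]] by simp
    have q16: "- \<phi> 1 5 7 + 2 * \<phi> 2 3 7 = 0" using L'[of 8 3 5 7, unfolded E_8_3_5_7[OF antisym]] by simp
    have q17: "- \<phi> 1 6 7 - 2 * \<phi> 3 5 6 = 0" using L'[of 8 3 6 7, unfolded E_8_3_6_7[OF antisym]] by simp
    have q18: "2 * \<phi> 2 4 6 - \<phi> 3 4 5 = 0" using L'[of 8 4 5 6, unfolded E_8_4_5_6[OF antisym]] by simp
    have q19: "2 * \<phi> 2 4 7 = 0" using L'[of 8 4 5 7, unfolded E_8_4_5_7[OF antisym]] by simp
    have q20: "\<phi> 3 4 7 - 2 * \<phi> 4 5 6 = 0" using L'[of 8 4 6 7, unfolded E_8_4_6_7[OF antisym]] by simp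
    have q21: "- 2 * \<phi> 2 6 7 + \<phi> 3 5 7 = 0" using L'[of 8 5 6 7, unfolded E_8_5_6_7[OF antisym]] by simp
    have q22: "- 2 * \<phi> 1 6 7 = 0" using L'[of 9 1 6 7, unfolded E_9_1_6_7[OF antisym]] by simp
    have q23: "- 2 * \<phi> 2 6 7 = 0" using L'[of 9 2 6 7, unfolded E_9_2_6_7[OF antisym]] by simp
    have q24: "- 2 * \<phi> 3 4 6 = 0" using L'[of 9 3 4 6, unfolded E_9_3_4_6[OF antisym]] by simp
    have q25: "- 2 * \<phi> 3 4 7 = 0" using L'[of 9 3 4 7, unfolded E_9_3_4_7[OF antisym]] by simp
    have q26: "- 4 * \<phi> 3 6 7 = 0" using L'[of 9 3 6 7, unfolded E_9_3_6_7[OF antisym]] by simp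
    have q27: "- 2 * \<phi> 4 5 7 = 0" using L'[of 9 4 5 7, unfolded E_9_4_5_7[OF antisym]] by simp
    have q28: "- 4 * \<phi> 4 6 7 = 0" using L'[of 9 4 6 7, unfolded E_9_4_6_7[OF antisym]] by simp
    have q29: "- 4 * \<phi> 5 6 7 = 0" using L'[of 9 5 6 7, unfolded E_9_5_6_7[OF antisym]] by simp
    define a where "a = \<phi> 1 4 7 / 4"
    define b where "b = \<phi> 1 5 6 / 2"
    define q where "q = \<phi> 1 3 6"
    define h where "h = \<phi> 2 5 6"
    define p where "p = \<phi> 2 5 7"
    have V0: "\<phi> 1 2 3 = 0" using q0 by linarith
    have V1: "\<phi> 1 2 4 = 0" using q3 by linarith
    have V2: "\<phi> 1 2 5 = 0" using q1 by linarith
    have V3: "\<phi> 1 2 6 = 0" using q2 q6 by linarith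
    have V4: "\<phi> 1 2 7 = 0" using q7 by linarith
    have V5: "\<phi> 1 3 4 = 0" using q4 by linarith
    have V6: "\<phi> 1 3 5 = 0" using q2 by linarith
    have V7: "\<phi> 1 3 6 = q" using q_def by linarith
    have V8: "\<phi> 1 3 7 = - 4 * b" using q8 b_def by linarith
    have V9: "\<phi> 1 4 5 = 0" using q5 by linarith
    have V10: "\<phi> 1 4 6 = 0" using q13 by linarith
    have V11: "\<phi> 1 4 7 = 4 * a" using a_def by linarith
    have V12: "\<phi> 1 5 6 = 2 * b" using b_def by linarith
    have V13: "\<phi> 1 5 7 = - 4 * h" using q12 q16 h_def by linarith
    have V14: "\<phi> 1 6 7 = 0" using q22 by linarith
    have V15: "\<phi> 2 3 4 = 0" using q10 by linarith
    have V16: "\<phi> 2 3 5 = 0" using q7 q9 by linarith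
    have V17: "\<phi> 2 3 6 = b" using q15 b_def by linarith
    have V18: "\<phi> 2 3 7 = - 2 * h" using q12 h_def by linarith
    have V19: "\<phi> 2 4 5 = 0" using q11 by linarith
    have V20: "\<phi> 2 4 6 = a" using q14 q18 a_def by linarith
    have V21: "\<phi> 2 4 7 = 0" using q19 by linarith
    have V22: "\<phi> 2 5 6 = h" using h_def by linarith
    have V23: "\<phi> 2 5 7 = p" using p_def by linarith
    have V24: "\<phi> 2 6 7 = 0" using q23 by linarith
    have V25: "\<phi> 3 4 5 = 2 * a" using q14 a_def by linarith
    have V26: "\<phi> 3 4 6 = 0" using q24 by linarith
    have V27: "\<phi> 3 4 7 = 0" using q25 by linarith
    have V28: "\<phi> 3 5 6 = 0" using q17 q22 by linarith
    have V29: "\<phi> 3 5 7 = 0" using q21 q23 by linarith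
    have V30: "\<phi> 3 6 7 = 0" using q26 by linarith
    have V31: "\<phi> 4 5 6 = 0" using q20 q25 by linarith
    have V32: "\<phi> 4 5 7 = 0" using q27 by linarith
    have V33: "\<phi> 4 6 7 = 0" using q28 by linarith
    have V34: "\<phi> 5 6 7 = 0" using q29 by linarith
    have S: "\<forall>i\<in>{1..10::nat}. \<forall>j\<in>{1..10::nat}. \<forall>k\<in>{1..10::nat}. i < j \<longrightarrow> j < k \<longrightarrow> eval3 \<phi> i j k - family a b q h p i j k = 0"
      by (rule enum) (unfold family_tab eval3_def V0 V1 V2 V3 V4 V5 V6 V7 V8 V9 V10 V11 V12 V13 V14 V15 V16 V17 V18 V19 V20 V21 V22 V23 V24 V25 V26 V27 V28 V29 V30 V31 V32 V33 V34, simp add: family_out)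
    have "\<forall>i\<in>{1..10}. \<forall>j\<in>{1..10}. \<forall>k\<in>{1..10}. eval3 \<phi> i j k = family a b q h p i j k"
    proof (intro ballI)
      fix i j k :: nat
      assume i: "i\<in>{1..10}" and j: "j\<in>{1..10}" and k: "k\<in>{1..10}"
      have A1: "\<And>i j k. i\<in>{1..10::nat} \<Longrightarrow> j\<in>{1..10::nat} \<Longrightarrow> k\<in>{1..10::nat} \<Longrightarrow> eval3 \<phi> j i k - family a b q h p j i k = - (eval3 \<phi> i j k - family a b q h p i j k)"
      proof -
        fix i j k :: nat assume "i\<in>{1..10}" "j\<in>{1..10}" "k\<in>{1..10}"
        then show "eval3 \<phi> j i k - family a b q h p j i k = - (eval3 \<phi> i j k - family a b q h p i j k)"
          using ev1[of i j k] family_anti(1)[of a b q h p i j k] by simp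
      qed
      have A2: "\<And>i j k. i\<in>{1..10::nat} \<Longrightarrow> j\<in>{1..10::nat} \<Longrightarrow> k\<in>{1..10::nat} \<Longrightarrow> eval3 \<phi> i k j - family a b q h p i k j = - (eval3 \<phi> i j k - family a b q h p i j k)"
      proof -
        fix i j k :: nat assume "i\<in>{1..10}" "j\<in>{1..10}" "k\<in>{1..10}"
        then show "eval3 \<phi> i k j - family a b q h p i k j = - (eval3 \<phi> i j k - family a b q h p i j k)"
          using ev2[of i j k] family_anti(2)[of a b q h p i j k] by simp
      qed
      have "eval3 \<phi> i j k - family a b q h p i j k = 0"
        by (rule red[where F="\<lambda>i j k. eval3 \<phi> i j k - family a b q h p i j k", OF A1 A2 S i j k])
      then show "eval3 \<phi> i j k = family a b q h p i j k" by simp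
    qed
    then show "\<exists>a b q h p. \<forall>i\<in>{1..10}. \<forall>j\<in>{1..10}. \<forall>k\<in>{1..10}.
                     eval3 \<phi> i j k = family a b q h p i j k" by blast
  qed
  have U: "\<forall>a b q h p a' b' q' h' p'.
            (\<forall>i\<in>{1..10}. \<forall>j\<in>{1..10}. \<forall>k\<in>{1..10}.
               family a b q h p i j k = family a' b' q' h' p' i j k)
            \<longrightarrow> a = a' \<and> b = b' \<and> q = q' \<and> h = h' \<and> p = p'"
  proof (intro allI impI)
    fix a b q h p a' b' q' h' p' :: real
    assume H: "\<forall>i\<in>{1..10::nat}. \<forall>j\<in>{1..10::nat}. \<forall>k\<in>{1..10::nat}.
               family a b q h p i j k = family a' b' q' h' p' i j k"
    have e1: "4 * a = 4 * a'" using H[rule_format, of 1 4 7, unfolded family_tab] by simp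
    have e2: "2 * b = 2 * b'" using H[rule_format, of 1 5 6, unfolded family_tab] by simp
    have e3: "q = q'" using H[rule_format, of 1 3 6, unfolded family_tab] by simp
    have e4: "h = h'" using H[rule_format, of 2 5 6, unfolded family_tab] by simp
    have e5: "p = p'" using H[rule_format, of 2 5 7, unfolded family_tab] by simp
    show "a = a' \<and> b = b' \<and> q = q' \<and> h = h' \<and> p = p'" using e1 e2 e3 e4 e5 by simp
  qed
  from trans[OF R1 sym[OF EQ]] U show ?thesis by (rule conjI)
qed

end
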